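(* Let $\mathcal C$ be a category and $n\ge0$. Let $X\in Z^n(\mathcal C)$ be a globular object, let $\mathcal S=(X,\{f_i:A_i\to X\}_{i\in I})$ be a sink of regularly normalising maps, and let $d:N\to X$ be the relative normalisation of $X$ with respect to $\mathcal S$, with factorisations $f_i=d\circ g_i$. Then $N$ is a globular object, the factorisation maps $g_i:A_i\to N$ are globular maps, and $d$ is regularly normalising.
   Context: Notation: for $n\ge 0$, $[n]$ denotes $\{0,\dots,n-1\}$; $\Delta_+$ is the category of these finite total orders and order-preserving maps. For monotone $\varphi:[n]\to[m]$ define $\hat\varphi:[m+1]\to[n+1]$ by $\hat\varphi(i)=\min(\{j\in[n]:\varphi(j)\ge i\}\cup\{n\})$. Zigzags: in a category $\mathcal C$, a zigzag $X$ of length $n$ is a diagram $X(r_0)\xrightarrow{x_0} X(s_0)\xleftarrow{x'_0} X(r_1)\to\cdots\xrightarrow{x_{n-1}} X(s_{n-1})\xleftarrow{x'_{n-1}} X(r_n)$. A zigzag map $f:X\to Y$ (lengths $n$, $m$) consists of a monotone $f_s:[n]\to[m]$, regular slices $f(r_i):X(r_{\hat{f_s}(i)})\to Y(r_i)$ for $0\le i\le m$ and singular slices $f(s_j):X(s_j)\to Y(s_{f_s(j)})$ for $0\le j<n$, such that for each $0\le i<m$: if $f_s^{-1}(i)\neq\emptyset$ with least element $p$, greatest $q$, then $f(s_p)\circ x_p=y_i\circ f(r_i)$, $f(s_q)\circ x'_q=y'_i\circ f(r_{i+1})$, $f(s_j)\circ x'_j=f(s_{j+1})\circ x_{j+1}$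 for $p\le j<q$; if $f_s^{-1}(i)=\emptyset$ then $y_i\circ f(r_i)=y'_i\circ f(r_{i+1})$. Composition: $(g\circ f)_s=g_s\circ f_s$, $(g\circ f)(s_j)=g(s_{f_s(j)})\circ f(s_j)$, $(g\circ f)(r_i)=g(r_i)\circ f(r_{\hat{g_s}(i)})$. This gives a category $Z(\mathcal C)$; $Z^0(\mathcal C)=\mathcal C$, $Z^n(\mathcal C)=Z(Z^{n-1}(\mathcal C))$. $\pi:Z(\mathcal C)\to\Delta_+$ sends a zigzag of length $n$ to $[n]$ and $f$ to $f_s$; $f$ is $\pi$-vertical if $\pi(f)$ is an identity; $f:x\to y$ is $\pi$-cocartesian if for every $h:x\to y'$ and $u:\pi(y)\to\pi(y')$ with $u\circ\pi(f)=\pi(h)$ there is a unique $v:y\to y'$ with $v\circ f=h$, $\pi(v)=u$. Degeneracy maps in $Z^n(\mathcal C)$ (by induction on $n$): in $Z^0(\mathcal C)$ the isomorphisms; for $n\ge1$ the maps generated under composition by simple degeneracy maps (the $\pi$-cocartesian maps $f$ with $\pi(f)$ a monomorphism of $\Delta_+$) and parallel degeneracy maps (the $\pi$-vertical maps whose regular and singular slices are all degeneracy maps in $Z^{n-1}(\mathcal C)$). Degeneracy maps are monomorphisms; $\mathrm{Deg}(T)$ is the subposet of the subobject poset $\mathrm{Sub}(T)$ of subobjects represented by a degeneracy map into $T$. A normalising map into $T$ is a degeneracy map representing the smallest element of $\mathrm{Deg}(T)$. A sink is $\mathcal S=(T,\{f_i:A_i\to T\}_{i\in I})$; $\mathrm{Deg}_{\mathcal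 S}(T)\subseteq\mathrm{Deg}(T)$ consists of the subobjects represented by degeneracy maps $d:N\to T$ such that every $f_i$ factors as $f_i=d\circ g_i$; the relative normalisation of $T$ with respect to $\mathcal S$ is a degeneracy map $d:N\to T$ representing the smallest element of $\mathrm{Deg}_{\mathcal S}(T)$. Globularity: a map $f$ in $Z^n(\mathcal C)$ is globular if $n=0$, or if all regular slices of $f$ are isomorphisms and all singular slices are globular maps in $Z^{n-1}(\mathcal C)$. An object of $Z^n(\mathcal C)$ is globular if $n=0$, or if it is a zigzag in $Z^{n-1}(\mathcal C)$ of globular objects and globular maps. A map in $Z^n(\mathcal C)$ is regularly normalising if $n=0$, or if all its regular slices are normalising maps (in $Z^{n-1}(\mathcal C)$) and all its singular slices are regularly normalising. *)

theory Defs
  imports Main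
begin

text \<open>A category presented by its objects, arrows, domain, codomain, composition
  (cComp g f = g o f) and identities.\<close>

record ('o, 'm) cat =
  cObj  :: "'o set"
  cArr  :: "'m set"
  cDom  :: "'m \<Rightarrow> 'o"
  cCod  :: "'m \<Rightarrow> 'o"
  cComp :: "'m \<Rightarrow> 'm \<Rightarrow> 'm"
  cId   :: "'o \<Rightarrow> 'm"

definition is_category :: "('o, 'm) cat \<Rightarrow> bool" where
  "is_category C \<longleftrightarrow>
     (\<forall>f \<in> cArr C. cDom C f \<in> cObj C \<and> cCod C f \<in> cObj C) \<and>
     (\<forall>a \<in> cObj C. cId C a \<in> cArr C \<and> cDom C (cId C a) = a \<and> cCod C (cId C a) = a) \<and>
     (\<forall>f \<in> cArr C. \<forall>g \<in> cArr C. cDom C g = cCod C f \<longrightarrow>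
        cComp C g f \<in> cArr C \<and> cDom C (cComp C g f) = cDom C f \<and> cCod C (cComp C g f) = cCod C g) \<and>
     (\<forall>f \<in> cArr C. \<forall>g \<in> cArr C. \<forall>h \<in> cArr C. cDom C g = cCod C f \<longrightarrow> cDom C h = cCod C g \<longrightarrow>
        cComp C h (cComp C g f) = cComp C (cComp C h g) f) \<and>
     (\<forall>f \<in> cArr C. cComp C f (cId C (cDom C f)) = f \<and> cComp C (cId C (cCod C f)) f = f)"

definition iso :: "('o, 'm) cat \<Rightarrow> 'm \<Rightarrow> bool" where
  "iso C f \<longleftrightarrow> f \<in> cArr C \<and> (\<exists>g \<in> cArr C. cDom C g = cCod C f \<and> cCod C g = cDom C f \<and>
      cComp C g f = cId C (cDom C f) \<and> cComp C f g = cId C (cCod C f))"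

definition factors_through :: "('o, 'm) cat \<Rightarrow> 'm \<Rightarrow> 'm \<Rightarrow> bool" where
  "factors_through C f d \<longleftrightarrow> (\<exists>g \<in> cArr C. cDom C g = cDom C f \<and> cCod C g = cDom C d \<and> cComp C d g = f)"

text \<open>ZZ rs ss xs ys is the zigzag with regular objects rs (length n+1),
  singular objects ss (length n), forward maps xs (x_i : r_i -> s_i) and
  backward maps ys (x'_i : r_{i+1} -> s_i).
  ZM X Y fs fr fsg is a zigzag map X -> Y with singular-height map f_s given by the
  list fs (f_s(j) = fs!j), regular slices fr and singular slices fsg.\<close>

datatype ('o, 'm) zo = ZBase 'o | ZZ "('o, 'm) zo list" "('o, 'm) zo list" "('o, 'm) zm list" "('o, 'm) zm list"
     and ('o, 'm) zm = MBase 'm | ZM "('o, 'm) zo" "('o, 'm) zo" "nat list" "('o, 'm) zm list" "('o, 'm) zm list"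

definition zlen :: "('o, 'm) zo \<Rightarrow> nat" where
  "zlen X = (case X of ZZ rs ss xs ys \<Rightarrow> length ss | _ \<Rightarrow> undefined)"
definition zr :: "('o, 'm) zo \<Rightarrow> nat \<Rightarrow> ('o, 'm) zo" where
  "zr X i = (case X of ZZ rs ss xs ys \<Rightarrow> rs ! i | _ \<Rightarrow> undefined)"
definition zs :: "('o, 'm) zo \<Rightarrow> nat \<Rightarrow> ('o, 'm) zo" where
  "zs X j = (case X of ZZ rs ss xs ys \<Rightarrow> ss ! j | _ \<Rightarrow> undefined)"
definition zx :: "('o, 'm) zo \<Rightarrow> nat \<Rightarrow> ('o, 'm) zm" where
  "zx X j = (case X of ZZ rs ss xs ys \<Rightarrow> xs ! j | _ \<Rightarrow> undefined)"
definition zy :: "('o, 'm) zo \<Rightarrow> nat \<Rightarrow> ('o, 'm) zm" where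
  "zy X j = (case X of ZZ rs ss xs ys \<Rightarrow> ys ! j | _ \<Rightarrow> undefined)"

definition mdom :: "('o, 'm) zm \<Rightarrow> ('o, 'm) zo" where
  "mdom f = (case f of ZM X Y fs fr fsg \<Rightarrow> X | _ \<Rightarrow> undefined)"
definition mcod :: "('o, 'm) zm \<Rightarrow> ('o, 'm) zo" where
  "mcod f = (case f of ZM X Y fs fr fsg \<Rightarrow> Y | _ \<Rightarrow> undefined)"
definition msing_map :: "('o, 'm) zm \<Rightarrow> nat list" where
  "msing_map f = (case f of ZM X Y fs fr fsg \<Rightarrow> fs | _ \<Rightarrow> undefined)"
definition mreg :: "('o, 'm) zm \<Rightarrow> nat \<Rightarrow> ('o, 'm) zm" where
  "mreg f i = (case f of ZM X Y fs fr fsg \<Rightarrow> fr ! i | _ \<Rightarrow> undefined)"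
definition msing :: "('o, 'm) zm \<Rightarrow> nat \<Rightarrow> ('o, 'm) zm" where
  "msing f j = (case f of ZM X Y fs fr fsg \<Rightarrow> fsg ! j | _ \<Rightarrow> undefined)"

text \<open>Monotone maps [n] -> [m] of Delta_+ are lists of length n, sorted, with entries < m.\<close>
definition delta_map :: "nat list \<Rightarrow> nat \<Rightarrow> nat \<Rightarrow> bool" where
  "delta_map \<phi> n m \<longleftrightarrow> length \<phi> = n \<and> sorted \<phi> \<and> (\<forall>j < n. \<phi> ! j < m)"

definition hat :: "nat list \<Rightarrow> nat \<Rightarrow> nat" where
  "hat \<phi> i = Min ({j. j < length \<phi> \<and> \<phi> ! j \<ge> i} \<union> {length \<phi>})"

definition zig_obj :: "(('o, 'm) zo, ('o, 'm) zm) cat \<Rightarrow> ('o, 'm) zo \<Rightarrow> bool" where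
  "zig_obj D X \<longleftrightarrow> (\<exists>rs ss xs ys. X = ZZ rs ss xs ys \<and>
      length rs = Suc (length ss) \<and> length xs = length ss \<and> length ys = length ss \<and>
      set rs \<subseteq> cObj D \<and> set ss \<subseteq> cObj D \<and>
      (\<forall>i < length ss. xs ! i \<in> cArr D \<and> cDom D (xs ! i) = rs ! i \<and> cCod D (xs ! i) = ss ! i \<and>
                       ys ! i \<in> cArr D \<and> cDom D (ys ! i) = rs ! Suc i \<and> cCod D (ys ! i) = ss ! i))"

definition zig_map :: "(('o, 'm) zo, ('o, 'm) zm) cat \<Rightarrow> ('o, 'm) zm \<Rightarrow> bool" where
  "zig_map D f \<longleftrightarrow> (\<exists>X Y fs fr fsg. f = ZM X Y fs fr fsg \<and>
      zig_obj D X \<and> zig_obj D Y \<and>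
      delta_map fs (zlen X) (zlen Y) \<and>
      length fr = Suc (zlen Y) \<and> length fsg = zlen X \<and>
      (\<forall>i \<le> zlen Y. fr ! i \<in> cArr D \<and> cDom D (fr ! i) = zr X (hat fs i) \<and> cCod D (fr ! i) = zr Y i) \<and>
      (\<forall>j < zlen X. fsg ! j \<in> cArr D \<and> cDom D (fsg ! j) = zs X j \<and> cCod D (fsg ! j) = zs Y (fs ! j)) \<and>
      (\<forall>i < zlen Y.
         (let P = {j. j < zlen X \<and> fs ! j = i} in
          if P \<noteq> {} then
            (cComp D (fsg ! Min P) (zx X (Min P)) = cComp D (zx Y i) (fr ! i) \<and>
             cComp D (fsg ! Max P) (zy X (Max P)) = cComp D (zy Y i) (fr ! Suc i) \<and>
             (\<forall>j. Min P \<le> j \<and> j < Max P \<longrightarrow>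
                 cComp D (fsg ! j) (zy X j) = cComp D (fsg ! Suc j) (zx X (Suc j))))
          else cComp D (zx Y i) (fr ! i) = cComp D (zy Y i) (fr ! Suc i))))"

definition zig_comp :: "(('o, 'm) zo, ('o, 'm) zm) cat \<Rightarrow> ('o, 'm) zm \<Rightarrow> ('o, 'm) zm \<Rightarrow> ('o, 'm) zm" where
  "zig_comp D g f =
     ZM (mdom f) (mcod g)
        (map (\<lambda>j. msing_map g ! (msing_map f ! j)) [0..<length (msing_map f)])
        (map (\<lambda>i. cComp D (mreg g i) (mreg f (hat (msing_map g) i))) [0..<Suc (zlen (mcod g))])
        (map (\<lambda>j. cComp D (msing g (msing_map f ! j)) (msing f j)) [0..<length (msing_map f)])"

definition zig_id :: "(('o, 'm) zo, ('o, 'm) zm) cat \<Rightarrow> ('o, 'm) zo \<Rightarrow> ('o, 'm) zm" where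
  "zig_id D X = ZM X X [0..<zlen X] (map (\<lambda>i. cId D (zr X i)) [0..<Suc (zlen X)])
                                     (map (\<lambda>j. cId D (zs X j)) [0..<zlen X])"

definition Z :: "(('o, 'm) zo, ('o, 'm) zm) cat \<Rightarrow> (('o, 'm) zo, ('o, 'm) zm) cat" where
  "Z D = \<lparr> cObj = {X. zig_obj D X}, cArr = {f. zig_map D f}, cDom = mdom, cCod = mcod,
           cComp = zig_comp D, cId = zig_id D \<rparr>"

definition lift :: "('o, 'm) cat \<Rightarrow> (('o, 'm) zo, ('o, 'm) zm) cat" where
  "lift C = \<lparr> cObj = ZBase ` cObj C, cArr = MBase ` cArr C,
     cDom = (\<lambda>f. case f of MBase m \<Rightarrow> ZBase (cDom C m) | _ \<Rightarrow> undefined),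
     cCod = (\<lambda>f. case f of MBase m \<Rightarrow> ZBase (cCod C m) | _ \<Rightarrow> undefined),
     cComp = (\<lambda>g f. case g of MBase g' \<Rightarrow> (case f of MBase f' \<Rightarrow> MBase (cComp C g' f') | _ \<Rightarrow> undefined)
                             | _ \<Rightarrow> undefined),
     cId = (\<lambda>a. case a of ZBase a' \<Rightarrow> MBase (cId C a') | _ \<Rightarrow> undefined) \<rparr>"

definition Zn :: "('o, 'm) cat \<Rightarrow> nat \<Rightarrow> (('o, 'm) zo, ('o, 'm) zm) cat" where
  "Zn C n = (Z ^^ n) (lift C)"

section \<open>The projection pi : Z(D) -> Delta_+\<close>

definition pi_vertical :: "('o, 'm) zm \<Rightarrow> bool" where
  "pi_vertical f \<longleftrightarrow> zlen (mcod f) = zlen (mdom f) \<and> msing_map f = [0..<zlen (mdom f)]"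

definition pi_cocartesian :: "(('o, 'm) zo, ('o, 'm) zm) cat \<Rightarrow> ('o, 'm) zm \<Rightarrow> bool" where
  "pi_cocartesian D f \<longleftrightarrow>
     (\<forall>h \<in> cArr (Z D). mdom h = mdom f \<longrightarrow>
        (\<forall>u. delta_map u (zlen (mcod f)) (zlen (mcod h)) \<and>
             map (\<lambda>j. u ! (msing_map f ! j)) [0..<zlen (mdom f)] = msing_map h \<longrightarrow>
           (\<exists>!v. v \<in> cArr (Z D) \<and> mdom v = mcod f \<and> mcod v = mcod h \<and>
                 zig_comp D v f = h \<and> msing_map v = u)))"

definition delta_mono :: "nat list \<Rightarrow> bool" where
  "delta_mono \<phi> \<longleftrightarrow> sorted_wrt (<) \<phi>"

inductive comp_closure :: "('o, 'm) cat \<Rightarrow> ('m \<Rightarrow> bool) \<Rightarrow> 'm \<Rightarrow> bool"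
  for C :: "('o, 'm) cat" and P :: "'m \<Rightarrow> bool" where
  gen: "f \<in> cArr C \<Longrightarrow> P f \<Longrightarrow> comp_closure C P f"
| comp: "comp_closure C P f \<Longrightarrow> comp_closure C P g \<Longrightarrow> cDom C g = cCod C f \<Longrightarrow>
         comp_closure C P (cComp C g f)"

definition simple_deg :: "(('o, 'm) zo, ('o, 'm) zm) cat \<Rightarrow> ('o, 'm) zm \<Rightarrow> bool" where
  "simple_deg D f \<longleftrightarrow> f \<in> cArr (Z D) \<and> pi_cocartesian D f \<and> delta_mono (msing_map f)"

definition parallel_deg :: "(('o, 'm) zo, ('o, 'm) zm) cat \<Rightarrow> (('o, 'm) zm \<Rightarrow> bool) \<Rightarrow> ('o, 'm) zm \<Rightarrow> bool" where
  "parallel_deg D P f \<longleftrightarrow> f \<in> cArr (Z D) \<and> pi_vertical f \<and>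
     (\<forall>i \<le> zlen (mcod f). P (mreg f i)) \<and> (\<forall>j < zlen (mdom f). P (msing f j))"

primrec deg :: "('o, 'm) cat \<Rightarrow> nat \<Rightarrow> ('o, 'm) zm \<Rightarrow> bool" where
  "deg C 0 f = iso (lift C) f"
| "deg C (Suc n) f = comp_closure (Z (Zn C n))
      (\<lambda>g. simple_deg (Zn C n) g \<or> parallel_deg (Zn C n) (deg C n) g) f"

definition normalising :: "('o, 'm) cat \<Rightarrow> nat \<Rightarrow> ('o, 'm) zm \<Rightarrow> bool" where
  "normalising C n d \<longleftrightarrow> deg C n d \<and>
     (\<forall>d'. deg C n d' \<and> cCod (Zn C n) d' = cCod (Zn C n) d \<longrightarrow> factors_through (Zn C n) d d')"

definition rel_normalisation ::
  "('o, 'm) cat \<Rightarrow> nat \<Rightarrow> ('o, 'm) zo \<Rightarrow> 'i set \<Rightarrow> ('i \<Rightarrow> ('o, 'm) zm) \<Rightarrow> ('o, 'm) zm \<Rightarrow> bool" where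
  "rel_normalisation C n T I f d \<longleftrightarrow> deg C n d \<and> cCod (Zn C n) d = T \<and>
     (\<forall>i \<in> I. factors_through (Zn C n) (f i) d) \<and>
     (\<forall>d'. deg C n d' \<and> cCod (Zn C n) d' = T \<and> (\<forall>i \<in> I. factors_through (Zn C n) (f i) d')
           \<longrightarrow> factors_through (Zn C n) d d')"

primrec globular_map :: "('o, 'm) cat \<Rightarrow> nat \<Rightarrow> ('o, 'm) zm \<Rightarrow> bool" where
  "globular_map C 0 f = True"
| "globular_map C (Suc n) f \<longleftrightarrow>
     (\<forall>i \<le> zlen (mcod f). iso (Zn C n) (mreg f i)) \<and>
     (\<forall>j < zlen (mdom f). globular_map C n (msing f j))"

primrec globular_obj :: "('o, 'm) cat \<Rightarrow> nat \<Rightarrow> ('o, 'm) zo \<Rightarrow> bool" where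
  "globular_obj C 0 X = True"
| "globular_obj C (Suc n) X \<longleftrightarrow>
     (\<forall>i \<le> zlen X. globular_obj C n (zr X i)) \<and>
     (\<forall>j < zlen X. globular_obj C n (zs X j) \<and> globular_map C n (zx X j) \<and> globular_map C n (zy X j))"

primrec reg_normalising :: "('o, 'm) cat \<Rightarrow> nat \<Rightarrow> ('o, 'm) zm \<Rightarrow> bool" where
  "reg_normalising C 0 f = True"
| "reg_normalising C (Suc n) f \<longleftrightarrow>
     (\<forall>i \<le> zlen (mcod f). normalising C n (mreg f i)) \<and>
     (\<forall>j < zlen (mdom f). reg_normalising C n (msing f j))"

end

theory Submission
  imports Defs
begin

lemma hat_le: "hat \<phi> i \<le> length \<phi>"
  unfolding hat_def by (rule Min_le) auto

lemma hat_less: "j < hat \<phi> i \<Longrightarrow> \<phi> ! j < i"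
proof (rule ccontr)
  assume a: "j < hat \<phi> i" "\<not> \<phi> ! j < i"
  have "j < length \<phi>" using a(1) hat_le[of \<phi> i] by simp
  hence "hat \<phi> i \<le> j" unfolding hat_def using a(2) by (intro Min_le) auto
  thus False using a(1) by simp
qed

lemma hat_ge: "hat \<phi> i < length \<phi> \<Longrightarrow> i \<le> \<phi> ! (hat \<phi> i)"
proof -
  assume a: "hat \<phi> i < length \<phi>"
  have "hat \<phi> i \<in> ({j. j < length \<phi> \<and> \<phi>!j \<ge> i} \<union> {length \<phi>})"
    unfolding hat_def by (rule Min_in) auto
  thus ?thesis using a by auto
qed

lemma hat_eqI:
  assumes "p \<le> length \<phi>" "\<And>j. j < p \<Longrightarrow> \<phi>!j < i" "p < length \<phi> \<Longrightarrow> i \<le> \<phi>!p"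
  shows "hat \<phi> i = p"
proof -
  have "p \<in> ({j. j < length \<phi> \<and> \<phi>!j \<ge> i} \<union> {length \<phi>})" using assms by (cases "p < length \<phi>") auto
  moreover have "\<forall>q \<in> ({j. j < length \<phi> \<and> \<phi>!j \<ge> i} \<union> {length \<phi>}). p \<le> q"
    using assms(1,2) by (auto simp: not_less[symmetric])
  ultimately show ?thesis unfolding hat_def
    by (intro antisym Min_le) (auto intro: Min_in)
qed

lemma hat_upt: "i \<le> n \<Longrightarrow> hat [0..<n] i = i"
  by (rule hat_eqI) auto

lemma hat_mono_le: "\<lbrakk>k < length \<phi>; i \<le> \<phi>!k\<rbrakk> \<Longrightarrow> hat \<phi> i \<le> k"
  using hat_less[of k \<phi> i] by (meson not_le)

lemma hat_top: "\<lbrakk>\<forall>j < length \<phi>. \<phi>!j < m\<rbrakk> \<Longrightarrow> hat \<phi> m = length \<phi>"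
  by (rule hat_eqI) auto

lemma hat_strict_at:
  assumes "sorted_wrt (<) \<phi>" "j < length \<phi>"
  shows "hat \<phi> (\<phi>!j) = j" "hat \<phi> (Suc (\<phi>!j)) = Suc j"
proof -
  show "hat \<phi> (\<phi>!j) = j"
    by (rule hat_eqI) (use assms in \<open>auto simp: sorted_wrt_iff_nth_less\<close>)
  show "hat \<phi> (Suc (\<phi>!j)) = Suc j"
  proof (rule hat_eqI)
    show "Suc j \<le> length \<phi>" using assms by simp
    fix j' assume "j' < Suc j" thus "\<phi>!j' < Suc (\<phi>!j)" using assms
      by (cases "j' = j") (auto simp: sorted_wrt_iff_nth_less less_Suc_eq)
  next
    assume "Suc j < length \<phi>" thus "Suc (\<phi>!j) \<le> \<phi>!Suc j" using assms
      by (simp add: sorted_wrt_iff_nth_less Suc_leI)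
  qed
qed

lemma hat_not_in:
  assumes "i \<notin> set \<phi>"
  shows "hat \<phi> (Suc i) = hat \<phi> i"
proof (rule hat_eqI)
  show "hat \<phi> i \<le> length \<phi>" by (rule hat_le)
  fix j assume "j < hat \<phi> i" thus "\<phi>!j < Suc i" using hat_less by fastforce
next
  assume a: "hat \<phi> i < length \<phi>"
  hence "i \<le> \<phi>!(hat \<phi> i)" by (rule hat_ge)
  moreover have "\<phi>!(hat \<phi> i) \<noteq> i" using a assms by (metis nth_mem)
  ultimately show "Suc i \<le> \<phi>!(hat \<phi> i)" by simp
qed

lemma hat_comp:
  assumes "sorted \<psi>" "\<forall>j < length \<phi>. \<phi>!j < length \<psi>"
  shows "hat (map (\<lambda>j. \<psi>!(\<phi>!j)) [0..<length \<phi>]) i = hat \<phi> (hat \<psi> i)"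
proof (rule hat_eqI)
  show "hat \<phi> (hat \<psi> i) \<le> length (map (\<lambda>j. \<psi>!(\<phi>!j)) [0..<length \<phi>])" using hat_le by simp
  fix j assume a: "j < hat \<phi> (hat \<psi> i)"
  hence "\<phi>!j < hat \<psi> i" by (rule hat_less)
  hence "\<psi>!(\<phi>!j) < i" by (rule hat_less)
  moreover have "j < length \<phi>" using a hat_le[of \<phi>] by (meson less_le_trans)
  ultimately show "map (\<lambda>j. \<psi>!(\<phi>!j)) [0..<length \<phi>] ! j < i" by simp
next
  let ?p = "hat \<phi> (hat \<psi> i)"
  assume a: "?p < length (map (\<lambda>j. \<psi>!(\<phi>!j)) [0..<length \<phi>])"
  hence p: "?p < length \<phi>" by simp
  hence k: "hat \<psi> i \<le> \<phi>!?p" by (rule hat_ge)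
  have lt: "\<phi>!?p < length \<psi>" using assms p by auto
  hence "hat \<psi> i < length \<psi>" using k by simp
  hence "i \<le> \<psi>!(hat \<psi> i)" by (rule hat_ge)
  also have "\<dots> \<le> \<psi>!(\<phi>!?p)" using assms(1) k lt by (simp add: sorted_nth_mono)
  finally show "i \<le> map (\<lambda>j. \<psi>!(\<phi>!j)) [0..<length \<phi>] ! ?p" using p by simp
qed

lemma hat_surj:
  assumes "sorted_wrt (<) \<phi>" "\<forall>j < length \<phi>. \<phi>!j < m" "q \<le> length \<phi>"
  shows "\<exists>i \<le> m. hat \<phi> i = q"
proof (cases "q < length \<phi>")
  case True thus ?thesis using assms hat_strict_at(1)[of \<phi> q] by (intro exI[of _ "\<phi>!q"]) auto
next
  case False thus ?thesis using assms hat_top[of \<phi> m] by (intro exI[of _ m]) auto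
qed

definition arr :: "('o, 'm) cat \<Rightarrow> 'm \<Rightarrow> 'o \<Rightarrow> 'o \<Rightarrow> bool" where
  "arr D f a b \<longleftrightarrow> f \<in> cArr D \<and> cDom D f = a \<and> cCod D f = b"

lemma cat_arr_obj: "is_category D \<Longrightarrow> arr D f a b \<Longrightarrow> a \<in> cObj D \<and> b \<in> cObj D"
  unfolding is_category_def arr_def by auto
lemma cat_comp: "is_category D \<Longrightarrow> arr D f a b \<Longrightarrow> arr D g b c \<Longrightarrow> arr D (cComp D g f) a c"
  unfolding is_category_def arr_def by auto
lemma cat_assoc: "is_category D \<Longrightarrow> arr D f a b \<Longrightarrow> arr D g b c \<Longrightarrow> arr D h c e \<Longrightarrow>
   cComp D h (cComp D g f) = cComp D (cComp D h g) f"
  unfolding is_category_def arr_def by metis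
lemma cat_id: "is_category D \<Longrightarrow> a \<in> cObj D \<Longrightarrow> arr D (cId D a) a a"
  unfolding is_category_def arr_def by auto
lemma cat_idl: "is_category D \<Longrightarrow> arr D f a b \<Longrightarrow> cComp D (cId D b) f = f"
  unfolding is_category_def arr_def by auto
lemma cat_idr: "is_category D \<Longrightarrow> arr D f a b \<Longrightarrow> cComp D f (cId D a) = f"
  unfolding is_category_def arr_def by auto
lemma arrI: "f \<in> cArr D \<Longrightarrow> arr D f (cDom D f) (cCod D f)"
  unfolding arr_def by auto

lemma zlen_ZZ[simp]: "zlen (ZZ rs ss xs ys) = length ss" by (simp add: zlen_def)
lemma zr_ZZ[simp]: "zr (ZZ rs ss xs ys) i = rs ! i" by (simp add: zr_def)
lemma zs_ZZ[simp]: "zs (ZZ rs ss xs ys) i = ss ! i" by (simp add: zs_def)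
lemma zx_ZZ[simp]: "zx (ZZ rs ss xs ys) i = xs ! i" by (simp add: zx_def)
lemma zy_ZZ[simp]: "zy (ZZ rs ss xs ys) i = ys ! i" by (simp add: zy_def)
lemma mdom_ZM[simp]: "mdom (ZM X Y fs fr fsg) = X" by (simp add: mdom_def)
lemma mcod_ZM[simp]: "mcod (ZM X Y fs fr fsg) = Y" by (simp add: mcod_def)
lemma msing_map_ZM[simp]: "msing_map (ZM X Y fs fr fsg) = fs" by (simp add: msing_map_def)
lemma mreg_ZM[simp]: "mreg (ZM X Y fs fr fsg) i = fr ! i" by (simp add: mreg_def)
lemma msing_ZM[simp]: "msing (ZM X Y fs fr fsg) i = fsg ! i" by (simp add: msing_def)

lemma Z_simps[simp]: "cObj (Z D) = {X. zig_obj D X}" "cArr (Z D) = {f. zig_map D f}"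
  "cDom (Z D) = mdom" "cCod (Z D) = mcod" "cComp (Z D) = zig_comp D" "cId (Z D) = zig_id D"
  by (simp_all add: Z_def)

lemma zig_obj_arr:
  assumes "zig_obj D X"
  shows "\<And>i. i \<le> zlen X \<Longrightarrow> zr X i \<in> cObj D"
    and "\<And>j. j < zlen X \<Longrightarrow> zs X j \<in> cObj D"
    and "\<And>j. j < zlen X \<Longrightarrow> arr D (zx X j) (zr X j) (zs X j)"
    and "\<And>j. j < zlen X \<Longrightarrow> arr D (zy X j) (zr X (Suc j)) (zs X j)"
  using assms unfolding zig_obj_def arr_def by (auto simp: less_Suc_eq_le[symmetric])

definition zm_typ where
  "zm_typ D X Y fs fr fsg \<longleftrightarrow> zig_obj D X \<and> zig_obj D Y \<and> delta_map fs (zlen X) (zlen Y) \<and>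
     length fr = Suc (zlen Y) \<and> length fsg = zlen X \<and>
     (\<forall>i \<le> zlen Y. arr D (fr!i) (zr X (hat fs i)) (zr Y i)) \<and>
     (\<forall>j < zlen X. arr D (fsg!j) (zs X j) (zs Y (fs!j)))"

definition zm_loc where
  "zm_loc D X Y \<phi> fr fsg \<longleftrightarrow>
    (\<forall>j < zlen X. (j = 0 \<or> \<phi>!(j-1) < \<phi>!j) \<longrightarrow>
        cComp D (fsg!j) (zx X j) = cComp D (zx Y (\<phi>!j)) (fr!(\<phi>!j))) \<and>
    (\<forall>j < zlen X. (Suc j = zlen X \<or> \<phi>!j < \<phi>!Suc j) \<longrightarrow>
        cComp D (fsg!j) (zy X j) = cComp D (zy Y (\<phi>!j)) (fr!Suc (\<phi>!j))) \<and>
    (\<forall>j. Suc j < zlen X \<and> \<phi>!j = \<phi>!Suc j \<longrightarrow>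
        cComp D (fsg!j) (zy X j) = cComp D (fsg!Suc j) (zx X (Suc j))) \<and>
    (\<forall>i < zlen Y. i \<notin> set \<phi> \<longrightarrow> cComp D (zx Y i) (fr!i) = cComp D (zy Y i) (fr!Suc i))"

lemma sorted_less_idx: "sorted \<phi> \<Longrightarrow> i < length \<phi> \<Longrightarrow> \<phi>!i < \<phi>!j \<Longrightarrow> i < j"
  using sorted_nth_mono[of \<phi> j i] by (metis leI not_le)

lemma fiber_facts:
  assumes s: "sorted \<phi>" and P: "P = {j. j < length \<phi> \<and> \<phi>!j = i}" and ne: "P \<noteq> {}"
  shows "Min P \<in> P" "Max P \<in> P" "Min P = 0 \<or> \<phi>!(Min P - 1) < \<phi>!(Min P)"
    "Suc (Max P) = length \<phi> \<or> \<phi>!(Max P) < \<phi>!Suc (Max P)"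
    "\<And>j. Min P \<le> j \<Longrightarrow> j < Max P \<Longrightarrow> \<phi>!j = i \<and> \<phi>!Suc j = i \<and> Suc j < length \<phi>"
proof -
  have fin: "finite P" using P by auto
  show mi: "Min P \<in> P" and ma: "Max P \<in> P" using fin ne by auto
  show "Min P = 0 \<or> \<phi>!(Min P - 1) < \<phi>!(Min P)"
  proof (cases "Min P = 0")
    case False
    have "Min P - 1 \<notin> P" using fin False by (metis Min_le diff_less less_numeral_extra(1) not_le not_gr_zero)
    moreover have "\<phi>!(Min P - 1) \<le> \<phi>!(Min P)" using s mi P sorted_nth_mono[of \<phi> "Min P - 1" "Min P"] by auto
    ultimately show ?thesis using mi P by auto
  qed simp
  show "Suc (Max P) = length \<phi> \<or> \<phi>!(Max P) < \<phi>!Suc (Max P)"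
  proof (cases "Suc (Max P) = length \<phi>")
    case False
    hence l: "Suc (Max P) < length \<phi>" using ma P by auto
    have "Suc (Max P) \<notin> P" using fin by (metis Max_ge Suc_n_not_le_n)
    moreover have "\<phi>!(Max P) \<le> \<phi>!Suc (Max P)" using s l by (auto intro: sorted_nth_mono)
    ultimately show ?thesis using ma P l by auto
  qed simp
  fix j assume a: "Min P \<le> j" "j < Max P"
  have l: "Suc j < length \<phi>" using a ma P by auto
  have "Max P < length \<phi>" using ma P by auto
  hence "\<phi>!(Min P) \<le> \<phi>!j" "\<phi>!j \<le> \<phi>!Suc j" "\<phi>!Suc j \<le> \<phi>!(Max P)"
    using a l s sorted_nth_mono[of \<phi> "Min P" j] sorted_nth_mono[of \<phi> j "Suc j"]
      sorted_nth_mono[of \<phi> "Suc j" "Max P"] by auto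
  thus "\<phi>!j = i \<and> \<phi>!Suc j = i \<and> Suc j < length \<phi>" using mi ma P l by auto
qed

lemma fiber_min_eq:
  assumes s: "sorted \<phi>" and j: "j < length \<phi>" and c: "j = 0 \<or> \<phi>!(j-1) < \<phi>!j"
  shows "Min {j'. j' < length \<phi> \<and> \<phi>!j' = \<phi>!j} = j"
proof (rule Min_eqI)
  fix y assume "y \<in> {j'. j' < length \<phi> \<and> \<phi>!j' = \<phi>!j}"
  hence y: "y < length \<phi>" "\<phi>!y = \<phi>!j" by auto
  show "j \<le> y"
  proof (rule ccontr)
    assume "\<not> j \<le> y"
    hence "y \<le> j - 1" "j \<noteq> 0" by auto
    hence "\<phi>!y \<le> \<phi>!(j-1)" using s j sorted_nth_mono[of \<phi> y "j-1"] by auto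
    thus False using c y \<open>j \<noteq> 0\<close> by auto
  qed
qed (use j in auto)

lemma fiber_max_eq:
  assumes s: "sorted \<phi>" and j: "j < length \<phi>" and c: "Suc j = length \<phi> \<or> \<phi>!j < \<phi>!Suc j"
  shows "Max {j'. j' < length \<phi> \<and> \<phi>!j' = \<phi>!j} = j"
proof (rule Max_eqI)
  fix y assume y: "y \<in> {j'. j' < length \<phi> \<and> \<phi>!j' = \<phi>!j}"
  show "y \<le> j"
  proof (rule ccontr)
    assume "\<not> y \<le> j" hence "Suc j \<le> y" by simp
    moreover have l: "Suc j < length \<phi>" using y \<open>Suc j \<le> y\<close> by auto
    ultimately have "\<phi>!Suc j \<le> \<phi>!y" using s y sorted_nth_mono[of \<phi> "Suc j" y] by auto
    thus False using c y l by auto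
  qed
qed (use j in auto)

lemma zig_map_iff:
  "zig_map D f \<longleftrightarrow> (\<exists>X Y fs fr fsg. f = ZM X Y fs fr fsg \<and> zm_typ D X Y fs fr fsg \<and> zm_loc D X Y fs fr fsg)"
proof -
  have eq: "(\<forall>i < zlen Y.
         (let P = {j. j < zlen X \<and> fs ! j = i} in
          if P \<noteq> {} then
            (cComp D (fsg ! Min P) (zx X (Min P)) = cComp D (zx Y i) (fr ! i) \<and>
             cComp D (fsg ! Max P) (zy X (Max P)) = cComp D (zy Y i) (fr ! Suc i) \<and>
             (\<forall>j. Min P \<le> j \<and> j < Max P \<longrightarrow>
                 cComp D (fsg ! j) (zy X j) = cComp D (fsg ! Suc j) (zx X (Suc j))))
          else cComp D (zx Y i) (fr ! i) = cComp D (zy Y i) (fr ! Suc i)))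
      \<longleftrightarrow> zm_loc D X Y fs fr fsg" if dm: "delta_map fs (zlen X) (zlen Y)" for X Y fs fr fsg
  proof -
    have s: "sorted fs" and len: "length fs = zlen X" and lt: "\<forall>j<zlen X. fs!j < zlen Y"
      using dm unfolding delta_map_def by auto
    show ?thesis
    proof
      assume R: "\<forall>i < zlen Y. (let P = {j. j < zlen X \<and> fs ! j = i} in
          if P \<noteq> {} then
            (cComp D (fsg ! Min P) (zx X (Min P)) = cComp D (zx Y i) (fr ! i) \<and>
             cComp D (fsg ! Max P) (zy X (Max P)) = cComp D (zy Y i) (fr ! Suc i) \<and>
             (\<forall>j. Min P \<le> j \<and> j < Max P \<longrightarrow>
                 cComp D (fsg ! j) (zy X j) = cComp D (fsg ! Suc j) (zx X (Suc j))))
          else cComp D (zx Y i) (fr ! i) = cComp D (zy Y i) (fr ! Suc i))"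
      show "zm_loc D X Y fs fr fsg" unfolding zm_loc_def
      proof (intro conjI allI impI)
        fix j assume j: "j < zlen X" and c: "j = 0 \<or> fs!(j-1) < fs!j"
        let ?P = "{j'. j' < zlen X \<and> fs ! j' = fs!j}"
        have ne: "?P \<noteq> {}" using j by auto
        have "Min ?P = j" using fiber_min_eq[OF s, of j] j c len by simp
        thus "cComp D (fsg!j) (zx X j) = cComp D (zx Y (fs!j)) (fr!(fs!j))"
          using R[rule_format, of "fs!j"] lt j ne by (auto simp: Let_def)
      next
        fix j assume j: "j < zlen X" and c: "Suc j = zlen X \<or> fs!j < fs!Suc j"
        let ?P = "{j'. j' < zlen X \<and> fs ! j' = fs!j}"
        have ne: "?P \<noteq> {}" using j by auto
        have "Max ?P = j" using fiber_max_eq[OF s, of j] j c len by simp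
        thus "cComp D (fsg!j) (zy X j) = cComp D (zy Y (fs!j)) (fr!Suc (fs!j))"
          using R[rule_format, of "fs!j"] lt j ne by (auto simp: Let_def)
      next
        fix j assume c: "Suc j < zlen X \<and> fs!j = fs!Suc j"
        let ?P = "{j'. j' < zlen X \<and> fs ! j' = fs!j}"
        have ne: "?P \<noteq> {}" using c by auto
        have fin: "finite ?P" by auto
        have m1: "Min ?P \<le> j" using c by (intro Min_le) auto
        moreover have "Suc j \<le> Max ?P" using c by (intro Max_ge) auto
        moreover have ltj: "fs!j < zlen Y" using lt c by auto
        note H = R[rule_format, OF ltj, unfolded Let_def if_P[OF ne]]
        ultimately show "cComp D (fsg!j) (zy X j) = cComp D (fsg!Suc j) (zx X (Suc j))"
          using H[THEN conjunct2, THEN conjunct2, rule_format, of j] by simp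
      next
        fix i assume i: "i < zlen Y" "i \<notin> set fs"
        have "{j. j < zlen X \<and> fs ! j = i} = {}" using i len by (auto simp: in_set_conv_nth)
        thus "cComp D (zx Y i) (fr!i) = cComp D (zy Y i) (fr!Suc i)"
          using R[rule_format, of i] i by (auto simp: Let_def)
      qed
    next
      assume L: "zm_loc D X Y fs fr fsg"
      show "\<forall>i < zlen Y. (let P = {j. j < zlen X \<and> fs ! j = i} in
          if P \<noteq> {} then
            (cComp D (fsg ! Min P) (zx X (Min P)) = cComp D (zx Y i) (fr ! i) \<and>
             cComp D (fsg ! Max P) (zy X (Max P)) = cComp D (zy Y i) (fr ! Suc i) \<and>
             (\<forall>j. Min P \<le> j \<and> j < Max P \<longrightarrow>
                 cComp D (fsg ! j) (zy X j) = cComp D (fsg ! Suc j) (zx X (Suc j))))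
          else cComp D (zx Y i) (fr ! i) = cComp D (zy Y i) (fr ! Suc i))"
      proof (intro allI impI)
        fix i assume i: "i < zlen Y"
        define P where "P = {j. j < zlen X \<and> fs ! j = i}"
        have P': "P = {j. j < length fs \<and> fs ! j = i}" using P_def len by simp
        show "let P = {j. j < zlen X \<and> fs ! j = i} in
          if P \<noteq> {} then
            (cComp D (fsg ! Min P) (zx X (Min P)) = cComp D (zx Y i) (fr ! i) \<and>
             cComp D (fsg ! Max P) (zy X (Max P)) = cComp D (zy Y i) (fr ! Suc i) \<and>
             (\<forall>j. Min P \<le> j \<and> j < Max P \<longrightarrow>
                 cComp D (fsg ! j) (zy X j) = cComp D (fsg ! Suc j) (zx X (Suc j))))
          else cComp D (zx Y i) (fr ! i) = cComp D (zy Y i) (fr ! Suc i)"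
        proof (cases "P = {}")
          case True
          hence "i \<notin> set fs" using P_def len by (auto simp: in_set_conv_nth)
          thus ?thesis using L i True unfolding zm_loc_def P_def[symmetric] by (simp add: Let_def)
        next
          case False
          note ff = fiber_facts[OF s P' False]
          have a1: "cComp D (fsg ! Min P) (zx X (Min P)) = cComp D (zx Y i) (fr ! i)"
            using L ff(1,3) len P' unfolding zm_loc_def by auto
          have a2: "cComp D (fsg ! Max P) (zy X (Max P)) = cComp D (zy Y i) (fr ! Suc i)"
            using L ff(2,4) len P' unfolding zm_loc_def by auto
          have a3: "\<forall>j. Min P \<le> j \<and> j < Max P \<longrightarrow>
                 cComp D (fsg ! j) (zy X j) = cComp D (fsg ! Suc j) (zx X (Suc j))"
            using L ff(5) len unfolding zm_loc_def by auto
          show ?thesis using a1 a2 a3 False unfolding P_def[symmetric] by (simp add: Let_def)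
        qed
      qed
    qed
  qed
  show ?thesis
  proof
    assume "zig_map D f"
    then obtain X Y fs fr fsg where A: "f = ZM X Y fs fr fsg" "zig_obj D X" "zig_obj D Y"
      "delta_map fs (zlen X) (zlen Y)" "length fr = Suc (zlen Y)" "length fsg = zlen X"
      "(\<forall>i \<le> zlen Y. fr ! i \<in> cArr D \<and> cDom D (fr ! i) = zr X (hat fs i) \<and> cCod D (fr ! i) = zr Y i)"
      "(\<forall>j < zlen X. fsg ! j \<in> cArr D \<and> cDom D (fsg ! j) = zs X j \<and> cCod D (fsg ! j) = zs Y (fs ! j))"
      "(\<forall>i < zlen Y.
         (let P = {j. j < zlen X \<and> fs ! j = i} in
          if P \<noteq> {} then
            (cComp D (fsg ! Min P) (zx X (Min P)) = cComp D (zx Y i) (fr ! i) \<and>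
             cComp D (fsg ! Max P) (zy X (Max P)) = cComp D (zy Y i) (fr ! Suc i) \<and>
             (\<forall>j. Min P \<le> j \<and> j < Max P \<longrightarrow>
                 cComp D (fsg ! j) (zy X j) = cComp D (fsg ! Suc j) (zx X (Suc j))))
          else cComp D (zx Y i) (fr ! i) = cComp D (zy Y i) (fr ! Suc i)))"
      unfolding zig_map_def by blast
    show "\<exists>X Y fs fr fsg. f = ZM X Y fs fr fsg \<and> zm_typ D X Y fs fr fsg \<and> zm_loc D X Y fs fr fsg"
      using A eq[OF A(4)] unfolding zm_typ_def arr_def by blast
  next
    assume "\<exists>X Y fs fr fsg. f = ZM X Y fs fr fsg \<and> zm_typ D X Y fs fr fsg \<and> zm_loc D X Y fs fr fsg"
    then obtain X Y fs fr fsg where A: "f = ZM X Y fs fr fsg" "zm_typ D X Y fs fr fsg" "zm_loc D X Y fs fr fsg"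
      by blast
    have dm: "delta_map fs (zlen X) (zlen Y)" using A(2) unfolding zm_typ_def by simp
    show "zig_map D f" unfolding zig_map_def
      using A(1,2) eq[OF dm] A(3) unfolding zm_typ_def arr_def by blast
  qed
qed

lemma hat_first:
  assumes "sorted \<psi>" "k < length \<psi>" "\<psi>!k = i"
  shows "hat \<psi> i \<le> k" "\<psi>!(hat \<psi> i) = i" "hat \<psi> i = 0 \<or> \<psi>!(hat \<psi> i - 1) < \<psi>!(hat \<psi> i)"
proof -
  show k0: "hat \<psi> i \<le> k" using assms by (intro hat_mono_le) auto
  hence l: "hat \<psi> i < length \<psi>" using assms by simp
  have "i \<le> \<psi>!(hat \<psi> i)" using l by (rule hat_ge)
  moreover have "\<psi>!(hat \<psi> i) \<le> \<psi>!k" using sorted_nth_mono[OF assms(1) k0 assms(2)] .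
  ultimately show e: "\<psi>!(hat \<psi> i) = i" using assms by simp
  show "hat \<psi> i = 0 \<or> \<psi>!(hat \<psi> i - 1) < \<psi>!(hat \<psi> i)"
    using hat_less[of "hat \<psi> i - 1" \<psi> i] e by (cases "hat \<psi> i") auto
qed

lemma hat_last:
  assumes s: "sorted \<psi>" and k: "k < length \<psi>" and e: "\<psi>!k = i"
  shows "k < hat \<psi> (Suc i)" "hat \<psi> (Suc i) \<le> length \<psi>" "\<psi>!(hat \<psi> (Suc i) - 1) = i"
    "hat \<psi> (Suc i) = length \<psi> \<or> \<psi>!(hat \<psi> (Suc i) - 1) < \<psi>!(hat \<psi> (Suc i))"
proof -
  let ?K = "hat \<psi> (Suc i)"
  show kK: "k < ?K"
  proof (rule ccontr)
    assume "\<not> k < ?K" hence a: "?K \<le> k" by simp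
    hence "?K < length \<psi>" using k by simp
    hence "Suc i \<le> \<psi>!?K" by (rule hat_ge)
    moreover have "\<psi>!?K \<le> \<psi>!k" using s a k by (simp add: sorted_nth_mono)
    ultimately show False using e by simp
  qed
  show Kl: "?K \<le> length \<psi>" by (rule hat_le)
  have "\<psi>!(?K - 1) < Suc i" using kK by (intro hat_less) simp
  moreover have "\<psi>!k \<le> \<psi>!(?K - 1)" using s kK Kl by (intro sorted_nth_mono) auto
  ultimately show e2: "\<psi>!(?K - 1) = i" using e by simp
  show "?K = length \<psi> \<or> \<psi>!(?K - 1) < \<psi>!?K"
  proof (cases "?K < length \<psi>")
    case True thus ?thesis using hat_ge[OF True] e2 by simp
  qed (use Kl in simp)
qed

lemma sorted_const:
  "sorted \<psi> \<Longrightarrow> a \<le> k \<Longrightarrow> k \<le> b \<Longrightarrow> b < length \<psi> \<Longrightarrow> \<psi>!a = i \<Longrightarrow> \<psi>!b = i \<Longrightarrow> \<psi>!k = i"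
proof -
  assume a: "sorted \<psi>" "a \<le> k" "k \<le> b" "b < length \<psi>" "\<psi>!a = i" "\<psi>!b = i"
  have "\<psi>!a \<le> \<psi>!k" using sorted_nth_mono[OF a(1) a(2)] a(3,4) by simp
  moreover have "\<psi>!k \<le> \<psi>!b" using sorted_nth_mono[OF a(1) a(3) a(4)] .
  ultimately show ?thesis using a(5,6) by simp
qed

lemma cat_assoc':
  "is_category D \<Longrightarrow> arr D f a b \<Longrightarrow> arr D g b' c \<Longrightarrow> arr D h c' e \<Longrightarrow> b = b' \<Longrightarrow> c = c' \<Longrightarrow>
   cComp D h (cComp D g f) = cComp D (cComp D h g) f"
proof -
  assume a: "is_category D" "arr D f a b" "arr D g b' c" "arr D h c' e" "b = b'" "c = c'"
  show ?thesis using cat_assoc[OF a(1) a(2), of g c h e] a(3-6) by simp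
qed

lemma sorted_const_step:
  assumes "sorted \<psi>" "b < length \<psi>" "\<psi>!a = \<psi>!b"
  shows "\<forall>k. a \<le> k \<and> k < b \<longrightarrow> \<psi>!k = \<psi>!Suc k"
proof (intro allI impI)
  fix k assume k: "a \<le> k \<and> k < b"
  have "\<psi>!k = \<psi>!b" using sorted_const[OF assms(1), of a k b "\<psi>!b"] k assms by simp
  moreover have "\<psi>!Suc k = \<psi>!b" using sorted_const[OF assms(1), of a "Suc k" b "\<psi>!b"] k assms by simp
  ultimately show "\<psi>!k = \<psi>!Suc k" by simp
qed

lemma delta_mapD: "delta_map \<phi> n m \<Longrightarrow> length \<phi> = n \<and> sorted \<phi> \<and> (\<forall>j<n. \<phi>!j < m)"
  unfolding delta_map_def by simp

lemma comp_typ_loc: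
  assumes cat: "is_category D"
    and tf: "zm_typ D X Y \<phi> fr fsg" and lf: "zm_loc D X Y \<phi> fr fsg"
    and tg: "zm_typ D Y W \<psi> gr gsg" and lg: "zm_loc D Y W \<psi> gr gsg"
  defines "\<chi> \<equiv> map (\<lambda>j. \<psi>!(\<phi>!j)) [0..<length \<phi>]"
    and "cr \<equiv> map (\<lambda>i. cComp D (gr!i) (fr!(hat \<psi> i))) [0..<Suc (zlen W)]"
    and "cs \<equiv> map (\<lambda>j. cComp D (gsg!(\<phi>!j)) (fsg!j)) [0..<length \<phi>]"
  shows "zm_typ D X W \<chi> cr cs \<and> zm_loc D X W \<chi> cr cs"
proof -
  have oX: "zig_obj D X" and oY: "zig_obj D Y" and oW: "zig_obj D W" using tf tg unfolding zm_typ_def by auto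
  have dmf: "delta_map \<phi> (zlen X) (zlen Y)" and dmg: "delta_map \<psi> (zlen Y) (zlen W)"
    using tf tg unfolding zm_typ_def by auto
  note df = delta_mapD[OF dmf] and dg = delta_mapD[OF dmg]
  have sf: "sorted \<phi>" and lenf: "length \<phi> = zlen X" and ltf: "\<And>j. j < zlen X \<Longrightarrow> \<phi>!j < zlen Y"
    using df by auto
  have sg: "sorted \<psi>" and leng: "length \<psi> = zlen Y" and ltg: "\<And>k. k < zlen Y \<Longrightarrow> \<psi>!k < zlen W"
    using dg by auto
  have afr: "\<And>k. k \<le> zlen Y \<Longrightarrow> arr D (fr!k) (zr X (hat \<phi> k)) (zr Y k)"
   and afs: "\<And>j. j < zlen X \<Longrightarrow> arr D (fsg!j) (zs X j) (zs Y (\<phi>!j))"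
   and agr: "\<And>i. i \<le> zlen W \<Longrightarrow> arr D (gr!i) (zr Y (hat \<psi> i)) (zr W i)"
   and ags: "\<And>k. k < zlen Y \<Longrightarrow> arr D (gsg!k) (zs Y k) (zs W (\<psi>!k))"
    using tf tg unfolding zm_typ_def by auto
  note ax = zig_obj_arr(3)[OF oX] zig_obj_arr(4)[OF oX] and ay = zig_obj_arr(3)[OF oY] zig_obj_arr(4)[OF oY]
    and aw = zig_obj_arr(3)[OF oW] zig_obj_arr(4)[OF oW]
  note A = cat_assoc'[OF cat] and CC = cat_comp[OF cat]
  have lenchi: "length \<chi> = zlen X" using lenf by (simp add: \<chi>_def)
  have chi_nth: "\<And>j. j < zlen X \<Longrightarrow> \<chi>!j = \<psi>!(\<phi>!j)" using lenf by (simp add: \<chi>_def)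
  have cr_nth: "\<And>i. i \<le> zlen W \<Longrightarrow> cr!i = cComp D (gr!i) (fr!(hat \<psi> i))"
    by (simp add: cr_def del: upt_Suc)
  have cs_nth: "\<And>j. j < zlen X \<Longrightarrow> cs!j = cComp D (gsg!(\<phi>!j)) (fsg!j)" using lenf by (simp add: cs_def)
  have hatchi: "\<And>i. hat \<chi> i = hat \<phi> (hat \<psi> i)" unfolding \<chi>_def
    by (rule hat_comp[OF sg]) (use ltf lenf leng in auto)
  have chi_mono: "\<chi>!a \<le> \<chi>!b" if ab: "a \<le> b" "b < zlen X" for a b
  proof -
    have "\<phi>!a \<le> \<phi>!b" "\<phi>!b < length \<psi>" using sorted_nth_mono[OF sf ab(1)] lenf ltf leng ab by auto
    hence "\<psi>!(\<phi>!a) \<le> \<psi>!(\<phi>!b)" using sorted_nth_mono[OF sg] by blast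
    thus ?thesis using chi_nth ab by simp
  qed
  have typC: "zm_typ D X W \<chi> cr cs"
    unfolding zm_typ_def
  proof (intro conjI allI impI)
    show "delta_map \<chi> (zlen X) (zlen W)" unfolding delta_map_def
    proof (intro conjI allI impI)
      show "length \<chi> = zlen X" by (rule lenchi)
      show "sorted \<chi>" unfolding sorted_iff_nth_mono
      proof (intro allI impI)
        fix i j assume "i \<le> j" "j < length \<chi>"
        hence "\<phi>!i \<le> \<phi>!j" "\<phi>!j < length \<psi>" using sorted_nth_mono[OF sf, of i j] lenf lenchi ltf leng by auto
        hence "\<psi>!(\<phi>!i) \<le> \<psi>!(\<phi>!j)" using sorted_nth_mono[OF sg] by blast
        thus "\<chi>!i \<le> \<chi>!j" using lenchi chi_nth \<open>i \<le> j\<close> \<open>j < length \<chi>\<close> by simp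
      qed
      fix j assume "j < zlen X" thus "\<chi>!j < zlen W" using chi_nth ltf ltg by simp
    qed
    show "zig_obj D X" by (rule oX)
    show "zig_obj D W" by (rule oW)
    show "length cr = Suc (zlen W)" by (simp add: cr_def del: upt_Suc)
    show "length cs = zlen X" by (simp add: cs_def lenf)
    fix i assume i: "i \<le> zlen W"
    have "hat \<psi> i \<le> zlen Y" using hat_le[of \<psi> i] leng by simp
    thus "arr D (cr!i) (zr X (hat \<chi> i)) (zr W i)"
      using cr_nth[OF i] CC[OF afr agr[OF i]] hatchi by simp
  next
    fix j assume j: "j < zlen X"
    show "arr D (cs!j) (zs X j) (zs W (\<chi>!j))"
      using cs_nth[OF j] chi_nth[OF j] CC[OF afs[OF j] ags[OF ltf[OF j]]] by simp
  qed
  define E where "E k = cComp D (gsg!k) (cComp D (zx Y k) (fr!k))" for k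
  define E' where "E' k = cComp D (gsg!k) (cComp D (zy Y k) (fr!Suc k))" for k
  have F1: "\<And>j. j < zlen X \<Longrightarrow> (j = 0 \<or> \<phi>!(j-1) < \<phi>!j) \<Longrightarrow>
        cComp D (fsg!j) (zx X j) = cComp D (zx Y (\<phi>!j)) (fr!(\<phi>!j))"
   and F2: "\<And>j. j < zlen X \<Longrightarrow> (Suc j = zlen X \<or> \<phi>!j < \<phi>!Suc j) \<Longrightarrow>
        cComp D (fsg!j) (zy X j) = cComp D (zy Y (\<phi>!j)) (fr!Suc (\<phi>!j))"
   and F3: "\<And>j. Suc j < zlen X \<Longrightarrow> \<phi>!j = \<phi>!Suc j \<Longrightarrow>
        cComp D (fsg!j) (zy X j) = cComp D (fsg!Suc j) (zx X (Suc j))"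
   and F4: "\<And>i. i < zlen Y \<Longrightarrow> i \<notin> set \<phi> \<Longrightarrow> cComp D (zx Y i) (fr!i) = cComp D (zy Y i) (fr!Suc i)"
    using lf unfolding zm_loc_def by auto
  have G1: "\<And>j. j < zlen Y \<Longrightarrow> (j = 0 \<or> \<psi>!(j-1) < \<psi>!j) \<Longrightarrow>
        cComp D (gsg!j) (zx Y j) = cComp D (zx W (\<psi>!j)) (gr!(\<psi>!j))"
   and G2: "\<And>j. j < zlen Y \<Longrightarrow> (Suc j = zlen Y \<or> \<psi>!j < \<psi>!Suc j) \<Longrightarrow>
        cComp D (gsg!j) (zy Y j) = cComp D (zy W (\<psi>!j)) (gr!Suc (\<psi>!j))"
   and G3: "\<And>j. Suc j < zlen Y \<Longrightarrow> \<psi>!j = \<psi>!Suc j \<Longrightarrow>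
        cComp D (gsg!j) (zy Y j) = cComp D (gsg!Suc j) (zx Y (Suc j))"
   and G4: "\<And>i. i < zlen W \<Longrightarrow> i \<notin> set \<psi> \<Longrightarrow> cComp D (zx W i) (gr!i) = cComp D (zy W i) (gr!Suc i)"
    using lg unfolding zm_loc_def by auto
  have EE': "E k = E' k" if "k < zlen Y" "k \<notin> set \<phi>" for k
    using F4[OF that] unfolding E_def E'_def by simp
  have E'E: "E' k = E (Suc k)" if k: "Suc k < zlen Y" "\<psi>!k = \<psi>!Suc k" for k
  proof -
    have "E' k = cComp D (cComp D (gsg!k) (zy Y k)) (fr!Suc k)"
      unfolding E'_def using k by (intro A[OF afr ay(2) ags]) auto
    also have "\<dots> = cComp D (cComp D (gsg!Suc k) (zx Y (Suc k))) (fr!Suc k)" using G3[OF k] by simp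
    also have "\<dots> = E (Suc k)"
      unfolding E_def using k by (intro A[OF afr ay(1) ags, symmetric]) auto
    finally show ?thesis .
  qed
  have CH: "E' a = E b" if "a < b" "b < zlen Y" "\<forall>k. a \<le> k \<and> k < b \<longrightarrow> \<psi>!k = \<psi>!Suc k"
      "\<forall>k. a < k \<and> k < b \<longrightarrow> k \<notin> set \<phi>" for a b
    using that
  proof (induction b)
    case 0 thus ?case by simp
  next
    case (Suc b)
    show ?case
    proof (cases "a = b")
      case True
      have "Suc a < zlen Y" "\<psi>!a = \<psi>!Suc a" using Suc.prems True by auto
      thus ?thesis using E'E True by blast
    next
      case False
      hence "a < b" using Suc.prems by simp
      hence "E' a = E b" using Suc.prems by (intro Suc.IH) auto
      also have "\<dots> = E' b" using Suc.prems False by (intro EE') auto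
      also have "\<dots> = E (Suc b)" using Suc.prems by (intro E'E) auto
      finally show ?thesis .
    qed
  qed
  have locC: "zm_loc D X W \<chi> cr cs"
    unfolding zm_loc_def
  proof (intro conjI allI impI)
    fix j assume j: "j < zlen X" and c: "j = 0 \<or> \<chi>!(j-1) < \<chi>!j"
    define k where "k = \<phi>!j"
    define i where "i = \<psi>!k"
    have k: "k < zlen Y" using ltf[OF j] k_def by simp
    have i: "i < zlen W" using ltg[OF k] i_def by simp
    have chij: "\<chi>!j = i" using chi_nth[OF j] k_def i_def by simp
    note hf = hat_first[OF sg, of k i, unfolded leng, OF k i_def[symmetric]]
    define k0 where "k0 = hat \<psi> i"
    have k0: "k0 \<le> k" "\<psi>!k0 = i" "k0 = 0 \<or> \<psi>!(k0-1) < \<psi>!k0" using hf k0_def by auto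
    have cmin: "j = 0 \<or> \<phi>!(j-1) < \<phi>!j"
    proof (cases j)
      case (Suc j') 
      have "\<phi>!j' \<le> \<phi>!j" using sf j Suc lenf by (simp add: sorted_nth_mono)
      moreover have "\<phi>!j' \<noteq> \<phi>!j" using c Suc chi_nth j by auto
      ultimately show ?thesis using Suc by simp
    qed simp
    have "cComp D (cs!j) (zx X j) = cComp D (gsg!k) (cComp D (fsg!j) (zx X j))"
      unfolding cs_nth[OF j] k_def[symmetric] using j k by (intro A[OF ax(1) afs ags, symmetric]) (auto simp: k_def)
    also have "\<dots> = E k" unfolding E_def using F1[OF j cmin] k_def by simp
    also have "\<dots> = E k0"
    proof (cases "k0 = k")
      case False
      hence lt: "k0 < k" using k0 by simp
      have nh: "k' \<notin> set \<phi>" if "k0 \<le> k'" "k' < k" for k'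
      proof
        assume "k' \<in> set \<phi>"
        then obtain j' where j': "j' < zlen X" "\<phi>!j' = k'" using lenf by (auto simp: in_set_conv_nth)
        have "j' < j" using sorted_less_idx[OF sf, of j'] j' that lenf k_def by simp
        hence "j' \<le> j - 1" "j \<noteq> 0" by auto
        hence "\<chi>!j' \<le> \<chi>!(j-1)" using chi_mono j by simp
        moreover have "\<chi>!j' = \<psi>!k'" using chi_nth j' by simp
        moreover have "\<psi>!k0 \<le> \<psi>!k'" using sg that k leng by (simp add: sorted_nth_mono)
        ultimately show False using c chij k0(2) \<open>j \<noteq> 0\<close> by simp
      qed
      have "E k0 = E' k0" using nh lt k by (intro EE') auto
      also have "\<dots> = E k"
      proof (rule CH[OF lt k])
        show "\<forall>k'. k0 \<le> k' \<and> k' < k \<longrightarrow> \<psi>!k' = \<psi>!Suc k'"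
          by (rule sorted_const_step[OF sg]) (use k0 k leng i_def in auto)
        show "\<forall>k'. k0 < k' \<and> k' < k \<longrightarrow> k' \<notin> set \<phi>" using nh by auto
      qed
      finally show ?thesis by simp
    qed simp
    also have "\<dots> = cComp D (cComp D (gsg!k0) (zx Y k0)) (fr!k0)"
      unfolding E_def using k0 k by (intro A[OF afr ay(1) ags]) auto
    also have "\<dots> = cComp D (cComp D (zx W i) (gr!i)) (fr!k0)" using G1[of k0] k0 k by simp
    also have "\<dots> = cComp D (zx W i) (cComp D (gr!i) (fr!k0))"
      using i k0 k leng hf(1) k0_def by (intro A[OF afr agr aw(1), symmetric]) auto
    also have "\<dots> = cComp D (zx W (\<chi>!j)) (cr!(\<chi>!j))" using chij cr_nth[of i] i k0_def by simp
    finally show "cComp D (cs!j) (zx X j) = cComp D (zx W (\<chi>!j)) (cr!(\<chi>!j))" .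
  next
    fix j assume j: "j < zlen X" and c: "Suc j = zlen X \<or> \<chi>!j < \<chi>!Suc j"
    define k where "k = \<phi>!j"
    define i where "i = \<psi>!k"
    have k: "k < zlen Y" using ltf[OF j] k_def by simp
    have i: "i < zlen W" using ltg[OF k] i_def by simp
    have chij: "\<chi>!j = i" using chi_nth[OF j] k_def i_def by simp
    note hl = hat_last[OF sg, of k i, unfolded leng, OF k i_def[symmetric]]
    define K where "K = hat \<psi> (Suc i)"
    define k1 where "k1 = K - 1"
    have K: "k < K" "K \<le> zlen Y" "\<psi>!k1 = i" "K = zlen Y \<or> \<psi>!k1 < \<psi>!K" using hl K_def k1_def by auto
    have k1: "k \<le> k1" "k1 < zlen Y" "Suc k1 = K" using K k1_def by auto
    have cmax: "Suc j = zlen X \<or> \<phi>!j < \<phi>!Suc j"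
    proof (cases "Suc j = zlen X")
      case False
      hence l: "Suc j < zlen X" using j by simp
      have "\<phi>!j \<le> \<phi>!Suc j" using sf l lenf by (simp add: sorted_nth_mono)
      moreover have "\<phi>!j \<noteq> \<phi>!Suc j" using c False chi_nth j l by auto
      ultimately show ?thesis by simp
    qed simp
    have "cComp D (cs!j) (zy X j) = cComp D (gsg!k) (cComp D (fsg!j) (zy X j))"
      unfolding cs_nth[OF j] k_def[symmetric] using j k by (intro A[OF ax(2) afs ags, symmetric]) (auto simp: k_def)
    also have "\<dots> = E' k" unfolding E'_def using F2[OF j cmax] k_def by simp
    also have "\<dots> = E' k1"
    proof (cases "k = k1")
      case False
      hence lt: "k < k1" using k1 by simp
      have nh: "k' \<notin> set \<phi>" if "k < k'" "k' \<le> k1" for k'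
      proof
        assume "k' \<in> set \<phi>"
        then obtain j' where j': "j' < zlen X" "\<phi>!j' = k'" using lenf by (auto simp: in_set_conv_nth)
        have "j < j'" using sorted_less_idx[OF sf, of j j'] j' that lenf k_def j by simp
        hence sj: "Suc j < zlen X" "Suc j \<le> j'" using j' by auto
        hence "\<chi>!Suc j \<le> \<chi>!j'" using chi_mono j' by simp
        moreover have "\<chi>!j' = \<psi>!k'" using chi_nth j' by simp
        moreover have "\<psi>!k' \<le> \<psi>!k1" using sg that k1 leng by (simp add: sorted_nth_mono)
        ultimately show False using c chij K(3) sj by simp
      qed
      have "E' k = E k1"
      proof (rule CH[OF lt k1(2)])
        show "\<forall>k'. k \<le> k' \<and> k' < k1 \<longrightarrow> \<psi>!k' = \<psi>!Suc k'"
          by (rule sorted_const_step[OF sg]) (use K k1 leng i_def in auto)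
        show "\<forall>k'. k < k' \<and> k' < k1 \<longrightarrow> k' \<notin> set \<phi>" using nh by auto
      qed
      also have "\<dots> = E' k1" using nh lt k1 by (intro EE') auto
      finally show ?thesis .
    qed simp
    also have "\<dots> = cComp D (cComp D (gsg!k1) (zy Y k1)) (fr!K)"
      unfolding E'_def k1(3)[symmetric] using k1 by (intro A[OF afr ay(2) ags]) auto
    also have "\<dots> = cComp D (cComp D (zy W i) (gr!Suc i)) (fr!K)" using G2[of k1] K k1 by auto
    also have "\<dots> = cComp D (zy W i) (cComp D (gr!Suc i) (fr!K))"
      using i K leng K_def by (intro A[OF afr agr aw(2), symmetric]) auto
    also have "\<dots> = cComp D (zy W (\<chi>!j)) (cr!Suc (\<chi>!j))" using chij cr_nth[of "Suc i"] i K_def by simp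
    finally show "cComp D (cs!j) (zy X j) = cComp D (zy W (\<chi>!j)) (cr!Suc (\<chi>!j))" .
  next
    fix j assume jc: "Suc j < zlen X \<and> \<chi>!j = \<chi>!Suc j"
    hence j: "j < zlen X" "Suc j < zlen X" and c: "\<chi>!j = \<chi>!Suc j" by auto
    define a where "a = \<phi>!j"
    define b where "b = \<phi>!Suc j"
    have ab: "a \<le> b" using sf j lenf a_def b_def by (simp add: sorted_nth_mono)
    have a: "a < zlen Y" and b: "b < zlen Y" using ltf j a_def b_def by auto
    show "cComp D (cs!j) (zy X j) = cComp D (cs!Suc j) (zx X (Suc j))"
    proof (cases "a = b")
      case True
      have "cComp D (cs!j) (zy X j) = cComp D (gsg!a) (cComp D (fsg!j) (zy X j))"
        unfolding cs_nth[OF j(1)] a_def[symmetric] using j a by (intro A[OF ax(2) afs ags, symmetric]) (auto simp: a_def)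
      also have "\<dots> = cComp D (gsg!a) (cComp D (fsg!Suc j) (zx X (Suc j)))"
        using F3[OF j(2)] True a_def b_def by simp
      also have "\<dots> = cComp D (cs!Suc j) (zx X (Suc j))"
        unfolding cs_nth[OF j(2)] b_def[symmetric] True[symmetric] using j a True by (intro A[OF ax(1) afs ags]) (auto simp: a_def b_def)
      finally show ?thesis .
    next
      case False
      hence lt: "a < b" using ab by simp
      have "cComp D (cs!j) (zy X j) = cComp D (gsg!a) (cComp D (fsg!j) (zy X j))"
        unfolding cs_nth[OF j(1)] a_def[symmetric] using j a by (intro A[OF ax(2) afs ags, symmetric]) (auto simp: a_def)
      also have "\<dots> = E' a" unfolding E'_def using F2[OF j(1)] lt a_def b_def by simp
      also have "\<dots> = E b"
      proof (rule CH[OF lt b])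
        have ab': "\<psi>!a = \<psi>!b" using c chi_nth j a_def b_def by simp
        have bl: "b < length \<psi>" using b leng by simp
        show "\<forall>k'. a \<le> k' \<and> k' < b \<longrightarrow> \<psi>!k' = \<psi>!Suc k'"
          by (rule sorted_const_step[OF sg bl ab'])
        show "\<forall>k'. a < k' \<and> k' < b \<longrightarrow> k' \<notin> set \<phi>"
        proof (intro allI impI notI)
          fix k' assume k': "a < k' \<and> k' < b" "k' \<in> set \<phi>"
          then obtain j' where j': "j' < zlen X" "\<phi>!j' = k'" using lenf by (auto simp: in_set_conv_nth)
          have "j < j'" using sorted_less_idx[OF sf, of j j'] j' k' lenf a_def j by simp
          moreover have "j' < Suc j" using sorted_less_idx[OF sf, of j' "Suc j"] j' k' lenf b_def by simp
          ultimately show False by simp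
        qed
      qed
      also have "\<dots> = cComp D (gsg!b) (cComp D (fsg!Suc j) (zx X (Suc j)))"
        unfolding E_def using F1[OF j(2)] lt a_def b_def by simp
      also have "\<dots> = cComp D (cs!Suc j) (zx X (Suc j))"
        unfolding cs_nth[OF j(2)] b_def[symmetric] using j b by (intro A[OF ax(1) afs ags]) (auto simp: b_def)
      finally show ?thesis .
    qed
  next
    fix i assume i: "i < zlen W" and ni: "i \<notin> set \<chi>"
    show "cComp D (zx W i) (cr!i) = cComp D (zy W i) (cr!Suc i)"
    proof (cases "i \<in> set \<psi>")
      case False
      define k0 where "k0 = hat \<psi> i"
      have h: "hat \<psi> (Suc i) = k0" using hat_not_in[OF False] k0_def by simp
      have k0: "k0 \<le> zlen Y" using hat_le[of \<psi> i] leng k0_def by simp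
      have "cComp D (zx W i) (cr!i) = cComp D (cComp D (zx W i) (gr!i)) (fr!k0)"
        unfolding cr_nth[OF less_imp_le[OF i]] k0_def[symmetric] using i k0 by (intro A[OF afr agr aw(1)]) (auto simp: k0_def)
      also have "\<dots> = cComp D (cComp D (zy W i) (gr!Suc i)) (fr!k0)" using G4[OF i False] by simp
      also have "\<dots> = cComp D (zy W i) (cr!Suc i)"
        unfolding cr_nth[OF Suc_leI[OF i]] h using i k0 by (intro A[OF afr agr aw(2), symmetric]) (auto simp: h k0_def)
      finally show ?thesis .
    next
      case True
      then obtain k where k: "k < zlen Y" "\<psi>!k = i" using leng by (auto simp: in_set_conv_nth)
      note hf = hat_first[OF sg, of k i, unfolded leng, OF k]
      note hl = hat_last[OF sg, of k i, unfolded leng, OF k]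
      define k0 where "k0 = hat \<psi> i"
      define K where "K = hat \<psi> (Suc i)"
      define k1 where "k1 = K - 1"
      have k0: "k0 \<le> k" "\<psi>!k0 = i" "k0 = 0 \<or> \<psi>!(k0-1) < \<psi>!k0" using hf k0_def by auto
      have K: "k < K" "K \<le> zlen Y" "\<psi>!k1 = i" "K = zlen Y \<or> \<psi>!k1 < \<psi>!K" using hl K_def k1_def by auto
      have k1: "k \<le> k1" "k1 < zlen Y" "Suc k1 = K" using K k1_def by auto
      have nh: "k' \<notin> set \<phi>" if "k0 \<le> k'" "k' \<le> k1" for k'
      proof
        assume "k' \<in> set \<phi>"
        then obtain j' where j': "j' < zlen X" "\<phi>!j' = k'" using lenf by (auto simp: in_set_conv_nth)
        have "\<psi>!k' = i" using sorted_const[OF sg that] k1 leng k0 K by simp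
        hence "\<chi>!j' = i" using chi_nth j' by simp
        thus False using ni j' lenchi by (metis nth_mem)
      qed
      have "cComp D (zx W i) (cr!i) = cComp D (cComp D (zx W i) (gr!i)) (fr!k0)"
        unfolding cr_nth[OF less_imp_le[OF i]] k0_def[symmetric] using i k0 k by (intro A[OF afr agr aw(1)]) (auto simp: k0_def)
      also have "\<dots> = cComp D (cComp D (gsg!k0) (zx Y k0)) (fr!k0)" using G1[of k0] k0 k by simp
      also have "\<dots> = E k0" unfolding E_def using k0 k by (intro A[OF afr ay(1) ags, symmetric]) auto
      also have "\<dots> = E' k0" using nh k0 k1 k by (intro EE') auto
      also have "\<dots> = E' k1"
      proof (cases "k0 = k1")
        case False
        hence lt: "k0 < k1" using k0 k1 by simp
        have "E' k0 = E k1"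
        proof (rule CH[OF lt k1(2)])
          show "\<forall>k'. k0 \<le> k' \<and> k' < k1 \<longrightarrow> \<psi>!k' = \<psi>!Suc k'"
            by (rule sorted_const_step[OF sg]) (use K k1 k0 leng in auto)
          show "\<forall>k'. k0 < k' \<and> k' < k1 \<longrightarrow> k' \<notin> set \<phi>" using nh by auto
        qed
        also have "\<dots> = E' k1" using nh lt k1 by (intro EE') auto
        finally show ?thesis .
      qed simp
      also have "\<dots> = cComp D (cComp D (gsg!k1) (zy Y k1)) (fr!K)"
        unfolding E'_def k1(3)[symmetric] using k1 by (intro A[OF afr ay(2) ags]) auto
      also have "\<dots> = cComp D (cComp D (zy W i) (gr!Suc i)) (fr!K)" using G2[of k1] K k1 by auto
      also have "\<dots> = cComp D (zy W i) (cr!Suc i)"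
        unfolding cr_nth[OF Suc_leI[OF i]] K_def[symmetric] using i K by (intro A[OF afr agr aw(2), symmetric]) (auto simp: K_def)
      finally show ?thesis .
    qed
  qed
  show ?thesis using typC locC by simp
qed

lemma zig_mapE:
  assumes "zig_map D f"
  obtains X Y fs fr fsg where "f = ZM X Y fs fr fsg" "zm_typ D X Y fs fr fsg" "zm_loc D X Y fs fr fsg"
  using assms unfolding zig_map_iff by blast

lemma zig_mapI: "zm_typ D X Y fs fr fsg \<Longrightarrow> zm_loc D X Y fs fr fsg \<Longrightarrow> zig_map D (ZM X Y fs fr fsg)"
  unfolding zig_map_iff by blast

lemma zig_comp_ZM:
  "zig_comp D (ZM Y W \<psi> gr gsg) (ZM X Y' \<phi> fr fsg) =
   ZM X W (map (\<lambda>j. \<psi>!(\<phi>!j)) [0..<length \<phi>])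
     (map (\<lambda>i. cComp D (gr!i) (fr!(hat \<psi> i))) [0..<Suc (zlen W)])
     (map (\<lambda>j. cComp D (gsg!(\<phi>!j)) (fsg!j)) [0..<length \<phi>])"
  by (simp add: zig_comp_def)

lemma zig_comp_closed:
  assumes cat: "is_category D" and f: "zig_map D f" and g: "zig_map D g" and fg: "mcod f = mdom g"
  shows "zig_map D (zig_comp D g f)" "mdom (zig_comp D g f) = mdom f" "mcod (zig_comp D g f) = mcod g"
proof -
  obtain X Y \<phi> fr fsg where F: "f = ZM X Y \<phi> fr fsg" "zm_typ D X Y \<phi> fr fsg" "zm_loc D X Y \<phi> fr fsg"
    using f by (rule zig_mapE)
  obtain Y' W \<psi> gr gsg where G: "g = ZM Y' W \<psi> gr gsg" "zm_typ D Y' W \<psi> gr gsg" "zm_loc D Y' W \<psi> gr gsg"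
    using g by (rule zig_mapE)
  have Y: "Y' = Y" using fg F G by simp
  show "zig_map D (zig_comp D g f)"
    unfolding F(1) G(1) zig_comp_ZM using comp_typ_loc[OF cat F(2,3), of W \<psi> gr gsg] G(2,3) Y
    by (intro zig_mapI) auto
  show "mdom (zig_comp D g f) = mdom f" "mcod (zig_comp D g f) = mcod g"
    unfolding F(1) G(1) zig_comp_ZM by simp_all
qed

lemma zig_id_typ_loc:
  assumes cat: "is_category D" and X: "zig_obj D X"
  shows "zig_map D (zig_id D X)"
proof -
  let ?n = "zlen X"
  have ax: "\<And>j. j < ?n \<Longrightarrow> arr D (zx X j) (zr X j) (zs X j)"
    and ay: "\<And>j. j < ?n \<Longrightarrow> arr D (zy X j) (zr X (Suc j)) (zs X j)"
    and ob: "\<And>i. i \<le> ?n \<Longrightarrow> zr X i \<in> cObj D" and os: "\<And>j. j < ?n \<Longrightarrow> zs X j \<in> cObj D"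
    using zig_obj_arr[OF X] by auto
  have T: "zm_typ D X X [0..<?n] (map (\<lambda>i. cId D (zr X i)) [0..<Suc ?n]) (map (\<lambda>j. cId D (zs X j)) [0..<?n])"
    unfolding zm_typ_def delta_map_def
    using X cat_id[OF cat ob] cat_id[OF cat os] hat_upt
    by (simp del: upt_Suc add: nth_append less_Suc_eq_le)
  have L: "zm_loc D X X [0..<?n] (map (\<lambda>i. cId D (zr X i)) [0..<Suc ?n]) (map (\<lambda>j. cId D (zs X j)) [0..<?n])"
    unfolding zm_loc_def
  proof (intro conjI allI impI)
    fix j assume j: "j < ?n"
    show "cComp D (map (\<lambda>j. cId D (zs X j)) [0..<?n] ! j) (zx X j) =
          cComp D (zx X ([0..<?n] ! j)) (map (\<lambda>i. cId D (zr X i)) [0..<Suc ?n] ! ([0..<?n] ! j))"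
      using j cat_idl[OF cat ax[OF j]] cat_idr[OF cat ax[OF j]] by (simp del: upt_Suc)
    show "cComp D (map (\<lambda>j. cId D (zs X j)) [0..<?n] ! j) (zy X j) =
          cComp D (zy X ([0..<?n] ! j)) (map (\<lambda>i. cId D (zr X i)) [0..<Suc ?n] ! Suc ([0..<?n] ! j))"
      using j cat_idl[OF cat ay[OF j]] cat_idr[OF cat ay[OF j]] by (simp del: upt_Suc)
  next
    fix j assume a: "Suc j < ?n \<and> [0..<?n] ! j = [0..<?n] ! Suc j"
    have "[0..<?n] ! j = j" "[0..<?n] ! Suc j = Suc j" using a by auto
    hence False using a by simp
    thus "cComp D (map (\<lambda>j. cId D (zs X j)) [0..<?n] ! j) (zy X j) =
          cComp D (map (\<lambda>j. cId D (zs X j)) [0..<?n] ! Suc j) (zx X (Suc j))" by simp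
  next
    fix i assume "i < ?n" "i \<notin> set [0..<?n]"
    thus "cComp D (zx X i) (map (\<lambda>i. cId D (zr X i)) [0..<Suc ?n] ! i) =
          cComp D (zy X i) (map (\<lambda>i. cId D (zr X i)) [0..<Suc ?n] ! Suc i)" by simp
  qed
  show ?thesis unfolding zig_id_def by (rule zig_mapI[OF T L])
qed

lemma ZM_eqI:
  "X = X' \<Longrightarrow> Y = Y' \<Longrightarrow> fs = fs' \<Longrightarrow> length fr = length fr' \<Longrightarrow> length fsg = length fsg' \<Longrightarrow>
   (\<And>i. i < length fr \<Longrightarrow> fr!i = fr'!i) \<Longrightarrow> (\<And>j. j < length fsg \<Longrightarrow> fsg!j = fsg'!j) \<Longrightarrow>
   ZM X Y fs fr fsg = ZM X' Y' fs' fr' fsg'"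
  by (auto intro: nth_equalityI)

lemma zig_assoc:
  assumes cat: "is_category D" and f: "zig_map D f" and g: "zig_map D g" and h: "zig_map D h"
    and fg: "mcod f = mdom g" and gh: "mcod g = mdom h"
  shows "zig_comp D h (zig_comp D g f) = zig_comp D (zig_comp D h g) f"
proof -
  obtain X Y \<phi> fr fsg where F: "f = ZM X Y \<phi> fr fsg" "zm_typ D X Y \<phi> fr fsg"
    using f by (rule zig_mapE)
  obtain Y' W \<psi> gr gsg where G: "g = ZM Y' W \<psi> gr gsg" "zm_typ D Y' W \<psi> gr gsg"
    using g by (rule zig_mapE)
  obtain W' V \<omega> hr hsg where H: "h = ZM W' V \<omega> hr hsg" "zm_typ D W' V \<omega> hr hsg"
    using h by (rule zig_mapE)
  have Y: "Y' = Y" and W: "W' = W" using fg gh F G H by auto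
  note tf = F(2)[unfolded zm_typ_def] and tg = G(2)[unfolded zm_typ_def Y] and th = H(2)[unfolded zm_typ_def W]
  have df: "length \<phi> = zlen X" "sorted \<phi>" "\<And>j. j < zlen X \<Longrightarrow> \<phi>!j < zlen Y" using tf delta_mapD by blast+
  have dg: "length \<psi> = zlen Y" "sorted \<psi>" "\<And>j. j < zlen Y \<Longrightarrow> \<psi>!j < zlen W" using tg delta_mapD by blast+
  have dh: "length \<omega> = zlen W" "sorted \<omega>" "\<And>j. j < zlen W \<Longrightarrow> \<omega>!j < zlen V" using th delta_mapD by blast+
  have afr: "\<And>k. k \<le> zlen Y \<Longrightarrow> arr D (fr!k) (zr X (hat \<phi> k)) (zr Y k)"
   and afs: "\<And>j. j < zlen X \<Longrightarrow> arr D (fsg!j) (zs X j) (zs Y (\<phi>!j))"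
   and agr: "\<And>i. i \<le> zlen W \<Longrightarrow> arr D (gr!i) (zr Y (hat \<psi> i)) (zr W i)"
   and ags: "\<And>k. k < zlen Y \<Longrightarrow> arr D (gsg!k) (zs Y k) (zs W (\<psi>!k))"
   and ahr: "\<And>i. i \<le> zlen V \<Longrightarrow> arr D (hr!i) (zr W (hat \<omega> i)) (zr V i)"
   and ahs: "\<And>k. k < zlen W \<Longrightarrow> arr D (hsg!k) (zs W k) (zs V (\<omega>!k))"
    using tf tg th by auto
  have hw: "\<And>i. hat \<omega> i \<le> zlen W" using hat_le dh by metis
  have hp: "\<And>i. hat \<psi> i \<le> zlen Y" using hat_le dg by metis
  have hc: "\<And>i. hat (map (\<lambda>j. \<omega>!(\<psi>!j)) [0..<length \<psi>]) i = hat \<psi> (hat \<omega> i)"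
    by (rule hat_comp[OF dh(2)]) (use dg dh in auto)
  show ?thesis
    unfolding F(1) G(1) H(1) Y W zig_comp_ZM
  proof (rule ZM_eqI)
    show "map (\<lambda>j. \<omega> ! (map (\<lambda>j. \<psi> ! (\<phi> ! j)) [0..<length \<phi>] ! j)) [0..<length (map (\<lambda>j. \<psi> ! (\<phi> ! j)) [0..<length \<phi>])] =
          map (\<lambda>j. map (\<lambda>j. \<omega> ! (\<psi> ! j)) [0..<length \<psi>] ! (\<phi> ! j)) [0..<length \<phi>]"
      using df dg by (intro nth_equalityI) auto
  next
    fix i assume "i < length (map (\<lambda>i. cComp D (hr ! i) (map (\<lambda>i. cComp D (gr ! i) (fr ! hat \<psi> i)) [0..<Suc (zlen W)] ! hat \<omega> i)) [0..<Suc (zlen V)])"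
    hence i: "i \<le> zlen V" by simp
    have e1: "map (\<lambda>i. cComp D (gr ! i) (fr ! hat \<psi> i)) [0..<Suc (zlen W)] ! hat \<omega> i = cComp D (gr!hat \<omega> i) (fr!hat \<psi> (hat \<omega> i))"
      using hw[of i] by (simp del: upt_Suc add: nth_map_upt less_Suc_eq_le)
    have e2: "map (\<lambda>i. cComp D (hr ! i) (gr ! hat \<omega> i)) [0..<Suc (zlen V)] ! i = cComp D (hr ! i) (gr ! hat \<omega> i)"
      using i by (simp del: upt_Suc add: less_Suc_eq_le)
    show "map (\<lambda>i. cComp D (hr ! i) (map (\<lambda>i. cComp D (gr ! i) (fr ! hat \<psi> i)) [0..<Suc (zlen W)] ! hat \<omega> i)) [0..<Suc (zlen V)] ! i =
          map (\<lambda>i. cComp D (map (\<lambda>i. cComp D (hr ! i) (gr ! hat \<omega> i)) [0..<Suc (zlen V)] ! i) (fr ! hat (map (\<lambda>j. \<omega> ! (\<psi> ! j)) [0..<length \<psi>]) i)) [0..<Suc (zlen V)] ! i"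
      using i e1 e2 hc cat_assoc[OF cat afr[OF hp] agr[OF hw] ahr[OF i]]
      by (simp del: upt_Suc add: less_Suc_eq_le)
  next
    fix j assume "j < length (map (\<lambda>j. cComp D (hsg ! (map (\<lambda>j. \<psi> ! (\<phi> ! j)) [0..<length \<phi>] ! j)) (map (\<lambda>j. cComp D (gsg ! (\<phi> ! j)) (fsg ! j)) [0..<length \<phi>] ! j))
            [0..<length (map (\<lambda>j. \<psi> ! (\<phi> ! j)) [0..<length \<phi>])])"
    hence j: "j < zlen X" using df by simp
    show "map (\<lambda>j. cComp D (hsg ! (map (\<lambda>j. \<psi> ! (\<phi> ! j)) [0..<length \<phi>] ! j)) (map (\<lambda>j. cComp D (gsg ! (\<phi> ! j)) (fsg ! j)) [0..<length \<phi>] ! j))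
            [0..<length (map (\<lambda>j. \<psi> ! (\<phi> ! j)) [0..<length \<phi>])] ! j =
          map (\<lambda>j. cComp D (map (\<lambda>j. cComp D (hsg ! (\<psi> ! j)) (gsg ! j)) [0..<length \<psi>] ! (\<phi> ! j)) (fsg ! j)) [0..<length \<phi>] ! j"
      using j df dg cat_assoc[OF cat afs[OF j] ags[OF df(3)[OF j]] ahs[OF dg(3)[OF df(3)[OF j]]]] by simp
  qed (simp_all add: df)
qed

lemma zig_idl:
  assumes cat: "is_category D" and f: "zig_map D f"
  shows "zig_comp D (zig_id D (mcod f)) f = f"
proof -
  obtain X Y \<phi> fr fsg where F: "f = ZM X Y \<phi> fr fsg" "zm_typ D X Y \<phi> fr fsg"
    using f by (rule zig_mapE)
  note tf = F(2)[unfolded zm_typ_def]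
  have df: "length \<phi> = zlen X" "sorted \<phi>" "\<And>j. j < zlen X \<Longrightarrow> \<phi>!j < zlen Y" using tf delta_mapD by blast+
  have afr: "\<And>k. k \<le> zlen Y \<Longrightarrow> arr D (fr!k) (zr X (hat \<phi> k)) (zr Y k)"
   and afs: "\<And>j. j < zlen X \<Longrightarrow> arr D (fsg!j) (zs X j) (zs Y (\<phi>!j))" using tf by auto
  show ?thesis unfolding F(1) zig_id_def mcod_ZM zig_comp_ZM
  proof (rule ZM_eqI)
    show "map (\<lambda>j. [0..<zlen Y] ! (\<phi> ! j)) [0..<length \<phi>] = \<phi>"
      using df by (intro nth_equalityI) auto
    fix i assume "i < length (map (\<lambda>i. cComp D (map (\<lambda>i. cId D (zr Y i)) [0..<Suc (zlen Y)] ! i) (fr ! hat [0..<zlen Y] i)) [0..<Suc (zlen Y)])"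
    hence i: "i \<le> zlen Y" by simp
    show "map (\<lambda>i. cComp D (map (\<lambda>i. cId D (zr Y i)) [0..<Suc (zlen Y)] ! i) (fr ! hat [0..<zlen Y] i)) [0..<Suc (zlen Y)] ! i = fr ! i"
      using i cat_idl[OF cat afr[OF i]] hat_upt[OF i] by (simp del: upt_Suc add: less_Suc_eq_le)
  next
    fix j assume "j < length (map (\<lambda>j. cComp D (map (\<lambda>j. cId D (zs Y j)) [0..<zlen Y] ! (\<phi> ! j)) (fsg ! j)) [0..<length \<phi>])"
    hence j: "j < zlen X" using df by simp
    show "map (\<lambda>j. cComp D (map (\<lambda>j. cId D (zs Y j)) [0..<zlen Y] ! (\<phi> ! j)) (fsg ! j)) [0..<length \<phi>] ! j = fsg ! j"
      using j df cat_idl[OF cat afs[OF j]] by simp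
  qed (use tf df in simp_all)
qed

lemma zig_idr:
  assumes cat: "is_category D" and f: "zig_map D f"
  shows "zig_comp D f (zig_id D (mdom f)) = f"
proof -
  obtain X Y \<phi> fr fsg where F: "f = ZM X Y \<phi> fr fsg" "zm_typ D X Y \<phi> fr fsg"
    using f by (rule zig_mapE)
  note tf = F(2)[unfolded zm_typ_def]
  have df: "length \<phi> = zlen X" "sorted \<phi>" "\<And>j. j < zlen X \<Longrightarrow> \<phi>!j < zlen Y" using tf delta_mapD by blast+
  have afr: "\<And>k. k \<le> zlen Y \<Longrightarrow> arr D (fr!k) (zr X (hat \<phi> k)) (zr Y k)"
   and afs: "\<And>j. j < zlen X \<Longrightarrow> arr D (fsg!j) (zs X j) (zs Y (\<phi>!j))" using tf by auto
  have hl: "\<And>i. hat \<phi> i \<le> zlen X" using hat_le df by metis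
  show ?thesis unfolding F(1) zig_id_def mdom_ZM zig_comp_ZM
  proof (rule ZM_eqI)
    show "map (\<lambda>j. \<phi> ! ([0..<zlen X] ! j)) [0..<length [0..<zlen X]] = \<phi>"
      using df by (intro nth_equalityI) auto
    fix i assume "i < length (map (\<lambda>i. cComp D (fr ! i) (map (\<lambda>i. cId D (zr X i)) [0..<Suc (zlen X)] ! hat \<phi> i)) [0..<Suc (zlen Y)])"
    hence i: "i \<le> zlen Y" by simp
    show "map (\<lambda>i. cComp D (fr ! i) (map (\<lambda>i. cId D (zr X i)) [0..<Suc (zlen X)] ! hat \<phi> i)) [0..<Suc (zlen Y)] ! i = fr ! i"
      using i cat_idr[OF cat afr[OF i]] hl[of i] by (simp del: upt_Suc add: less_Suc_eq_le)
  next
    fix j assume "j < length (map (\<lambda>j. cComp D (fsg ! ([0..<zlen X] ! j)) (map (\<lambda>j. cId D (zs X j)) [0..<zlen X] ! j)) [0..<length [0..<zlen X]])"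
    hence j: "j < zlen X" using df by simp
    show "map (\<lambda>j. cComp D (fsg ! ([0..<zlen X] ! j)) (map (\<lambda>j. cId D (zs X j)) [0..<zlen X] ! j)) [0..<length [0..<zlen X]] ! j = fsg ! j"
      using j df cat_idr[OF cat afs[OF j]] by simp
  qed (use tf df in simp_all)
qed

lemma Z_category:
  assumes cat: "is_category D"
  shows "is_category (Z D)"
proof -
  have tp: "zig_obj D (mdom f) \<and> zig_obj D (mcod f)" if "zig_map D f" for f
    using that by (auto elim!: zig_mapE simp: zm_typ_def)
  have idd: "mdom (zig_id D X) = X" "mcod (zig_id D X) = X" for X by (simp_all add: zig_id_def)
  show ?thesis unfolding is_category_def Z_simps
    using tp zig_id_typ_loc[OF cat] idd zig_comp_closed[OF cat] zig_assoc[OF cat] zig_comp_closed[OF cat]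
      zig_idl[OF cat] zig_idr[OF cat]
    by (simp add: zig_comp_closed[OF cat])
qed

lemma lift_category: "is_category C \<Longrightarrow> is_category (lift C)"
  unfolding is_category_def lift_def by (auto simp: image_iff)

lemma Zn_0[simp]: "Zn C 0 = lift C" by (simp add: Zn_def)
lemma Zn_Suc[simp]: "Zn C (Suc n) = Z (Zn C n)" by (simp add: Zn_def)

lemma Zn_category: "is_category C \<Longrightarrow> is_category (Zn C n)"
  by (induction n) (auto intro: Z_category lift_category)

definition monic :: "('o, 'm) cat \<Rightarrow> 'm \<Rightarrow> bool" where
  "monic D e \<longleftrightarrow> e \<in> cArr D \<and> (\<forall>a b. a \<in> cArr D \<longrightarrow> b \<in> cArr D \<longrightarrow> cCod D a = cDom D e \<longrightarrow>
     cCod D b = cDom D e \<longrightarrow> cDom D a = cDom D b \<longrightarrow> cComp D e a = cComp D e b \<longrightarrow> a = b)"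

lemma iso_arr: "iso D f \<Longrightarrow> f \<in> cArr D" unfolding iso_def by simp

lemma iso_id: "is_category D \<Longrightarrow> a \<in> cObj D \<Longrightarrow> iso D (cId D a)"
  unfolding iso_def using cat_id[of D a] cat_idl[of D "cId D a" a a] unfolding arr_def by auto

lemma iso_invE:
  assumes "iso D f"
  obtains g where "arr D g (cCod D f) (cDom D f)" "cComp D g f = cId D (cDom D f)" "cComp D f g = cId D (cCod D f)"
  using assms unfolding iso_def arr_def by blast

lemma iso_inv_iso:
  assumes cat: "is_category D" and "arr D g (cCod D f) (cDom D f)" "cComp D g f = cId D (cDom D f)" "cComp D f g = cId D (cCod D f)" "iso D f"
  shows "iso D g"
  using assms unfolding iso_def arr_def by auto

lemma iso_comp:
  assumes cat: "is_category D" and f: "iso D f" and g: "iso D g" and fg: "cDom D g = cCod D f"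
  shows "iso D (cComp D g f)"
proof -
  obtain f' where f': "arr D f' (cCod D f) (cDom D f)" "cComp D f' f = cId D (cDom D f)" "cComp D f f' = cId D (cCod D f)"
    using f by (rule iso_invE)
  obtain g' where g': "arr D g' (cCod D g) (cDom D g)" "cComp D g' g = cId D (cDom D g)" "cComp D g g' = cId D (cCod D g)"
    using g by (rule iso_invE)
  have af: "arr D f (cDom D f) (cCod D f)" and ag: "arr D g (cCod D f) (cCod D g)"
    using iso_arr[OF f] iso_arr[OF g] fg by (auto simp: arr_def)
  have agf: "arr D (cComp D g f) (cDom D f) (cCod D g)" by (rule cat_comp[OF cat af ag])
  have G': "arr D g' (cCod D g) (cCod D f)" using g'(1) fg by simp
  have af'g': "arr D (cComp D f' g') (cCod D g) (cDom D f)" using cat_comp[OF cat G' f'(1)] .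
  have "cComp D (cComp D f' g') (cComp D g f) = cComp D f' (cComp D g' (cComp D g f))"
    using cat_assoc[OF cat agf G' f'(1)] by simp
  also have "cComp D g' (cComp D g f) = cComp D (cComp D g' g) f" using cat_assoc[OF cat af ag G'] .
  also have "\<dots> = f" using g'(2) fg cat_idl[OF cat af] by simp
  also have "cComp D f' f = cId D (cDom D f)" by (rule f'(2))
  finally have 1: "cComp D (cComp D f' g') (cComp D g f) = cId D (cDom D f)" .
  have "cComp D (cComp D g f) (cComp D f' g') = cComp D g (cComp D f (cComp D f' g'))"
    using cat_assoc[OF cat af'g' af ag] by simp
  also have "cComp D f (cComp D f' g') = cComp D (cComp D f f') g'" using cat_assoc[OF cat G' f'(1) af] .
  also have "\<dots> = g'" using f'(3) cat_idl[OF cat G'] by simp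
  also have "cComp D g g' = cId D (cCod D g)" by (rule g'(3))
  finally have 2: "cComp D (cComp D g f) (cComp D f' g') = cId D (cCod D g)" .
  show ?thesis unfolding iso_def using agf af'g' 1 2 unfolding arr_def by auto
qed

lemma iso_monic:
  assumes cat: "is_category D" and f: "iso D f"
  shows "monic D f"
proof -
  obtain f' where f': "arr D f' (cCod D f) (cDom D f)" "cComp D f' f = cId D (cDom D f)"
    using f by (rule iso_invE)
  have af: "arr D f (cDom D f) (cCod D f)" using iso_arr[OF f] by (simp add: arr_def)
  show ?thesis unfolding monic_def
  proof (intro conjI allI impI)
    show "f \<in> cArr D" using iso_arr[OF f] .
    fix a b assume a: "a \<in> cArr D" and b: "b \<in> cArr D" and ca: "cCod D a = cDom D f" and cb: "cCod D b = cDom D f"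
      and ab: "cDom D a = cDom D b" and e: "cComp D f a = cComp D f b"
    have aa: "arr D a (cDom D a) (cDom D f)" and bb: "arr D b (cDom D a) (cDom D f)" using a b ca cb ab by (auto simp: arr_def)
    have "a = cComp D (cComp D f' f) a" using f'(2) cat_idl[OF cat aa] by simp
    also have "\<dots> = cComp D f' (cComp D f a)" using cat_assoc[OF cat aa af f'(1)] by simp
    also have "\<dots> = cComp D f' (cComp D f b)" using e by simp
    also have "\<dots> = cComp D (cComp D f' f) b" using cat_assoc[OF cat bb af f'(1)] by simp
    also have "\<dots> = b" using f'(2) cat_idl[OF cat bb] by simp
    finally show "a = b" .
  qed
qed

lemma strict_in_set:
  assumes "sorted_wrt (<) \<phi>" "k \<in> set \<phi>"
  obtains j where "j < length \<phi>" "\<phi>!j = k" "hat \<phi> k = j" "hat \<phi> (Suc k) = Suc j"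
  using assms hat_strict_at by (metis in_set_conv_nth)

lemma simple_slices_iso:
  assumes cat: "is_category D" and sd: "simple_deg D f"
  shows "\<forall>i \<le> zlen (mcod f). iso D (mreg f i)" "\<forall>j < zlen (mdom f). iso D (msing f j)"
proof -
  have fZ: "zig_map D f" and cc: "pi_cocartesian D f" and dm: "delta_mono (msing_map f)"
    using sd unfolding simple_deg_def by auto
  obtain X Y \<phi> fr fsg where F: "f = ZM X Y \<phi> fr fsg" "zm_typ D X Y \<phi> fr fsg" "zm_loc D X Y \<phi> fr fsg"
    using fZ by (rule zig_mapE)
  have st: "sorted_wrt (<) \<phi>" using dm F(1) by (simp add: delta_mono_def)
  note tf = F(2)[unfolded zm_typ_def]
  have oX: "zig_obj D X" and oY: "zig_obj D Y" using tf by auto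
  define n where "n = zlen X"
  define m where "m = zlen Y"
  have df: "length \<phi> = n" "sorted \<phi>" "\<And>j. j < n \<Longrightarrow> \<phi>!j < m" using tf delta_mapD n_def m_def by blast+
  have afr: "\<And>k. k \<le> m \<Longrightarrow> arr D (fr!k) (zr X (hat \<phi> k)) (zr Y k)"
   and afs: "\<And>j. j < n \<Longrightarrow> arr D (fsg!j) (zs X j) (zs Y (\<phi>!j))"
   and lfr: "length fr = Suc m" and lfs: "length fsg = n" using tf n_def m_def by auto
  have F1: "\<And>j. j < n \<Longrightarrow> cComp D (fsg!j) (zx X j) = cComp D (zx Y (\<phi>!j)) (fr!(\<phi>!j))"
    using F(3) st df(1) unfolding zm_loc_def n_def[symmetric]
    by (metis Suc_pred not_gr_zero diff_less le_less_trans less_numeral_extra(1) not_le sorted_wrt_nth_less)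
  have F2: "\<And>j. j < n \<Longrightarrow> cComp D (fsg!j) (zy X j) = cComp D (zy Y (\<phi>!j)) (fr!Suc (\<phi>!j))"
  proof -
    fix j assume j: "j < n"
    have "Suc j = n \<or> \<phi>!j < \<phi>!Suc j" using st df(1) j
      by (metis Suc_lessI lessI sorted_wrt_nth_less)
    thus "?thesis j" using F(3) j unfolding zm_loc_def n_def[symmetric] by auto
  qed
  have F4: "\<And>i. i < m \<Longrightarrow> i \<notin> set \<phi> \<Longrightarrow> cComp D (zx Y i) (fr!i) = cComp D (zy Y i) (fr!Suc i)"
    using F(3) unfolding zm_loc_def m_def by auto
  have ax: "\<And>j. j < n \<Longrightarrow> arr D (zx X j) (zr X j) (zs X j)"
   and ay: "\<And>j. j < n \<Longrightarrow> arr D (zy X j) (zr X (Suc j)) (zs X j)"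
   and obr: "\<And>i. i \<le> n \<Longrightarrow> zr X i \<in> cObj D" and obs: "\<And>j. j < n \<Longrightarrow> zs X j \<in> cObj D"
    using zig_obj_arr[OF oX] n_def by auto
  have axY: "\<And>j. j < m \<Longrightarrow> arr D (zx Y j) (zr Y j) (zs Y j)"
   and ayY: "\<And>j. j < m \<Longrightarrow> arr D (zy Y j) (zr Y (Suc j)) (zs Y j)"
   and obrY: "\<And>i. i \<le> m \<Longrightarrow> zr Y i \<in> cObj D" and obsY: "\<And>j. j < m \<Longrightarrow> zs Y j \<in> cObj D"
    using zig_obj_arr[OF oY] m_def by auto
  have hle: "\<And>k. hat \<phi> k \<le> n" using hat_le df(1) by metis
  have hni: "\<And>k. k \<notin> set \<phi> \<Longrightarrow> hat \<phi> (Suc k) = hat \<phi> k" by (rule hat_not_in)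
  have hin: "\<And>j. j < n \<Longrightarrow> hat \<phi> (\<phi>!j) = j \<and> hat \<phi> (Suc (\<phi>!j)) = Suc j" using hat_strict_at st df(1) by auto
  define RS where "RS i = zr X (hat \<phi> i)" for i
  define SS where "SS k = (if k \<in> set \<phi> then zs X (hat \<phi> k) else zr X (hat \<phi> k))" for k
  define XS where "XS k = (if k \<in> set \<phi> then zx X (hat \<phi> k) else cId D (zr X (hat \<phi> k)))" for k
  define YS where "YS k = (if k \<in> set \<phi> then zy X (hat \<phi> k) else cId D (zr X (hat \<phi> k)))" for k
  define Y' where "Y' = ZZ (map RS [0..<Suc m]) (map SS [0..<m]) (map XS [0..<m]) (map YS [0..<m])"
  have Y'_simps: "zlen Y' = m" "\<And>i. i \<le> m \<Longrightarrow> zr Y' i = RS i" "\<And>k. k < m \<Longrightarrow> zs Y' k = SS k"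
    "\<And>k. k < m \<Longrightarrow> zx Y' k = XS k" "\<And>k. k < m \<Longrightarrow> zy Y' k = YS k"
    unfolding Y'_def by (simp_all del: upt_Suc add: less_Suc_eq_le[symmetric])
  have aXS: "arr D (XS k) (RS k) (SS k)" and aYS: "arr D (YS k) (RS (Suc k)) (SS k)" if k: "k < m" for k
  proof -
    have "arr D (XS k) (RS k) (SS k) \<and> arr D (YS k) (RS (Suc k)) (SS k)"
    proof (cases "k \<in> set \<phi>")
      case True
      then obtain j where j: "j < n" "\<phi>!j = k" "hat \<phi> k = j" "hat \<phi> (Suc k) = Suc j"
        using strict_in_set[OF st] df(1) by metis
      thus ?thesis using ax ay True unfolding XS_def YS_def RS_def SS_def by simp
    next
      case False
      thus ?thesis using cat_id[OF cat obr[OF hle]] hni unfolding XS_def YS_def RS_def SS_def by simp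
    qed
    thus "arr D (XS k) (RS k) (SS k)" "arr D (YS k) (RS (Suc k)) (SS k)" by auto
  qed
  have obRS: "\<And>i. RS i \<in> cObj D" using obr hle unfolding RS_def by blast
  have obSS: "\<And>k. k < m \<Longrightarrow> SS k \<in> cObj D" using aXS cat_arr_obj[OF cat] by blast
  have oY': "zig_obj D Y'" unfolding zig_obj_def Y'_def
    using obRS obSS aXS aYS unfolding arr_def
    by (auto simp del: upt_Suc simp: nth_append)
  define h where "h = ZM X Y' \<phi> (map (\<lambda>i. cId D (RS i)) [0..<Suc m]) (map (\<lambda>j. cId D (zs X j)) [0..<n])"
  have SSphi: "\<And>j. j < n \<Longrightarrow> SS (\<phi>!j) = zs X j" using hin df unfolding SS_def by auto
  have RSphi: "\<And>j. j < n \<Longrightarrow> RS (\<phi>!j) = zr X j \<and> RS (Suc (\<phi>!j)) = zr X (Suc j)" using hin unfolding RS_def by auto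
  have XSphi: "\<And>j. j < n \<Longrightarrow> XS (\<phi>!j) = zx X j \<and> YS (\<phi>!j) = zy X j" using hin df unfolding XS_def YS_def by auto
  have hT: "zm_typ D X Y' \<phi> (map (\<lambda>i. cId D (RS i)) [0..<Suc m]) (map (\<lambda>j. cId D (zs X j)) [0..<n])"
    unfolding zm_typ_def
  proof (intro conjI allI impI)
    show "zig_obj D X" "zig_obj D Y'" by (fact oX, fact oY')
    show "delta_map \<phi> (zlen X) (zlen Y')" using tf Y'_simps(1) m_def by simp
    show "length (map (\<lambda>i. cId D (RS i)) [0..<Suc m]) = Suc (zlen Y')" using Y'_simps by simp
    show "length (map (\<lambda>j. cId D (zs X j)) [0..<n]) = zlen X" using n_def by simp
    fix i assume "i \<le> zlen Y'"
    hence i: "i \<le> m" using Y'_simps by simp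
    thus "arr D (map (\<lambda>i. cId D (RS i)) [0..<Suc m] ! i) (zr X (hat \<phi> i)) (zr Y' i)"
      using cat_id[OF cat obRS] Y'_simps(2) RS_def by (simp del: upt_Suc add: less_Suc_eq_le[symmetric])
  next
    fix j assume "j < zlen X"
    hence j: "j < n" using n_def by simp
    thus "arr D (map (\<lambda>j. cId D (zs X j)) [0..<n] ! j) (zs X j) (zs Y' (\<phi>!j))"
      using cat_id[OF cat obs[OF j]] Y'_simps(3) SSphi df by simp
  qed
  have hL: "zm_loc D X Y' \<phi> (map (\<lambda>i. cId D (RS i)) [0..<Suc m]) (map (\<lambda>j. cId D (zs X j)) [0..<n])"
    unfolding zm_loc_def n_def[symmetric] Y'_simps(1)
  proof (intro conjI allI impI)
    fix j assume j: "j < n"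
    have l: "\<phi>!j < m" "\<phi>!j \<le> m" "Suc (\<phi>!j) \<le> m" using df(3)[OF j] by auto
    show "cComp D (map (\<lambda>j. cId D (zs X j)) [0..<n] ! j) (zx X j) =
          cComp D (zx Y' (\<phi>!j)) (map (\<lambda>i. cId D (RS i)) [0..<Suc m] ! (\<phi>!j))"
      using j l Y'_simps XSphi RSphi cat_idl[OF cat ax[OF j]] cat_idr[OF cat ax[OF j]]
      by (simp del: upt_Suc add: less_Suc_eq_le[symmetric])
    show "cComp D (map (\<lambda>j. cId D (zs X j)) [0..<n] ! j) (zy X j) =
          cComp D (zy Y' (\<phi>!j)) (map (\<lambda>i. cId D (RS i)) [0..<Suc m] ! Suc (\<phi>!j))"
      using j l Y'_simps XSphi RSphi cat_idl[OF cat ay[OF j]] cat_idr[OF cat ay[OF j]]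
      by (simp del: upt_Suc add: less_Suc_eq_le[symmetric])
  next
    fix j assume "Suc j < n \<and> \<phi>!j = \<phi>!Suc j"
    hence False using st df(1) by (metis lessI sorted_wrt_nth_less less_irrefl)
    thus "cComp D (map (\<lambda>j. cId D (zs X j)) [0..<n] ! j) (zy X j) =
          cComp D (map (\<lambda>j. cId D (zs X j)) [0..<n] ! Suc j) (zx X (Suc j))" by simp
  next
    fix k assume k: "k < m" "k \<notin> set \<phi>"
    have "RS (Suc k) = RS k" using hni[OF k(2)] RS_def by simp
    moreover have "XS k = cId D (RS k)" "YS k = cId D (RS k)" using k unfolding XS_def YS_def RS_def by auto
    ultimately show "cComp D (zx Y' k) (map (\<lambda>i. cId D (RS i)) [0..<Suc m] ! k) =
          cComp D (zy Y' k) (map (\<lambda>i. cId D (RS i)) [0..<Suc m] ! Suc k)"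
      using k Y'_simps by (simp del: upt_Suc add: less_Suc_eq_le[symmetric])
  qed
  have hZ: "zig_map D h" unfolding h_def by (rule zig_mapI[OF hT hL])
  define WS where "WS k = (if k \<in> set \<phi> then fsg!(hat \<phi> k) else cComp D (zx Y k) (fr!k))" for k
  define w where "w = ZM Y' Y [0..<m] fr (map WS [0..<m])"
  have aWS: "arr D (WS k) (SS k) (zs Y k)" if k: "k < m" for k
  proof (cases "k \<in> set \<phi>")
    case True
    then obtain j where j: "j < n" "\<phi>!j = k" "hat \<phi> k = j" "hat \<phi> (Suc k) = Suc j"
      using strict_in_set[OF st] df(1) by metis
    thus ?thesis using afs[OF j(1)] True unfolding WS_def SS_def by simp
  next
    case False
    thus ?thesis using cat_comp[OF cat afr axY[OF k]] k unfolding WS_def SS_def by simp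
  qed
  have wT: "zm_typ D Y' Y [0..<m] fr (map WS [0..<m])"
    unfolding zm_typ_def
  proof (intro conjI allI impI)
    show "zig_obj D Y'" "zig_obj D Y" by (fact oY', fact oY)
    show "delta_map [0..<m] (zlen Y') (zlen Y)" using Y'_simps m_def by (simp add: delta_map_def)
    show "length fr = Suc (zlen Y)" "length (map WS [0..<m]) = zlen Y'" using lfr m_def Y'_simps by simp_all
    fix i assume "i \<le> zlen Y"
    hence i: "i \<le> m" using m_def by simp
    thus "arr D (fr!i) (zr Y' (hat [0..<m] i)) (zr Y i)" using afr[OF i] hat_upt Y'_simps RS_def by simp
  next
    fix k assume "k < zlen Y'"
    hence k: "k < m" using Y'_simps by simp
    thus "arr D (map WS [0..<m] ! k) (zs Y' k) (zs Y ([0..<m] ! k))" using aWS Y'_simps by simp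
  qed
  have wL: "zm_loc D Y' Y [0..<m] fr (map WS [0..<m])"
    unfolding zm_loc_def Y'_simps(1)
  proof (intro conjI allI impI)
    fix k assume k: "k < m"
    have "cComp D (WS k) (XS k) = cComp D (zx Y k) (fr!k) \<and> cComp D (WS k) (YS k) = cComp D (zy Y k) (fr!Suc k)"
    proof (cases "k \<in> set \<phi>")
      case True
      then obtain j where j: "j < n" "\<phi>!j = k" "hat \<phi> k = j" "hat \<phi> (Suc k) = Suc j"
        using strict_in_set[OF st] df(1) by metis
      thus ?thesis using F1[OF j(1)] F2[OF j(1)] True unfolding WS_def XS_def YS_def by simp
    next
      case False
      have a: "arr D (cComp D (zx Y k) (fr!k)) (zr X (hat \<phi> k)) (zs Y k)"
        using cat_comp[OF cat afr axY[OF k]] k by simp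
      show ?thesis using False cat_idr[OF cat a] F4[OF k False] unfolding WS_def XS_def YS_def by simp
    qed
    thus "cComp D (map WS [0..<m] ! k) (zx Y' k) = cComp D (zx Y ([0..<m] ! k)) (fr ! ([0..<m] ! k))"
      "cComp D (map WS [0..<m] ! k) (zy Y' k) = cComp D (zy Y ([0..<m] ! k)) (fr ! Suc ([0..<m] ! k))"
      using k Y'_simps by simp_all
  next
    fix k assume a: "Suc k < m \<and> [0..<m] ! k = [0..<m] ! Suc k"
    have "[0..<m] ! k = k" "[0..<m] ! Suc k = Suc k" using a by auto
    hence False using a by simp
    thus "cComp D (map WS [0..<m] ! k) (zy Y' k) = cComp D (map WS [0..<m] ! Suc k) (zx Y' (Suc k))" by simp
  next
    fix i assume "i < zlen Y" "i \<notin> set [0..<m]"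
    hence False using m_def by simp
    thus "cComp D (zx Y i) (fr ! i) = cComp D (zy Y i) (fr ! Suc i)" by simp
  qed
  have wZ: "zig_map D w" unfolding w_def by (rule zig_mapI[OF wT wL])
  have wh: "zig_comp D w h = f"
    unfolding w_def h_def F(1) zig_comp_ZM
  proof (rule ZM_eqI)
    show "map (\<lambda>j. [0..<m] ! (\<phi> ! j)) [0..<length \<phi>] = \<phi>" using df by (intro nth_equalityI) auto
    fix i assume "i < length (map (\<lambda>i. cComp D (fr ! i) (map (\<lambda>i. cId D (RS i)) [0..<Suc m] ! hat [0..<m] i)) [0..<Suc (zlen Y)])"
    hence i: "i \<le> m" using m_def by simp
    show "map (\<lambda>i. cComp D (fr ! i) (map (\<lambda>i. cId D (RS i)) [0..<Suc m] ! hat [0..<m] i)) [0..<Suc (zlen Y)] ! i = fr ! i"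
      using i hat_upt[OF i] cat_idr[OF cat afr[OF i]] m_def RS_def by (simp del: upt_Suc add: less_Suc_eq_le[symmetric])
  next
    fix j assume "j < length (map (\<lambda>j. cComp D (map WS [0..<m] ! (\<phi> ! j)) (map (\<lambda>j. cId D (zs X j)) [0..<n] ! j)) [0..<length \<phi>])"
    hence j: "j < n" using df by simp
    have "WS (\<phi>!j) = fsg!j" using hin[OF j] df j unfolding WS_def by auto
    thus "map (\<lambda>j. cComp D (map WS [0..<m] ! (\<phi> ! j)) (map (\<lambda>j. cId D (zs X j)) [0..<n] ! j)) [0..<length \<phi>] ! j = fsg ! j"
      using j df cat_idr[OF cat afs[OF j]] by simp
  qed (use df lfr lfs m_def in simp_all)
  have cc': "\<And>h' u. zig_map D h' \<Longrightarrow> mdom h' = X \<Longrightarrow> delta_map u m (zlen (mcod h')) \<Longrightarrow>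
      map (\<lambda>j. u!(\<phi>!j)) [0..<n] = msing_map h' \<Longrightarrow>
      (\<exists>!v. zig_map D v \<and> mdom v = Y \<and> mcod v = mcod h' \<and> zig_comp D v f = h' \<and> msing_map v = u)"
    using cc unfolding pi_cocartesian_def F(1) n_def m_def by simp
  have u1: "delta_map [0..<m] m (zlen (mcod h))" using Y'_simps unfolding h_def by (simp add: delta_map_def)
  have u2: "map (\<lambda>j. [0..<m]!(\<phi>!j)) [0..<n] = msing_map h" unfolding h_def using df by (intro nth_equalityI) auto
  obtain v where v: "zig_map D v" "mdom v = Y" "mcod v = Y'" "zig_comp D v f = h" "msing_map v = [0..<m]"
    using cc'[OF hZ _ u1 u2] unfolding h_def by auto
  obtain Y1 Y2 vs vr vsg where V: "v = ZM Y1 Y2 vs vr vsg" "zm_typ D Y1 Y2 vs vr vsg" using v(1) by (rule zig_mapE)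
  have V': "Y1 = Y" "Y2 = Y'" "vs = [0..<m]" using V v by auto
  note tv = V(2)[unfolded zm_typ_def V']
  have avr: "\<And>i. i \<le> m \<Longrightarrow> arr D (vr!i) (zr Y i) (RS i)" using tv Y'_simps hat_upt by auto
  have avs: "\<And>k. k < m \<Longrightarrow> arr D (vsg!k) (zs Y k) (SS k)" using tv Y'_simps m_def by auto
  have vf_r: "cComp D (vr!i) (fr!i) = cId D (RS i)" if i: "i \<le> m" for i
    using arg_cong[OF v(4), of "\<lambda>x. mreg x i"] i hat_upt[OF i] Y'_simps
    unfolding V(1) V' F(1) zig_comp_ZM h_def by (simp del: upt_Suc add: less_Suc_eq_le[symmetric])
  have vf_s: "cComp D (vsg!(\<phi>!j)) (fsg!j) = cId D (zs X j)" if j: "j < n" for j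
    using arg_cong[OF v(4), of "\<lambda>x. msing x j"] j df
    unfolding V(1) V' F(1) zig_comp_ZM h_def by simp
  have wv: "zig_map D (zig_comp D w v)" "mdom (zig_comp D w v) = Y" "mcod (zig_comp D w v) = Y"
    using zig_comp_closed[OF cat v(1) wZ] v unfolding w_def by auto
  have wvf: "zig_comp D (zig_comp D w v) f = f"
    using zig_assoc[OF cat fZ v(1) wZ] v wh F(1) unfolding w_def by simp
  have wvs: "msing_map (zig_comp D w v) = [0..<m]"
    unfolding V(1) V' w_def zig_comp_ZM by (intro nth_equalityI) auto
  have idY: "zig_map D (zig_id D Y)" "mdom (zig_id D Y) = Y" "mcod (zig_id D Y) = Y"
    "zig_comp D (zig_id D Y) f = f" "msing_map (zig_id D Y) = [0..<m]"
    using zig_id_typ_loc[OF cat oY] zig_idl[OF cat fZ] F(1) m_def by (auto simp: zig_id_def)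
  have u1': "delta_map [0..<m] m (zlen (mcod f))" using F(1) m_def by (simp add: delta_map_def)
  have u2': "map (\<lambda>j. [0..<m]!(\<phi>!j)) [0..<n] = msing_map f" unfolding F(1) using df by (intro nth_equalityI) auto
  have wv_id: "zig_comp D w v = zig_id D Y"
    using cc'[OF fZ _ u1' u2'] wv wvf wvs idY F(1) by auto
  have wv_r: "cComp D (fr!i) (vr!i) = cId D (zr Y i)" if i: "i \<le> m" for i
    using arg_cong[OF wv_id, of "\<lambda>x. mreg x i"] i hat_upt[OF i]
    unfolding V(1) V' w_def zig_comp_ZM zig_id_def m_def by (simp del: upt_Suc add: less_Suc_eq_le[symmetric])
  have wv_s: "cComp D (WS k) (vsg!k) = cId D (zs Y k)" if k: "k < m" for k
    using arg_cong[OF wv_id, of "\<lambda>x. msing x k"] k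
    unfolding V(1) V' w_def zig_comp_ZM zig_id_def m_def by simp
  show "\<forall>i \<le> zlen (mcod f). iso D (mreg f i)"
  proof (intro allI impI)
    fix i assume "i \<le> zlen (mcod f)"
    hence i: "i \<le> m" using F(1) m_def by simp
    show "iso D (mreg f i)" unfolding F(1) mreg_ZM iso_def
      using afr[OF i] avr[OF i] vf_r[OF i] wv_r[OF i] RS_def unfolding arr_def by auto
  qed
  show "\<forall>j < zlen (mdom f). iso D (msing f j)"
  proof (intro allI impI)
    fix j assume "j < zlen (mdom f)"
    hence j: "j < n" using F(1) n_def by simp
    have e: "WS (\<phi>!j) = fsg!j" using hin[OF j] df j unfolding WS_def by auto
    show "iso D (msing f j)" unfolding F(1) msing_ZM iso_def
      using afs[OF j] avs[OF df(3)[OF j]] vf_s[OF j] wv_s[OF df(3)[OF j]] SSphi[OF j] e unfolding arr_def by auto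
  qed
qed

lemma zig_map_acc:
  assumes "zig_map D f"
  shows "zig_obj D (mdom f)" "zig_obj D (mcod f)" "delta_map (msing_map f) (zlen (mdom f)) (zlen (mcod f))"
    "\<And>i. i \<le> zlen (mcod f) \<Longrightarrow> arr D (mreg f i) (zr (mdom f) (hat (msing_map f) i)) (zr (mcod f) i)"
    "\<And>j. j < zlen (mdom f) \<Longrightarrow> arr D (msing f j) (zs (mdom f) j) (zs (mcod f) (msing_map f ! j))"
  using assms by (auto elim!: zig_mapE simp: zm_typ_def)

lemma zig_comp_acc:
  "mdom (zig_comp D g f) = mdom f" "mcod (zig_comp D g f) = mcod g"
  "msing_map (zig_comp D g f) = map (\<lambda>j. msing_map g ! (msing_map f ! j)) [0..<length (msing_map f)]"
  "i \<le> zlen (mcod g) \<Longrightarrow> mreg (zig_comp D g f) i = cComp D (mreg g i) (mreg f (hat (msing_map g) i))"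
  "j < length (msing_map f) \<Longrightarrow> msing (zig_comp D g f) j = cComp D (msing g (msing_map f ! j)) (msing f j)"
  by (simp_all add: zig_comp_def del: upt_Suc add: less_Suc_eq_le[symmetric])

lemma zig_id_acc:
  "mdom (zig_id D X) = X" "mcod (zig_id D X) = X" "msing_map (zig_id D X) = [0..<zlen X]"
  "i \<le> zlen X \<Longrightarrow> mreg (zig_id D X) i = cId D (zr X i)"
  "j < zlen X \<Longrightarrow> msing (zig_id D X) j = cId D (zs X j)"
  by (simp_all add: zig_id_def del: upt_Suc add: less_Suc_eq_le[symmetric])

lemma zig_eqI:
  assumes "zig_map D a" "zig_map D b" "mdom a = mdom b" "mcod a = mcod b" "msing_map a = msing_map b"
    "\<And>i. i \<le> zlen (mcod a) \<Longrightarrow> mreg a i = mreg b i" "\<And>j. j < zlen (mdom a) \<Longrightarrow> msing a j = msing b j"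
  shows "a = b"
proof -
  obtain X Y fs fr fsg where A: "a = ZM X Y fs fr fsg" "zm_typ D X Y fs fr fsg" using assms(1) by (rule zig_mapE)
  obtain X' Y' fs' fr' fsg' where B: "b = ZM X' Y' fs' fr' fsg'" "zm_typ D X' Y' fs' fr' fsg'" using assms(2) by (rule zig_mapE)
  show ?thesis unfolding A(1) B(1)
    using assms(3-7) A B unfolding zm_typ_def
    by (intro ZM_eqI) (auto simp: less_Suc_eq_le)
qed

definition Qlev :: "('o, 'm) cat \<Rightarrow> nat \<Rightarrow> bool" where
  "Qlev C n \<longleftrightarrow> (\<forall>d. deg C n d \<longrightarrow> d \<in> cArr (Zn C n) \<and> monic (Zn C n) d) \<and> (\<forall>f. iso (Zn C n) f \<longrightarrow> deg C n f)"

lemma deg_comp: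
  assumes cat: "is_category C" and f: "deg C n f" and g: "deg C n g" and fg: "cDom (Zn C n) g = cCod (Zn C n) f"
  shows "deg C n (cComp (Zn C n) g f)"
proof (cases n)
  case 0 thus ?thesis using iso_comp[OF lift_category[OF cat]] f g fg by simp
next
  case (Suc m)
  have "comp_closure (Z (Zn C m)) (\<lambda>g. simple_deg (Zn C m) g \<or> parallel_deg (Zn C m) (deg C m) g)
          (cComp (Z (Zn C m)) g f)"
    using f g fg Suc by (intro comp_closure.comp) simp_all
  thus ?thesis using Suc by simp
qed

lemma sorted_wrt_upt_less: "sorted_wrt (<) [0..<n]" by (simp add: sorted_wrt_iff_nth_less)

lemma deg_slices:
  assumes cat: "is_category C" and Q: "Qlev C m" and d: "deg C (Suc m) d"
  shows "zig_map (Zn C m) d \<and> delta_mono (msing_map d) \<and> (\<forall>i \<le> zlen (mcod d). deg C m (mreg d i)) \<and>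
         (\<forall>j < zlen (mdom d). deg C m (msing d j))"
proof -
  let ?D = "Zn C m"
  have catD: "is_category ?D" by (rule Zn_category[OF cat])
  have isodeg: "\<And>f. iso ?D f \<Longrightarrow> deg C m f" using Q unfolding Qlev_def by blast
  have "comp_closure (Z ?D) (\<lambda>g. simple_deg ?D g \<or> parallel_deg ?D (deg C m) g) d" using d by simp
  thus ?thesis
  proof (induction rule: comp_closure.induct)
    case (gen f)
    hence fZ: "zig_map ?D f" by simp
    from gen.hyps(2) show ?case
    proof
      assume s: "simple_deg ?D f"
      thus ?thesis using simple_slices_iso[OF catD s] isodeg fZ unfolding simple_deg_def by blast
    next
      assume p: "parallel_deg ?D (deg C m) f"
      thus ?thesis using fZ unfolding parallel_deg_def pi_vertical_def delta_mono_def
        by (simp add: sorted_wrt_upt_less)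
    qed
  next
    case (comp f g)
    have fZ: "zig_map ?D f" and gZ: "zig_map ?D g" and fg: "mdom g = mcod f" using comp by auto
    note af = zig_map_acc[OF fZ] and ag = zig_map_acc[OF gZ]
    have df: "length (msing_map f) = zlen (mdom f)" "\<And>j. j < zlen (mdom f) \<Longrightarrow> msing_map f ! j < zlen (mcod f)"
      using af(3) unfolding delta_map_def by auto
    have dg: "length (msing_map g) = zlen (mdom g)" using ag(3) unfolding delta_map_def by auto
    have sf: "sorted_wrt (<) (msing_map f)" and sg: "sorted_wrt (<) (msing_map g)"
      using comp unfolding delta_mono_def by auto
    have cZ: "zig_map ?D (zig_comp ?D g f)" using zig_comp_closed[OF catD fZ gZ] fg by simp
    have dmc: "delta_mono (msing_map (zig_comp ?D g f))"
      unfolding delta_mono_def zig_comp_acc sorted_wrt_iff_nth_less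
      using sf sg df dg fg by (auto simp: sorted_wrt_iff_nth_less)
    have rc: "deg C m (mreg (zig_comp ?D g f) i)" if i: "i \<le> zlen (mcod (zig_comp ?D g f))" for i
    proof -
      have i': "i \<le> zlen (mcod g)" using i by (simp add: zig_comp_acc)
      have h: "hat (msing_map g) i \<le> zlen (mcod f)" using hat_le[of "msing_map g" i] dg fg by simp
      show ?thesis unfolding zig_comp_acc(4)[OF i']
        using comp.IH i' h ag(4)[OF i'] af(4)[OF h] fg
        by (intro deg_comp[OF cat]) (auto simp: arr_def)
    qed
    have sc: "deg C m (msing (zig_comp ?D g f) j)" if j: "j < zlen (mdom (zig_comp ?D g f))" for j
    proof -
      have j': "j < zlen (mdom f)" using j by (simp add: zig_comp_acc)
      have h: "msing_map f ! j < zlen (mdom g)" using df(2)[OF j'] fg by simp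
      show ?thesis unfolding zig_comp_acc(5)[OF j'[folded df(1)]]
        using comp.IH j' h ag(5)[OF h] af(5)[OF j'] fg
        by (intro deg_comp[OF cat]) (auto simp: arr_def)
    qed
    show ?case using cZ dmc rc sc by simp
  qed
qed

lemma list_inverse_upt:
  assumes f: "delta_map fs n m" and g: "delta_map gs m n"
    and gf: "map (\<lambda>j. gs!(fs!j)) [0..<n] = [0..<n]" and fg: "map (\<lambda>k. fs!(gs!k)) [0..<m] = [0..<m]"
  shows "n = m \<and> fs = [0..<n] \<and> gs = [0..<n]"
proof -
  have lf: "length fs = n" "sorted fs" "\<forall>j<n. fs!j < m" using f unfolding delta_map_def by auto
  have lg: "length gs = m" "sorted gs" "\<forall>j<m. gs!j < n" using g unfolding delta_map_def by auto
  have gf': "gs!(fs!j) = j" if j: "j < n" for j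
    using arg_cong[OF gf, of "\<lambda>l. l!j"] j by simp
  have fg': "fs!(gs!k) = k" if k: "k < m" for k
    using arg_cong[OF fg, of "\<lambda>l. l!k"] k by simp
  have dist: "distinct fs" unfolding distinct_conv_nth
  proof (intro allI impI)
    fix i j assume "i < length fs" "j < length fs" "i \<noteq> j"
    thus "fs!i \<noteq> fs!j" using gf'[of i] gf'[of j] lf by auto
  qed
  have st: "set fs = {0..<m}"
  proof
    show "set fs \<subseteq> {0..<m}" using lf by (auto simp: in_set_conv_nth)
    show "{0..<m} \<subseteq> set fs"
    proof
      fix k assume "k \<in> {0..<m}"
      hence "k = fs!(gs!k)" "gs!k < length fs" using fg' lg lf by auto
      thus "k \<in> set fs" by (metis nth_mem)
    qed
  qed
  have e: "fs = [0..<m]" using sorted_distinct_set_unique[OF lf(2) dist, of "[0..<m]"] st by simp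
  hence nm: "n = m" using lf by simp
  have "gs = [0..<m]"
  proof (rule nth_equalityI)
    fix k assume "k < length gs"
    hence "k < m" using lg by simp
    thus "gs!k = [0..<m]!k" using fg'[of k] e lg nm by simp
  qed (use lg in simp)
  thus ?thesis using e nm by simp
qed

lemma iso_Z_slices:
  assumes catD: "is_category D" and f: "iso (Z D) f"
  shows "pi_vertical f \<and> (\<forall>i \<le> zlen (mcod f). iso D (mreg f i)) \<and> (\<forall>j < zlen (mdom f). iso D (msing f j))"
proof -
  obtain g where g: "arr (Z D) g (mcod f) (mdom f)" "zig_comp D g f = zig_id D (mdom f)" "zig_comp D f g = zig_id D (mcod f)"
    using f by (elim iso_invE) simp
  have fZ: "zig_map D f" using iso_arr[OF f] by simp
  have gZ: "zig_map D g" "mdom g = mcod f" "mcod g = mdom f" using g(1) by (auto simp: arr_def)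
  note af = zig_map_acc[OF fZ] and ag = zig_map_acc[OF gZ(1)]
  let ?n = "zlen (mdom f)" and ?m = "zlen (mcod f)"
  have dfm: "delta_map (msing_map f) ?n ?m" using af(3) .
  have dgm: "delta_map (msing_map g) ?m ?n" using ag(3) gZ by simp
  have lf: "length (msing_map f) = ?n" and lg: "length (msing_map g) = ?m" using dfm dgm unfolding delta_map_def by auto
  have e1: "map (\<lambda>j. msing_map g ! (msing_map f ! j)) [0..<?n] = [0..<?n]"
    using arg_cong[OF g(2), of msing_map] lf unfolding zig_comp_acc zig_id_acc by simp
  have e2: "map (\<lambda>k. msing_map f ! (msing_map g ! k)) [0..<?m] = [0..<?m]"
    using arg_cong[OF g(3), of msing_map] lg unfolding zig_comp_acc zig_id_acc by simp
  have L: "?n = ?m \<and> msing_map f = [0..<?n] \<and> msing_map g = [0..<?n]"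
    by (rule list_inverse_upt[OF dfm dgm e1 e2])
  have pv: "pi_vertical f" unfolding pi_vertical_def using L by simp
  have ri: "iso D (mreg f i)" if i: "i \<le> ?m" for i
  proof -
    have h: "hat (msing_map f) i = i" "hat (msing_map g) i = i" using L hat_upt i by auto
    have a1: "cComp D (mreg g i) (mreg f i) = cId D (zr (mdom f) i)"
      using arg_cong[OF g(2), of "\<lambda>x. mreg x i"] i L h gZ unfolding zig_comp_acc zig_id_acc
      by (simp add: zig_comp_acc zig_id_acc)
    have a2: "cComp D (mreg f i) (mreg g i) = cId D (zr (mcod f) i)"
      using arg_cong[OF g(3), of "\<lambda>x. mreg x i"] i L h gZ by (simp add: zig_comp_acc zig_id_acc)
    have t1: "arr D (mreg f i) (zr (mdom f) i) (zr (mcod f) i)" using af(4)[OF i] h by simp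
    have t2: "arr D (mreg g i) (zr (mcod f) i) (zr (mdom f) i)" using ag(4)[of i] i h gZ L by simp
    show ?thesis unfolding iso_def using t1 t2 a1 a2 unfolding arr_def by auto
  qed
  have si: "iso D (msing f j)" if j: "j < ?n" for j
  proof -
    have h: "msing_map f ! j = j" "msing_map g ! j = j" using L j by auto
    have a1: "cComp D (msing g j) (msing f j) = cId D (zs (mdom f) j)"
      using arg_cong[OF g(2), of "\<lambda>x. msing x j"] j L h by (simp add: zig_comp_acc zig_id_acc)
    have a2: "cComp D (msing f j) (msing g j) = cId D (zs (mcod f) j)"
      using arg_cong[OF g(3), of "\<lambda>x. msing x j"] j L h by (simp add: zig_comp_acc zig_id_acc)
    have t1: "arr D (msing f j) (zs (mdom f) j) (zs (mcod f) j)" using af(5)[OF j] h by simp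
    have t2: "arr D (msing g j) (zs (mcod f) j) (zs (mdom f) j)" using ag(5)[of j] j h gZ L by simp
    show ?thesis unfolding iso_def using t1 t2 a1 a2 unfolding arr_def by auto
  qed
  show ?thesis using pv ri si by auto
qed

lemma Qlev_all:
  assumes cat: "is_category C"
  shows "Qlev C n"
proof (induction n)
  case 0
  show ?case unfolding Qlev_def using iso_monic[OF lift_category[OF cat]] iso_arr by auto
next
  case (Suc m)
  let ?D = "Zn C m"
  have catD: "is_category ?D" by (rule Zn_category[OF cat])
  have Qm: "Qlev C m" by (fact Suc.IH)
  have mon: "\<And>d. deg C m d \<Longrightarrow> monic ?D d" and isodeg: "\<And>f. iso ?D f \<Longrightarrow> deg C m f"
    using Qm unfolding Qlev_def by auto
  have A: "d \<in> cArr (Zn C (Suc m)) \<and> monic (Zn C (Suc m)) d" if d: "deg C (Suc m) d" for d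
  proof -
    note ds = deg_slices[OF cat Qm d]
    have dZ: "zig_map ?D d" using ds by simp
    note ad = zig_map_acc[OF dZ]
    have sd: "sorted_wrt (<) (msing_map d)" using ds unfolding delta_mono_def by simp
    have ld: "length (msing_map d) = zlen (mdom d)" and ltd: "\<forall>j < zlen (mdom d). msing_map d ! j < zlen (mcod d)"
      using ad(3) unfolding delta_map_def by auto
    have "monic (Z ?D) d" unfolding monic_def
    proof (intro conjI allI impI)
      show "d \<in> cArr (Z ?D)" using dZ by simp
      fix a b assume a: "a \<in> cArr (Z ?D)" and b: "b \<in> cArr (Z ?D)" and ca: "cCod (Z ?D) a = cDom (Z ?D) d"
        and cb: "cCod (Z ?D) b = cDom (Z ?D) d" and ab: "cDom (Z ?D) a = cDom (Z ?D) b"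
        and e: "cComp (Z ?D) d a = cComp (Z ?D) d b"
      have aZ: "zig_map ?D a" and bZ: "zig_map ?D b" and ca': "mcod a = mdom d" and cb': "mcod b = mdom d"
        and ab': "mdom a = mdom b" and e': "zig_comp ?D d a = zig_comp ?D d b" using a b ca cb ab e by auto
      note aa = zig_map_acc[OF aZ] and ab2 = zig_map_acc[OF bZ]
      have la: "length (msing_map a) = zlen (mdom a)" and lta: "\<forall>j < zlen (mdom a). msing_map a ! j < zlen (mdom d)"
        using aa(3) ca' unfolding delta_map_def by auto
      have lb: "length (msing_map b) = zlen (mdom a)" and ltb: "\<forall>j < zlen (mdom a). msing_map b ! j < zlen (mdom d)"
        using ab2(3) cb' ab' unfolding delta_map_def by auto
      have inj: "\<And>x y. x < zlen (mdom d) \<Longrightarrow> y < zlen (mdom d) \<Longrightarrow> msing_map d ! x = msing_map d ! y \<Longrightarrow> x = y"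
      proof -
        fix x y assume xy: "x < zlen (mdom d)" "y < zlen (mdom d)" "msing_map d ! x = msing_map d ! y"
        show "x = y"
        proof (rule ccontr)
          assume "x \<noteq> y"
          hence "x < y \<or> y < x" by auto
          thus False using sorted_wrt_nth_less[OF sd, of x y] sorted_wrt_nth_less[OF sd, of y x] xy ld by auto
        qed
      qed
      have ss: "msing_map a = msing_map b"
      proof (rule nth_equalityI)
        show "length (msing_map a) = length (msing_map b)" using la lb by simp
        fix j assume j: "j < length (msing_map a)"
        have "msing_map (zig_comp ?D d a) ! j = msing_map (zig_comp ?D d b) ! j" using e' by simp
        hence "msing_map d ! (msing_map a ! j) = msing_map d ! (msing_map b ! j)"
          using j la lb by (simp add: zig_comp_acc)
        thus "msing_map a ! j = msing_map b ! j" using inj lta ltb j la by auto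
      qed
      show "a = b"
      proof (rule zig_eqI[OF aZ bZ ab'])
        show "mcod a = mcod b" using ca' cb' by simp
        show "msing_map a = msing_map b" by (fact ss)
      next
        fix j assume j: "j < zlen (mdom a)"
        let ?k = "msing_map a ! j"
        have k: "?k < zlen (mdom d)" using lta j by simp
        have "msing (zig_comp ?D d a) j = msing (zig_comp ?D d b) j" using e' by simp
        hence eq: "cComp ?D (msing d ?k) (msing a j) = cComp ?D (msing d ?k) (msing b j)"
          using j la lb ss by (simp add: zig_comp_acc)
        have md: "monic ?D (msing d ?k)" using mon ds k by blast
        have t1: "arr ?D (msing a j) (zs (mdom a) j) (zs (mdom d) ?k)" using aa(5)[OF j] ca' by simp
        have t2: "arr ?D (msing b j) (zs (mdom a) j) (zs (mdom d) ?k)" using ab2(5)[of j] j cb' ab' ss by simp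
        have t3: "arr ?D (msing d ?k) (zs (mdom d) ?k) (zs (mcod d) (msing_map d ! ?k))" using ad(5)[OF k] .
        show "msing a j = msing b j" using md eq t1 t2 t3 unfolding monic_def arr_def by metis
      next
        fix q assume q: "q \<le> zlen (mcod a)"
        hence q': "q \<le> length (msing_map d)" using ca' ld by simp
        obtain i where i: "i \<le> zlen (mcod d)" "hat (msing_map d) i = q"
          using hat_surj[OF sd _ q'] ltd ld by metis
        have "mreg (zig_comp ?D d a) i = mreg (zig_comp ?D d b) i" using e' by simp
        hence eq: "cComp ?D (mreg d i) (mreg a q) = cComp ?D (mreg d i) (mreg b q)"
          using i by (simp add: zig_comp_acc)
        have md: "monic ?D (mreg d i)" using mon ds i by blast
        have t1: "arr ?D (mreg a q) (zr (mdom a) (hat (msing_map a) q)) (zr (mdom d) q)" using aa(4)[OF q] ca' by simp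
        have t2: "arr ?D (mreg b q) (zr (mdom a) (hat (msing_map a) q)) (zr (mdom d) q)"
          using ab2(4)[of q] q cb' ca' ab' ss by simp
        have t3: "arr ?D (mreg d i) (zr (mdom d) q) (zr (mcod d) i)" using ad(4)[OF i(1)] i(2) by simp
        show "mreg a q = mreg b q" using md eq t1 t2 t3 unfolding monic_def arr_def by metis
      qed
    qed
    thus ?thesis using dZ by simp
  qed
  have B: "deg C (Suc m) f" if f: "iso (Zn C (Suc m)) f" for f
  proof -
    have fZ: "f \<in> cArr (Z ?D)" using iso_arr[OF f] by simp
    note sl = iso_Z_slices[OF catD f[unfolded Zn_Suc]]
    have "parallel_deg ?D (deg C m) f" unfolding parallel_deg_def using fZ sl isodeg by auto
    thus ?thesis using fZ by (auto intro: comp_closure.gen)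
  qed
  show ?case unfolding Qlev_def using A B by blast
qed

lemma monic_cancel:
  assumes "monic D e" "arr D a x y" "arr D b x y" "cDom D e = y" "cComp D e a = cComp D e b"
  shows "a = b"
proof -
  have "\<forall>a b. a \<in> cArr D \<longrightarrow> b \<in> cArr D \<longrightarrow> cCod D a = cDom D e \<longrightarrow>
     cCod D b = cDom D e \<longrightarrow> cDom D a = cDom D b \<longrightarrow> cComp D e a = cComp D e b \<longrightarrow> a = b"
    using assms(1) unfolding monic_def by blast
  hence "a \<in> cArr D \<longrightarrow> b \<in> cArr D \<longrightarrow> cCod D a = cDom D e \<longrightarrow>
     cCod D b = cDom D e \<longrightarrow> cDom D a = cDom D b \<longrightarrow> cComp D e a = cComp D e b \<longrightarrow> a = b" by blast
  thus ?thesis using assms(2-5) unfolding arr_def by simp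
qed

lemma vert_map:
  assumes catD: "is_category D" and oX: "zig_obj D X"
    and R0: "\<forall>i. i \<le> zlen X \<longrightarrow> R i \<in> cArr D \<and> cCod D (R i) = zr X i"
    and S0: "\<forall>k. k < zlen X \<longrightarrow> S k \<in> cArr D \<and> cCod D (S k) = zs X k"
    and NX0: "\<forall>k. k < zlen X \<longrightarrow> arr D (NX k) (cDom D (R k)) (cDom D (S k)) \<and> cComp D (S k) (NX k) = cComp D (zx X k) (R k)"
    and NY0: "\<forall>k. k < zlen X \<longrightarrow> arr D (NY k) (cDom D (R (Suc k))) (cDom D (S k)) \<and> cComp D (S k) (NY k) = cComp D (zy X k) (R (Suc k))"
  defines "N' \<equiv> ZZ (map (\<lambda>i. cDom D (R i)) [0..<Suc (zlen X)]) (map (\<lambda>k. cDom D (S k)) [0..<zlen X]) (map NX [0..<zlen X]) (map NY [0..<zlen X])"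
    and "P \<equiv> ZM (ZZ (map (\<lambda>i. cDom D (R i)) [0..<Suc (zlen X)]) (map (\<lambda>k. cDom D (S k)) [0..<zlen X]) (map NX [0..<zlen X]) (map NY [0..<zlen X])) X [0..<zlen X] (map R [0..<Suc (zlen X)]) (map S [0..<zlen X])"
  shows "zig_map D P" "pi_vertical P" "mdom P = N'" "mcod P = X" "msing_map P = [0..<zlen X]"
    "\<And>i. i \<le> zlen X \<Longrightarrow> mreg P i = R i" "\<And>k. k < zlen X \<Longrightarrow> msing P k = S k"
    "zlen N' = zlen X" "\<And>i. i \<le> zlen X \<Longrightarrow> zr N' i = cDom D (R i)" "\<And>k. k < zlen X \<Longrightarrow> zs N' k = cDom D (S k)"
    "\<And>k. k < zlen X \<Longrightarrow> zx N' k = NX k" "\<And>k. k < zlen X \<Longrightarrow> zy N' k = NY k"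
proof -
  note R = R0[rule_format] and S = S0[rule_format] and NX = NX0[rule_format] and NY = NY0[rule_format]
  let ?L = "zlen X"
  show N1: "zlen N' = ?L" "\<And>i. i \<le> ?L \<Longrightarrow> zr N' i = cDom D (R i)" "\<And>k. k < ?L \<Longrightarrow> zs N' k = cDom D (S k)"
    "\<And>k. k < ?L \<Longrightarrow> zx N' k = NX k" "\<And>k. k < ?L \<Longrightarrow> zy N' k = NY k"
    unfolding N'_def by (simp_all del: upt_Suc add: less_Suc_eq_le[symmetric])
  show P1: "mdom P = N'" "mcod P = X" "msing_map P = [0..<?L]"
    "\<And>i. i \<le> ?L \<Longrightarrow> mreg P i = R i" "\<And>k. k < ?L \<Longrightarrow> msing P k = S k"
    unfolding P_def N'_def by (simp_all del: upt_Suc add: less_Suc_eq_le[symmetric])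
  show "pi_vertical P" unfolding pi_vertical_def using P1 N1 by simp
  have obR: "\<And>i. i \<le> ?L \<Longrightarrow> cDom D (R i) \<in> cObj D" using R catD unfolding is_category_def by blast
  have obS: "\<And>k. k < ?L \<Longrightarrow> cDom D (S k) \<in> cObj D" using S catD unfolding is_category_def by blast
  have oN: "zig_obj D N'" unfolding zig_obj_def N'_def
    using obR obS NX NY unfolding arr_def
    by (auto simp del: upt_Suc simp: nth_append less_Suc_eq_le[symmetric] set_conv_nth)
  have T: "zm_typ D N' X [0..<?L] (map R [0..<Suc ?L]) (map S [0..<?L])"
    unfolding zm_typ_def using oN oX N1 R S hat_upt
    by (auto simp del: upt_Suc simp: delta_map_def arr_def less_Suc_eq_le[symmetric])
  have Lc: "zm_loc D N' X [0..<?L] (map R [0..<Suc ?L]) (map S [0..<?L])"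
    unfolding zm_loc_def N1(1)
  proof (intro conjI allI impI)
    fix k assume k: "k < ?L"
    show "cComp D (map S [0..<?L] ! k) (zx N' k) = cComp D (zx X ([0..<?L] ! k)) (map R [0..<Suc ?L] ! ([0..<?L] ! k))"
      using NX[OF k] N1 k by (simp del: upt_Suc add: less_Suc_eq_le[symmetric])
    show "cComp D (map S [0..<?L] ! k) (zy N' k) = cComp D (zy X ([0..<?L] ! k)) (map R [0..<Suc ?L] ! Suc ([0..<?L] ! k))"
      using NY[OF k] N1 k by (simp del: upt_Suc add: less_Suc_eq_le[symmetric])
  next
    fix k assume a: "Suc k < ?L \<and> [0..<?L] ! k = [0..<?L] ! Suc k"
    have "[0..<?L] ! k = k" "[0..<?L] ! Suc k = Suc k" using a by auto
    hence False using a by simp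
    thus "cComp D (map S [0..<?L] ! k) (zy N' k) = cComp D (map S [0..<?L] ! Suc k) (zx N' (Suc k))" by simp
  next
    fix i assume "i < ?L" "i \<notin> set [0..<?L]"
    hence False by simp
    thus "cComp D (zx X i) (map R [0..<Suc ?L] ! i) = cComp D (zy X i) (map R [0..<Suc ?L] ! Suc i)" by simp
  qed
  show "zig_map D P" unfolding P_def N'_def[symmetric] by (rule zig_mapI[OF T Lc])
qed

lemma hat_min_fiber:
  assumes "sorted \<phi>" "p < length \<phi>" "p = 0 \<or> \<phi>!(p-1) < \<phi>!p"
  shows "hat \<phi> (\<phi>!p) = p"
proof (rule hat_eqI)
  fix j assume j: "j < p"
  hence "\<phi>!j \<le> \<phi>!(p-1)" using assms(1,2) by (intro sorted_nth_mono) auto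
  thus "\<phi>!j < \<phi>!p" using assms(3) j by auto
qed (use assms in auto)

lemma hat_max_fiber:
  assumes "sorted \<phi>" "p < length \<phi>" "Suc p = length \<phi> \<or> \<phi>!p < \<phi>!Suc p"
  shows "hat \<phi> (Suc (\<phi>!p)) = Suc p"
proof (rule hat_eqI)
  fix j assume j: "j < Suc p"
  hence "\<phi>!j \<le> \<phi>!p" using assms(1,2) by (intro sorted_nth_mono) auto
  thus "\<phi>!j < Suc (\<phi>!p)" by simp
qed (use assms in auto)

lemma fact_vertical:
  assumes catD: "is_category D"
    and P: "zig_map D P" "pi_vertical P" "mcod P = X"
    and monR: "\<And>i. i \<le> zlen X \<Longrightarrow> monic D (mreg P i)"
    and monS: "\<And>k. k < zlen X \<Longrightarrow> monic D (msing P k)"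
    and f: "zig_map D f" "mcod f = X"
    and tr: "\<And>i. i \<le> zlen X \<Longrightarrow> \<exists>t. arr D t (zr (mdom f) (hat (msing_map f) i)) (cDom D (mreg P i)) \<and> cComp D (mreg P i) t = mreg f i"
    and ts: "\<And>p. p < zlen (mdom f) \<Longrightarrow> \<exists>u. arr D u (zs (mdom f) p) (cDom D (msing P (msing_map f ! p))) \<and> cComp D (msing P (msing_map f ! p)) u = msing f p"
  shows "factors_through (Z D) f P"
proof -
  let ?L = "zlen X" and ?N = "mdom P" and ?A = "mdom f" and ?\<phi> = "msing_map f"
  let ?n = "zlen ?A"
  note aP = zig_map_acc[OF P(1)] and af = zig_map_acc[OF f(1)]
  have vP: "zlen ?N = ?L" "msing_map P = [0..<?L]" using P(2,3) unfolding pi_vertical_def by auto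
  have aPr: "\<And>i. i \<le> ?L \<Longrightarrow> arr D (mreg P i) (zr ?N i) (zr X i)" using aP(4) vP P(3) hat_upt by auto
  have aPs: "\<And>k. k < ?L \<Longrightarrow> arr D (msing P k) (zs ?N k) (zs X k)" using aP(5) vP P(3) by auto
  have df: "length ?\<phi> = ?n" "sorted ?\<phi>" "\<And>p. p < ?n \<Longrightarrow> ?\<phi>!p < ?L" using af(3) f(2) unfolding delta_map_def by auto
  have afr: "\<And>i. i \<le> ?L \<Longrightarrow> arr D (mreg f i) (zr ?A (hat ?\<phi> i)) (zr X i)" using af(4) f(2) by auto
  have afs: "\<And>p. p < ?n \<Longrightarrow> arr D (msing f p) (zs ?A p) (zs X (?\<phi>!p))" using af(5) f(2) by auto
  have axA: "\<And>p. p < ?n \<Longrightarrow> arr D (zx ?A p) (zr ?A p) (zs ?A p)" and ayA: "\<And>p. p < ?n \<Longrightarrow> arr D (zy ?A p) (zr ?A (Suc p)) (zs ?A p)"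
    using zig_obj_arr[OF af(1)] by auto
  have axN: "\<And>k. k < ?L \<Longrightarrow> arr D (zx ?N k) (zr ?N k) (zs ?N k)" and ayN: "\<And>k. k < ?L \<Longrightarrow> arr D (zy ?N k) (zr ?N (Suc k)) (zs ?N k)"
    using zig_obj_arr[OF aP(1)] vP by auto
  have axX: "\<And>k. k < ?L \<Longrightarrow> arr D (zx X k) (zr X k) (zs X k)" and ayX: "\<And>k. k < ?L \<Longrightarrow> arr D (zy X k) (zr X (Suc k)) (zs X k)"
    using zig_obj_arr[OF af(2)] f(2) by auto
  obtain X1 Y1 fs fr0 fsg0 where E: "P = ZM X1 Y1 fs fr0 fsg0" "zm_typ D X1 Y1 fs fr0 fsg0" "zm_loc D X1 Y1 fs fr0 fsg0"
    using P(1) by (rule zig_mapE)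
  have E': "X1 = ?N" "Y1 = X" "fs = [0..<?L]" "\<And>k. fr0!k = mreg P k" "\<And>k. fsg0!k = msing P k"
    using E(1) P(3) vP by auto
  have PF1: "cComp D (msing P k) (zx ?N k) = cComp D (zx X k) (mreg P k)" if k: "k < ?L" for k
  proof -
    have k1: "k < zlen X1" using k E'(1) vP(1) by simp
    have c: "k = 0 \<or> fs!(k-1) < fs!k" using k E'(3) by (cases k) auto
    show ?thesis using E(3)[unfolded zm_loc_def, THEN conjunct1, rule_format, OF k1 c] E' k by simp
  qed
  have PF2: "cComp D (msing P k) (zy ?N k) = cComp D (zy X k) (mreg P (Suc k))" if k: "k < ?L" for k
  proof -
    have k1: "k < zlen X1" using k E'(1) vP(1) by simp
    have c: "Suc k = zlen X1 \<or> fs!k < fs!Suc k" using k E'(1,3) vP(1) by (cases "Suc k = ?L") auto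
    show ?thesis using E(3)[unfolded zm_loc_def, THEN conjunct2, THEN conjunct1, rule_format, OF k1 c] E' k by simp
  qed
  obtain fX fY \<phi>' fr fsg where Fa0: "f = ZM fX fY \<phi>' fr fsg" "zm_typ D fX fY \<phi>' fr fsg" "zm_loc D fX fY \<phi>' fr fsg"
    using f(1) by (rule zig_mapE)
  note Fa = Fa0(1,3)
  have Fa': "fX = ?A" "fY = X" "\<phi>' = ?\<phi>" "\<And>i. fr!i = mreg f i" "\<And>j. fsg!j = msing f j" using Fa(1) f(2) by auto
  note FL = Fa(2)[unfolded zm_loc_def Fa'(1,2,3), simplified Fa'(4,5)]
  have F1: "\<And>p. p < ?n \<Longrightarrow> (p = 0 \<or> ?\<phi>!(p-1) < ?\<phi>!p) \<Longrightarrow> cComp D (msing f p) (zx ?A p) = cComp D (zx X (?\<phi>!p)) (mreg f (?\<phi>!p))"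
   and F2: "\<And>p. p < ?n \<Longrightarrow> (Suc p = ?n \<or> ?\<phi>!p < ?\<phi>!Suc p) \<Longrightarrow> cComp D (msing f p) (zy ?A p) = cComp D (zy X (?\<phi>!p)) (mreg f (Suc (?\<phi>!p)))"
   and F3: "\<And>p. Suc p < ?n \<Longrightarrow> ?\<phi>!p = ?\<phi>!Suc p \<Longrightarrow> cComp D (msing f p) (zy ?A p) = cComp D (msing f (Suc p)) (zx ?A (Suc p))"
   and F4: "\<And>i. i < ?L \<Longrightarrow> i \<notin> set ?\<phi> \<Longrightarrow> cComp D (zx X i) (mreg f i) = cComp D (zy X i) (mreg f (Suc i))"
    using FL by auto
  define t where "t i = (SOME t. arr D t (zr ?A (hat ?\<phi> i)) (cDom D (mreg P i)) \<and> cComp D (mreg P i) t = mreg f i)" for i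
  define u where "u p = (SOME u. arr D u (zs ?A p) (cDom D (msing P (?\<phi>!p))) \<and> cComp D (msing P (?\<phi>!p)) u = msing f p)" for p
  have t: "\<And>i. i \<le> ?L \<Longrightarrow> arr D (t i) (zr ?A (hat ?\<phi> i)) (zr ?N i) \<and> cComp D (mreg P i) (t i) = mreg f i"
  proof -
    fix i assume i: "i \<le> ?L"
    have "arr D (t i) (zr ?A (hat ?\<phi> i)) (cDom D (mreg P i)) \<and> cComp D (mreg P i) (t i) = mreg f i"
      unfolding t_def by (rule someI_ex[OF tr[OF i]])
    thus "?thesis i" using aPr[OF i] by (simp add: arr_def)
  qed
  have u: "\<And>p. p < ?n \<Longrightarrow> arr D (u p) (zs ?A p) (zs ?N (?\<phi>!p)) \<and> cComp D (msing P (?\<phi>!p)) (u p) = msing f p"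
  proof -
    fix p assume p: "p < ?n"
    have "arr D (u p) (zs ?A p) (cDom D (msing P (?\<phi>!p))) \<and> cComp D (msing P (?\<phi>!p)) (u p) = msing f p"
      unfolding u_def by (rule someI_ex[OF ts[OF p]])
    thus "?thesis p" using aPs[OF df(3)[OF p]] by (simp add: arr_def)
  qed
  note A = cat_assoc[OF catD] and CC = cat_comp[OF catD]
  define g where "g = ZM ?A ?N ?\<phi> (map t [0..<Suc ?L]) (map u [0..<?n])"
  have gT: "zm_typ D ?A ?N ?\<phi> (map t [0..<Suc ?L]) (map u [0..<?n])"
    unfolding zm_typ_def using af(1) aP(1) af(3) f(2) vP t u
    by (auto simp del: upt_Suc simp: less_Suc_eq_le[symmetric])
  have gL: "zm_loc D ?A ?N ?\<phi> (map t [0..<Suc ?L]) (map u [0..<?n])"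
    unfolding zm_loc_def vP(1)
  proof (intro conjI allI impI)
    fix p assume p: "p < ?n" and c: "p = 0 \<or> ?\<phi>!(p-1) < ?\<phi>!p"
    define k where "k = ?\<phi>!p"
    have k: "k < ?L" "k \<le> ?L" using df(3)[OF p] k_def by auto
    have hk: "hat ?\<phi> k = p" using hat_min_fiber[OF df(2)] p c df(1) k_def by simp
    have a1: "arr D (cComp D (u p) (zx ?A p)) (zr ?A p) (zs ?N k)" using CC[OF axA[OF p]] u[OF p] k_def by simp
    have a2: "arr D (cComp D (zx ?N k) (t k)) (zr ?A p) (zs ?N k)" using CC[OF _ axN[OF k(1)]] t[OF k(2)] hk by simp
    have "cComp D (msing P k) (cComp D (u p) (zx ?A p)) = cComp D (cComp D (msing P k) (u p)) (zx ?A p)"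
      by (rule A[OF axA[OF p] _ aPs[OF k(1)]] A[OF axA[OF p] _ aPs[OF k(1)], symmetric]) (use u[OF p] k_def in auto)
    also have "\<dots> = cComp D (zx X k) (mreg f k)" using u[OF p] F1[OF p c] k_def by simp
    also have "\<dots> = cComp D (zx X k) (cComp D (mreg P k) (t k))" using t[OF k(2)] by simp
    also have "\<dots> = cComp D (cComp D (zx X k) (mreg P k)) (t k)" by (rule A[OF _ aPr[OF k(2)] axX[OF k(1)]] A[OF _ aPr[OF k(2)] axX[OF k(1)], symmetric]) (use t[OF k(2)] in auto)
    also have "\<dots> = cComp D (cComp D (msing P k) (zx ?N k)) (t k)" using PF1[OF k(1)] by simp
    also have "\<dots> = cComp D (msing P k) (cComp D (zx ?N k) (t k))" by (rule A[OF _ axN[OF k(1)] aPs[OF k(1)]] A[OF _ axN[OF k(1)] aPs[OF k(1)], symmetric]) (use t[OF k(2)] in auto)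
    finally have "cComp D (u p) (zx ?A p) = cComp D (zx ?N k) (t k)"
      using monic_cancel[OF monS[OF k(1)] a1 a2] aPs[OF k(1)] by (simp add: arr_def)
    thus "cComp D (map u [0..<?n] ! p) (zx ?A p) = cComp D (zx ?N (?\<phi>!p)) (map t [0..<Suc ?L] ! (?\<phi>!p))"
      using p k k_def by (simp del: upt_Suc add: less_Suc_eq_le[symmetric])
  next
    fix p assume p: "p < ?n" and c: "Suc p = ?n \<or> ?\<phi>!p < ?\<phi>!Suc p"
    define k where "k = ?\<phi>!p"
    have k: "k < ?L" "Suc k \<le> ?L" using df(3)[OF p] k_def by auto
    have hk: "hat ?\<phi> (Suc k) = Suc p" using hat_max_fiber[OF df(2)] p c df(1) k_def by simp
    have a1: "arr D (cComp D (u p) (zy ?A p)) (zr ?A (Suc p)) (zs ?N k)" using CC[OF ayA[OF p]] u[OF p] k_def by simp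
    have a2: "arr D (cComp D (zy ?N k) (t (Suc k))) (zr ?A (Suc p)) (zs ?N k)" using CC[OF _ ayN[OF k(1)]] t[OF k(2)] hk by simp
    have "cComp D (msing P k) (cComp D (u p) (zy ?A p)) = cComp D (cComp D (msing P k) (u p)) (zy ?A p)"
      by (rule A[OF ayA[OF p] _ aPs[OF k(1)]] A[OF ayA[OF p] _ aPs[OF k(1)], symmetric]) (use u[OF p] k_def in auto)
    also have "\<dots> = cComp D (zy X k) (mreg f (Suc k))" using u[OF p] F2[OF p c] k_def by simp
    also have "\<dots> = cComp D (zy X k) (cComp D (mreg P (Suc k)) (t (Suc k)))" using t[OF k(2)] by simp
    also have "\<dots> = cComp D (cComp D (zy X k) (mreg P (Suc k))) (t (Suc k))" by (rule A[OF _ aPr[OF k(2)] ayX[OF k(1)]] A[OF _ aPr[OF k(2)] ayX[OF k(1)], symmetric]) (use t[OF k(2)] in auto)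
    also have "\<dots> = cComp D (cComp D (msing P k) (zy ?N k)) (t (Suc k))" using PF2[OF k(1)] by simp
    also have "\<dots> = cComp D (msing P k) (cComp D (zy ?N k) (t (Suc k)))" by (rule A[OF _ ayN[OF k(1)] aPs[OF k(1)]] A[OF _ ayN[OF k(1)] aPs[OF k(1)], symmetric]) (use t[OF k(2)] in auto)
    finally have "cComp D (u p) (zy ?A p) = cComp D (zy ?N k) (t (Suc k))"
      using monic_cancel[OF monS[OF k(1)] a1 a2] aPs[OF k(1)] by (simp add: arr_def)
    thus "cComp D (map u [0..<?n] ! p) (zy ?A p) = cComp D (zy ?N (?\<phi>!p)) (map t [0..<Suc ?L] ! Suc (?\<phi>!p))"
      using p k k_def by (simp del: upt_Suc add: less_Suc_eq_le[symmetric])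
  next
    fix p assume pc: "Suc p < ?n \<and> ?\<phi>!p = ?\<phi>!Suc p"
    hence p: "p < ?n" "Suc p < ?n" and c: "?\<phi>!p = ?\<phi>!Suc p" by auto
    define k where "k = ?\<phi>!p"
    have k: "k < ?L" using df(3)[OF p(1)] k_def by auto
    have a1: "arr D (cComp D (u p) (zy ?A p)) (zr ?A (Suc p)) (zs ?N k)" using CC[OF ayA[OF p(1)]] u[OF p(1)] k_def by simp
    have a2: "arr D (cComp D (u (Suc p)) (zx ?A (Suc p))) (zr ?A (Suc p)) (zs ?N k)"
      using CC[OF axA[OF p(2)]] u[OF p(2)] k_def c by simp
    have "cComp D (msing P k) (cComp D (u p) (zy ?A p)) = cComp D (cComp D (msing P k) (u p)) (zy ?A p)"
      by (rule A[OF ayA[OF p(1)] _ aPs[OF k]] A[OF ayA[OF p(1)] _ aPs[OF k], symmetric]) (use u[OF p(1)] k_def in auto)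
    also have "\<dots> = cComp D (msing f (Suc p)) (zx ?A (Suc p))" using u[OF p(1)] F3[OF p(2) c] k_def by simp
    also have "\<dots> = cComp D (cComp D (msing P k) (u (Suc p))) (zx ?A (Suc p))" using u[OF p(2)] k_def c by simp
    also have "\<dots> = cComp D (msing P k) (cComp D (u (Suc p)) (zx ?A (Suc p)))"
      by (rule A[OF axA[OF p(2)] _ aPs[OF k]] A[OF axA[OF p(2)] _ aPs[OF k], symmetric]) (use u[OF p(2)] k_def c in auto)
    finally have "cComp D (u p) (zy ?A p) = cComp D (u (Suc p)) (zx ?A (Suc p))"
      using monic_cancel[OF monS[OF k] a1 a2] aPs[OF k] by (simp add: arr_def)
    thus "cComp D (map u [0..<?n] ! p) (zy ?A p) = cComp D (map u [0..<?n] ! Suc p) (zx ?A (Suc p))"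
      using p by simp
  next
    fix i assume i: "i < zlen X" and ni: "i \<notin> set ?\<phi>"
    have i': "i \<le> ?L" "Suc i \<le> ?L" using i by auto
    have hh: "hat ?\<phi> (Suc i) = hat ?\<phi> i" by (rule hat_not_in[OF ni])
    have a1: "arr D (cComp D (zx ?N i) (t i)) (zr ?A (hat ?\<phi> i)) (zs ?N i)" using CC[OF _ axN[OF i]] t[OF i'(1)] by simp
    have a2: "arr D (cComp D (zy ?N i) (t (Suc i))) (zr ?A (hat ?\<phi> i)) (zs ?N i)" using CC[OF _ ayN[OF i]] t[OF i'(2)] hh by simp
    have "cComp D (msing P i) (cComp D (zx ?N i) (t i)) = cComp D (cComp D (msing P i) (zx ?N i)) (t i)"
      by (rule A[OF _ axN[OF i] aPs[OF i]] A[OF _ axN[OF i] aPs[OF i], symmetric]) (use t[OF i'(1)] in auto)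
    also have "\<dots> = cComp D (cComp D (zx X i) (mreg P i)) (t i)" using PF1[OF i] by simp
    also have "\<dots> = cComp D (zx X i) (cComp D (mreg P i) (t i))" by (rule A[OF _ aPr[OF i'(1)] axX[OF i], symmetric]) (use t[OF i'(1)] in auto)
    also have "\<dots> = cComp D (zx X i) (mreg f i)" using t[OF i'(1)] by simp
    also have "\<dots> = cComp D (zy X i) (mreg f (Suc i))" using F4[OF i ni] .
    also have "\<dots> = cComp D (zy X i) (cComp D (mreg P (Suc i)) (t (Suc i)))" using t[OF i'(2)] by simp
    also have "\<dots> = cComp D (cComp D (zy X i) (mreg P (Suc i))) (t (Suc i))" by (rule A[OF _ aPr[OF i'(2)] ayX[OF i]]) (use t[OF i'(2)] in auto)
    also have "\<dots> = cComp D (cComp D (msing P i) (zy ?N i)) (t (Suc i))" using PF2[OF i] by simp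
    also have "\<dots> = cComp D (msing P i) (cComp D (zy ?N i) (t (Suc i)))" by (rule A[OF _ ayN[OF i] aPs[OF i]] A[OF _ ayN[OF i] aPs[OF i], symmetric]) (use t[OF i'(2)] in auto)
    finally have "cComp D (zx ?N i) (t i) = cComp D (zy ?N i) (t (Suc i))"
      using monic_cancel[OF monS[OF i] a1 a2] aPs[OF i] by (simp add: arr_def)
    thus "cComp D (zx ?N i) (map t [0..<Suc ?L] ! i) = cComp D (zy ?N i) (map t [0..<Suc ?L] ! Suc i)"
      using i by (simp del: upt_Suc add: less_Suc_eq_le[symmetric])
  qed
  have gZ: "zig_map D g" unfolding g_def by (rule zig_mapI[OF gT gL])
  have gd: "mdom g = ?A" "mcod g = ?N" unfolding g_def by simp_all
  have comp: "zig_comp D P g = f"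
  proof (rule zig_eqI[OF _ f(1)])
    show "zig_map D (zig_comp D P g)" using zig_comp_closed[OF catD gZ P(1)] gd by simp
    show "mdom (zig_comp D P g) = mdom f" "mcod (zig_comp D P g) = mcod f" using gd f(2) P(3) by (simp_all add: zig_comp_acc)
    show "msing_map (zig_comp D P g) = msing_map f" unfolding zig_comp_acc vP(2) g_def
      using df by (intro nth_equalityI) auto
  next
    fix i assume "i \<le> zlen (mcod (zig_comp D P g))"
    hence i: "i \<le> ?L" using P(3) by (simp add: zig_comp_acc)
    show "mreg (zig_comp D P g) i = mreg f i" using i P(3) t[OF i] hat_upt[OF i] vP
      by (simp del: upt_Suc add: zig_comp_acc g_def less_Suc_eq_le[symmetric])
  next
    fix p assume "p < zlen (mdom (zig_comp D P g))"
    hence p: "p < ?n" using gd by (simp add: zig_comp_acc)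
    show "msing (zig_comp D P g) p = msing f p" using p u[OF p] df by (simp add: zig_comp_acc g_def)
  qed
  show ?thesis unfolding factors_through_def using gZ gd comp by auto
qed

lemma degQ:
  assumes cat: "is_category C"
  shows "deg C n d \<Longrightarrow> d \<in> cArr (Zn C n) \<and> monic (Zn C n) d" "iso (Zn C n) f \<Longrightarrow> deg C n f"
  using Qlev_all[OF cat, of n] unfolding Qlev_def by auto

lemma iso_norm:
  assumes cat: "is_category C" and i: "iso (Zn C l) i" and d: "normalising C l d"
    and id: "cDom (Zn C l) i = cCod (Zn C l) d"
  shows "normalising C l (cComp (Zn C l) i d)"
proof -
  let ?D = "Zn C l"
  have catD: "is_category ?D" by (rule Zn_category[OF cat])
  have dd: "deg C l d" using d unfolding normalising_def by simp
  have dA: "d \<in> cArr ?D" using degQ(1)[OF cat dd] by simp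
  have iA: "i \<in> cArr ?D" using iso_arr[OF i] .
  have ad: "arr ?D d (cDom ?D d) (cCod ?D d)" and ai: "arr ?D i (cCod ?D d) (cCod ?D i)" using dA iA id by (auto simp: arr_def)
  have deg1: "deg C l (cComp ?D i d)" using deg_comp[OF cat dd degQ(2)[OF cat i] id] .
  show ?thesis unfolding normalising_def
  proof (intro conjI allI impI)
    show "deg C l (cComp ?D i d)" by (fact deg1)
    fix d' assume d': "deg C l d' \<and> cCod ?D d' = cCod ?D (cComp ?D i d)"
    obtain i' where i': "arr ?D i' (cCod ?D i) (cDom ?D i)" "cComp ?D i' i = cId ?D (cDom ?D i)" "cComp ?D i i' = cId ?D (cCod ?D i)"
      using i by (rule iso_invE)
    have ii': "iso ?D i'" using iso_inv_iso[OF catD i'(1-3) i] .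
    have d'A: "arr ?D d' (cDom ?D d') (cCod ?D i)" using degQ(1)[OF cat conjunct1[OF d']] d' cat_comp[OF catD ad ai]
      by (auto simp: arr_def)
    have deg2: "deg C l (cComp ?D i' d')" using deg_comp[OF cat conjunct1[OF d'] degQ(2)[OF cat ii']] d'A i'(1) by (simp add: arr_def)
    have cod2: "cCod ?D (cComp ?D i' d') = cCod ?D d" using cat_comp[OF catD d'A i'(1)] id by (simp add: arr_def)
    obtain t where t: "t \<in> cArr ?D" "cDom ?D t = cDom ?D d" "cCod ?D t = cDom ?D (cComp ?D i' d')" "cComp ?D (cComp ?D i' d') t = d"
      using d deg2 cod2 unfolding normalising_def factors_through_def by blast
    have at: "arr ?D t (cDom ?D d) (cDom ?D d')" using t cat_comp[OF catD d'A i'(1)] by (simp add: arr_def)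
    have "cComp ?D i d = cComp ?D i (cComp ?D (cComp ?D i' d') t)" using t(4) by simp
    also have "\<dots> = cComp ?D (cComp ?D i (cComp ?D i' d')) t"
      using cat_assoc[OF catD at cat_comp[OF catD d'A i'(1)] ai[unfolded id[symmetric]]] id by simp
    also have "cComp ?D i (cComp ?D i' d') = cComp ?D (cComp ?D i i') d'"
      using cat_assoc[OF catD d'A i'(1)] ai id by (simp add: arr_def)
    also have "\<dots> = d'" using i'(3) cat_idl[OF catD d'A] by simp
    finally have "cComp ?D i d = cComp ?D d' t" .
    thus "factors_through ?D (cComp ?D i d) d'"
      unfolding factors_through_def using t(1) at cat_comp[OF catD ad ai] by (auto simp: arr_def)
  qed
qed

lemma glob_regnorm:
  assumes cat: "is_category C"
  shows "\<And>x d. globular_map C l x \<Longrightarrow> reg_normalising C l d \<Longrightarrow> x \<in> cArr (Zn C l) \<Longrightarrow> d \<in> cArr (Zn C l) \<Longrightarrow>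
    cDom (Zn C l) x = cCod (Zn C l) d \<Longrightarrow> reg_normalising C l (cComp (Zn C l) x d)"
proof (induction l)
  case 0 thus ?case by simp
next
  case (Suc l)
  let ?D = "Zn C l"
  have xZ: "zig_map ?D x" and dZ: "zig_map ?D d" and xd: "mdom x = mcod d" using Suc.prems by auto
  note ax = zig_map_acc[OF xZ] and ad = zig_map_acc[OF dZ]
  have lx: "length (msing_map x) = zlen (mdom x)" using ax(3) unfolding delta_map_def by simp
  have ld: "length (msing_map d) = zlen (mdom d)" "\<forall>j < zlen (mdom d). msing_map d ! j < zlen (mcod d)"
    using ad(3) unfolding delta_map_def by auto
  show ?case unfolding Zn_Suc Z_simps reg_normalising.simps
  proof (intro conjI allI impI)
    fix i assume "i \<le> zlen (mcod (zig_comp ?D x d))"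
    hence i: "i \<le> zlen (mcod x)" by (simp add: zig_comp_acc)
    have h: "hat (msing_map x) i \<le> zlen (mcod d)" using hat_le[of "msing_map x" i] lx xd by simp
    have isx: "iso ?D (mreg x i)" using Suc.prems(1) i by simp
    have nd: "normalising C l (mreg d (hat (msing_map x) i))" using Suc.prems(2) h by simp
    show "normalising C l (mreg (zig_comp ?D x d) i)" unfolding zig_comp_acc(4)[OF i]
      using iso_norm[OF cat isx nd] ax(4)[OF i] ad(4)[OF h] xd by (simp add: arr_def)
  next
    fix j assume "j < zlen (mdom (zig_comp ?D x d))"
    hence j: "j < zlen (mdom d)" by (simp add: zig_comp_acc)
    have k: "msing_map d ! j < zlen (mdom x)" using ld j xd by simp
    show "reg_normalising C l (msing (zig_comp ?D x d) j)" unfolding zig_comp_acc(5)[OF j[folded ld(1)]]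
      using Suc.IH[of "msing x (msing_map d ! j)" "msing d j"] Suc.prems(1,2) j k ax(5)[OF k] ad(5)[OF j] xd
      by (simp add: arr_def)
  qed
qed

lemma norm_pair_iso:
  assumes cat: "is_category C" and a: "normalising C l a" and b: "normalising C l b"
    and ab: "cCod (Zn C l) a = cCod (Zn C l) b"
    and t: "arr (Zn C l) t (cDom (Zn C l) a) (cDom (Zn C l) b)" "cComp (Zn C l) b t = a"
  shows "iso (Zn C l) t"
proof -
  let ?D = "Zn C l"
  have catD: "is_category ?D" by (rule Zn_category[OF cat])
  have da: "deg C l a" and db: "deg C l b" using a b unfolding normalising_def by auto
  have ma: "monic ?D a" and mb: "monic ?D b" using degQ(1)[OF cat da] degQ(1)[OF cat db] by auto
  have aa: "arr ?D a (cDom ?D a) (cCod ?D b)" and ab': "arr ?D b (cDom ?D b) (cCod ?D b)"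
    using degQ(1)[OF cat da] degQ(1)[OF cat db] ab by (auto simp: arr_def)
  obtain u where u: "u \<in> cArr ?D" "cDom ?D u = cDom ?D b" "cCod ?D u = cDom ?D a" "cComp ?D a u = b"
    using b da ab unfolding normalising_def factors_through_def by metis
  have au: "arr ?D u (cDom ?D b) (cDom ?D a)" using u by (simp add: arr_def)
  have ut: "arr ?D (cComp ?D u t) (cDom ?D a) (cDom ?D a)" using cat_comp[OF catD t(1) au] .
  have tu: "arr ?D (cComp ?D t u) (cDom ?D b) (cDom ?D b)" using cat_comp[OF catD au t(1)] .
  have ida: "arr ?D (cId ?D (cDom ?D a)) (cDom ?D a) (cDom ?D a)" using cat_id[OF catD] cat_arr_obj[OF catD aa] by auto
  have idb: "arr ?D (cId ?D (cDom ?D b)) (cDom ?D b) (cDom ?D b)" using cat_id[OF catD] cat_arr_obj[OF catD ab'] by auto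
  have "cComp ?D a (cComp ?D u t) = cComp ?D (cComp ?D a u) t" using cat_assoc[OF catD t(1) au aa] .
  also have "\<dots> = a" using u(4) t(2) by simp
  also have "\<dots> = cComp ?D a (cId ?D (cDom ?D a))" using cat_idr[OF catD aa] by simp
  finally have 1: "cComp ?D u t = cId ?D (cDom ?D a)" using monic_cancel[OF ma ut ida] aa by (simp add: arr_def)
  have "cComp ?D b (cComp ?D t u) = cComp ?D (cComp ?D b t) u" using cat_assoc[OF catD au t(1) ab'] .
  also have "\<dots> = b" using u(4) t(2) by simp
  also have "\<dots> = cComp ?D b (cId ?D (cDom ?D b))" using cat_idr[OF catD ab'] by simp
  finally have 2: "cComp ?D t u = cId ?D (cDom ?D b)" using monic_cancel[OF mb tu idb] ab' by (simp add: arr_def)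
  show ?thesis unfolding iso_def using t(1) au 1 2 by (auto simp: arr_def)
qed

definition MAINP :: "('o, 'm) cat \<Rightarrow> nat \<Rightarrow> bool" where
  "MAINP C n \<longleftrightarrow> (\<forall>X (F :: ('o, 'm) zm set) d. X \<in> cObj (Zn C n) \<longrightarrow> globular_obj C n X \<longrightarrow>
     (\<forall>f\<in>F. f \<in> cArr (Zn C n) \<and> cCod (Zn C n) f = X \<and> reg_normalising C n f) \<longrightarrow>
     rel_normalisation C n X F (\<lambda>x. x) d \<longrightarrow>
     globular_obj C n (cDom (Zn C n) d) \<and> reg_normalising C n d \<and>
     (\<forall>f\<in>F. \<forall>g. g \<in> cArr (Zn C n) \<and> cDom (Zn C n) g = cDom (Zn C n) f \<and> cCod (Zn C n) g = cDom (Zn C n) d \<and>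
        cComp (Zn C n) d g = f \<longrightarrow> globular_map C n g))"

lemma MAINP_0: "MAINP C 0" unfolding MAINP_def by simp

lemma norm_glob:
  fixes C :: "('o, 'm) cat"
  assumes M: "MAINP C m" and n: "normalising C m e" and Y: "Y \<in> cObj (Zn C m)" "globular_obj C m Y" "cCod (Zn C m) e = Y"
  shows "globular_obj C m (cDom (Zn C m) e) \<and> reg_normalising C m e"
proof -
  have "rel_normalisation C m Y ({} :: ('o, 'm) zm set) (\<lambda>x. x) e"
    using n Y unfolding normalising_def rel_normalisation_def by simp
  thus ?thesis using M Y unfolding MAINP_def by blast
qed

lemma zig_map_loc:
  assumes "zig_map D f"
  shows "\<And>j. j < zlen (mdom f) \<Longrightarrow> (j = 0 \<or> msing_map f!(j-1) < msing_map f!j) \<Longrightarrow>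
           cComp D (msing f j) (zx (mdom f) j) = cComp D (zx (mcod f) (msing_map f!j)) (mreg f (msing_map f!j))"
    "\<And>j. j < zlen (mdom f) \<Longrightarrow> (Suc j = zlen (mdom f) \<or> msing_map f!j < msing_map f!Suc j) \<Longrightarrow>
           cComp D (msing f j) (zy (mdom f) j) = cComp D (zy (mcod f) (msing_map f!j)) (mreg f (Suc (msing_map f!j)))"
proof -
  obtain X Y fs fr fsg where F: "f = ZM X Y fs fr fsg" "zm_typ D X Y fs fr fsg" "zm_loc D X Y fs fr fsg"
    using assms by (rule zig_mapE)
  show "\<And>j. j < zlen (mdom f) \<Longrightarrow> (j = 0 \<or> msing_map f!(j-1) < msing_map f!j) \<Longrightarrow>
           cComp D (msing f j) (zx (mdom f) j) = cComp D (zx (mcod f) (msing_map f!j)) (mreg f (msing_map f!j))"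
    "\<And>j. j < zlen (mdom f) \<Longrightarrow> (Suc j = zlen (mdom f) \<or> msing_map f!j < msing_map f!Suc j) \<Longrightarrow>
           cComp D (msing f j) (zy (mdom f) j) = cComp D (zy (mcod f) (msing_map f!j)) (mreg f (Suc (msing_map f!j)))"
    using F(3) unfolding F(1) zm_loc_def mdom_ZM mcod_ZM msing_map_ZM msing_ZM mreg_ZM by blast+
qed

lemma comp_facts:
  assumes dZ: "zig_map D d" and gZ: "zig_map D g" and dg: "mdom d = mcod g" and f: "zig_comp D d g = f"
  shows "msing_map f = map (\<lambda>p. msing_map d ! (msing_map g ! p)) [0..<zlen (mdom g)]"
    "\<And>i. i \<le> zlen (mcod d) \<Longrightarrow> mreg f i = cComp D (mreg d i) (mreg g (hat (msing_map d) i))"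
    "\<And>p. p < zlen (mdom g) \<Longrightarrow> msing f p = cComp D (msing d (msing_map g ! p)) (msing g p)"
    "\<And>i. hat (msing_map f) i = hat (msing_map g) (hat (msing_map d) i)"
    "mdom f = mdom g" "mcod f = mcod d"
proof -
  note ag = zig_map_acc[OF gZ] and ad = zig_map_acc[OF dZ]
  have lg: "length (msing_map g) = zlen (mdom g)" "\<forall>p<zlen (mdom g). msing_map g ! p < zlen (mcod g)" using ag(3) unfolding delta_map_def by auto
  have ld: "length (msing_map d) = zlen (mdom d)" "sorted (msing_map d)" using ad(3) unfolding delta_map_def by auto
  show fs: "msing_map f = map (\<lambda>p. msing_map d ! (msing_map g ! p)) [0..<zlen (mdom g)]"
    using f lg by (auto simp: zig_comp_acc)
  show "\<And>i. i \<le> zlen (mcod d) \<Longrightarrow> mreg f i = cComp D (mreg d i) (mreg g (hat (msing_map d) i))"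
    using f by (auto simp: zig_comp_acc)
  show "\<And>p. p < zlen (mdom g) \<Longrightarrow> msing f p = cComp D (msing d (msing_map g ! p)) (msing g p)"
    using f lg by (auto simp: zig_comp_acc)
  show "\<And>i. hat (msing_map f) i = hat (msing_map g) (hat (msing_map d) i)"
    unfolding fs lg(1)[symmetric] by (rule hat_comp[OF ld(2)]) (use lg ld dg in auto)
  show "mdom f = mdom g" "mcod f = mcod d" using f by (auto simp: zig_comp_acc)
qed

lemma main_step:
  fixes C :: "('o, 'm) cat"
  assumes cat: "is_category C" and IH: "MAINP C m"
  shows "MAINP C (Suc m)"
  unfolding MAINP_def
proof (intro allI impI)
  fix X :: "('o, 'm) zo" and F :: "('o, 'm) zm set" and d
  assume X0: "X \<in> cObj (Zn C (Suc m))" and gX0: "globular_obj C (Suc m) X"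
    and Fs0: "\<forall>f\<in>F. f \<in> cArr (Zn C (Suc m)) \<and> cCod (Zn C (Suc m)) f = X \<and> reg_normalising C (Suc m) f"
    and rn0: "rel_normalisation C (Suc m) X F (\<lambda>x. x) d"
  let ?D = "Zn C m"
  have catD: "is_category ?D" using Zn_category[OF cat] by simp
  have oX: "zig_obj ?D X" using X0 by simp
  have degA: "\<And>e. deg C m e \<Longrightarrow> e \<in> cArr ?D \<and> monic ?D e" and isodeg: "\<And>e. iso ?D e \<Longrightarrow> deg C m e"
    using degQ[OF cat] by auto
  have fsF: "\<And>f. f \<in> F \<Longrightarrow> zig_map ?D f \<and> mcod f = X \<and> (\<forall>i \<le> zlen X. normalising C m (mreg f i)) \<and>
      (\<forall>p < zlen (mdom f). reg_normalising C m (msing f p))"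
    using Fs0 by auto
  have degd: "deg C (Suc m) d" and cd: "mcod d = X" and fd: "\<And>f. f \<in> F \<Longrightarrow> factors_through (Z ?D) f d"
    and mind: "\<And>d'. deg C (Suc m) d' \<Longrightarrow> mcod d' = X \<Longrightarrow> (\<forall>f\<in>F. factors_through (Z ?D) f d') \<Longrightarrow> factors_through (Z ?D) d d'"
    using rn0 unfolding rel_normalisation_def by auto
  have gXr: "\<And>i. i \<le> zlen X \<Longrightarrow> globular_obj C m (zr X i)"
   and gXs: "\<And>j. j < zlen X \<Longrightarrow> globular_obj C m (zs X j) \<and> globular_map C m (zx X j) \<and> globular_map C m (zy X j)"
    using gX0 by auto
  have obX: "\<And>i. i \<le> zlen X \<Longrightarrow> zr X i \<in> cObj ?D" "\<And>j. j < zlen X \<Longrightarrow> zs X j \<in> cObj ?D"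
    and axX: "\<And>j. j < zlen X \<Longrightarrow> arr ?D (zx X j) (zr X j) (zs X j)"
    and ayX: "\<And>j. j < zlen X \<Longrightarrow> arr ?D (zy X j) (zr X (Suc j)) (zs X j)"
    using zig_obj_arr[OF oX] by auto
  note ds = deg_slices[OF cat Qlev_all[OF cat] degd, folded]
  have dZ: "zig_map ?D d" and sd: "sorted_wrt (<) (msing_map d)"
    and ddr: "\<And>i. i \<le> zlen X \<Longrightarrow> deg C m (mreg d i)" and dds: "\<And>j. j < zlen (mdom d) \<Longrightarrow> deg C m (msing d j)"
    using ds cd unfolding delta_mono_def by auto
  define N where "N = mdom d"
  define L where "L = zlen X"
  define K where "K = zlen N"
  define \<delta> where "\<delta> = msing_map d"
  note ad = zig_map_acc[OF dZ, folded N_def \<delta>_def, unfolded cd]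
  have oN: "zig_obj ?D N" using ad(1) .
  have ld: "length \<delta> = K" "\<And>j. j < K \<Longrightarrow> \<delta>!j < L" "sorted \<delta>" using ad(3) unfolding delta_map_def K_def L_def by auto
  have sd': "sorted_wrt (<) \<delta>" using sd \<delta>_def by simp
  have adr: "\<And>i. i \<le> L \<Longrightarrow> arr ?D (mreg d i) (zr N (hat \<delta> i)) (zr X i)" using ad(4) L_def by simp
  have ads: "\<And>j. j < K \<Longrightarrow> arr ?D (msing d j) (zs N j) (zs X (\<delta>!j))" using ad(5) K_def by simp
  have axN: "\<And>j. j < K \<Longrightarrow> arr ?D (zx N j) (zr N j) (zs N j)" and ayN: "\<And>j. j < K \<Longrightarrow> arr ?D (zy N j) (zr N (Suc j)) (zs N j)"
    using zig_obj_arr[OF oN] K_def by auto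
  have hd: "\<And>j. j < K \<Longrightarrow> hat \<delta> (\<delta>!j) = j \<and> hat \<delta> (Suc (\<delta>!j)) = Suc j" using hat_strict_at[OF sd'] ld(1) by auto
  have dinj: "\<And>x y. x < K \<Longrightarrow> y < K \<Longrightarrow> \<delta>!x = \<delta>!y \<Longrightarrow> x = y"
  proof -
    fix x y assume xy: "x < K" "y < K" "\<delta>!x = \<delta>!y"
    show "x = y"
    proof (rule ccontr)
      assume "x \<noteq> y"
      hence "x < y \<or> y < x" by auto
      thus False using sorted_wrt_nth_less[OF sd', of x y] sorted_wrt_nth_less[OF sd', of y x] xy ld(1) by auto
    qed
  qed
  have dF1: "\<And>j. j < K \<Longrightarrow> cComp ?D (msing d j) (zx N j) = cComp ?D (zx X (\<delta>!j)) (mreg d (\<delta>!j))"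
  proof -
    fix j assume j: "j < K"
    have c: "j = 0 \<or> \<delta>!(j-1) < \<delta>!j" using sorted_wrt_nth_less[OF sd', of "j-1" j] j ld(1) by (cases j) auto
    show "?thesis j" using zig_map_loc(1)[OF dZ, folded N_def \<delta>_def K_def] j c cd by simp
  qed
  have dF2: "\<And>j. j < K \<Longrightarrow> cComp ?D (msing d j) (zy N j) = cComp ?D (zy X (\<delta>!j)) (mreg d (Suc (\<delta>!j)))"
  proof -
    fix j assume j: "j < K"
    have c: "Suc j = K \<or> \<delta>!j < \<delta>!Suc j" using sorted_wrt_nth_less[OF sd', of j "Suc j"] j ld(1) by (cases "Suc j = K") auto
    show "?thesis j" using zig_map_loc(2)[OF dZ, folded N_def \<delta>_def K_def] j c cd by simp
  qed
  have gf: "\<And>f. f \<in> F \<Longrightarrow> \<exists>g. zig_map ?D g \<and> mdom g = mdom f \<and> mcod g = N \<and> zig_comp ?D d g = f"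
    using fd unfolding factors_through_def N_def by auto
  have cf: "msing_map f = map (\<lambda>p. \<delta> ! (msing_map g ! p)) [0..<zlen (mdom g)] \<and>
      (\<forall>i \<le> L. mreg f i = cComp ?D (mreg d i) (mreg g (hat \<delta> i))) \<and>
      (\<forall>p < zlen (mdom g). msing f p = cComp ?D (msing d (msing_map g ! p)) (msing g p)) \<and>
      (\<forall>i. hat (msing_map f) i = hat (msing_map g) (hat \<delta> i)) \<and>
      (\<forall>p < zlen (mdom g). msing_map g ! p < K)"
    if g: "zig_map ?D g" "mcod g = N" "zig_comp ?D d g = f" for f g
  proof -
    have "mdom d = mcod g" using g N_def by simp
    note c = comp_facts[OF dZ g(1) this g(3), folded \<delta>_def, unfolded cd, folded L_def]
    have "\<forall>p < zlen (mdom g). msing_map g ! p < K" using zig_map_acc(3)[OF g(1)] g(2) K_def unfolding delta_map_def by auto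
    thus ?thesis using c by auto
  qed
  have normB: "normalising C m (mreg d i)" if i: "i \<le> L" for i
    unfolding normalising_def
  proof (intro conjI allI impI)
    show "deg C m (mreg d i)" using ddr i L_def by simp
    fix e assume e: "deg C m e \<and> cCod (Zn C m) e = cCod (Zn C m) (mreg d i)"
    have eD: "deg C m e" and ce: "cCod ?D e = zr X i" using e adr[OF i] by (auto simp: arr_def)
    have eA: "e \<in> cArr ?D" "monic ?D e" using degA[OF eD] by auto
    define R where "R k = (if k = i then e else cId ?D (zr X k))" for k
    define S where "S k = cId ?D (zs X k)" for k
    define NX where "NX k = (if k = i then cComp ?D (zx X k) e else zx X k)" for k
    define NY where "NY k = (if Suc k = i then cComp ?D (zy X k) e else zy X k)" for k
    have ae: "arr ?D e (cDom ?D e) (zr X i)" using eA ce by (simp add: arr_def)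
    have pR: "\<And>k. k \<le> zlen X \<Longrightarrow> R k \<in> cArr ?D \<and> cCod ?D (R k) = zr X k"
      using eA ce cat_id[OF catD obX(1)] unfolding R_def by (auto simp: arr_def)
    have pS: "\<And>k. k < zlen X \<Longrightarrow> S k \<in> cArr ?D \<and> cCod ?D (S k) = zs X k"
      using cat_id[OF catD obX(2)] unfolding S_def by (auto simp: arr_def)
    have pNX: "\<And>k. k < zlen X \<Longrightarrow> arr ?D (NX k) (cDom ?D (R k)) (cDom ?D (S k)) \<and> cComp ?D (S k) (NX k) = cComp ?D (zx X k) (R k)"
    proof -
      fix k assume k: "k < zlen X"
      have dS: "cDom ?D (S k) = zs X k" using cat_id[OF catD obX(2)[OF k]] unfolding S_def by (simp add: arr_def)
      show "?thesis k"
      proof (cases "k = i")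
        case True
        have a: "arr ?D (cComp ?D (zx X k) e) (cDom ?D e) (zs X k)" using cat_comp[OF catD ae] axX[OF k] True by simp
        thus ?thesis using True dS cat_idl[OF catD a] unfolding NX_def R_def S_def by simp
      next
        case False
        thus ?thesis using dS cat_idl[OF catD axX[OF k]] cat_idr[OF catD axX[OF k]] cat_id[OF catD obX(1)[of k]] k axX[OF k]
          unfolding NX_def R_def S_def by (simp add: arr_def)
      qed
    qed
    have pNY: "\<And>k. k < zlen X \<Longrightarrow> arr ?D (NY k) (cDom ?D (R (Suc k))) (cDom ?D (S k)) \<and> cComp ?D (S k) (NY k) = cComp ?D (zy X k) (R (Suc k))"
    proof -
      fix k assume k: "k < zlen X"
      have dS: "cDom ?D (S k) = zs X k" using cat_id[OF catD obX(2)[OF k]] unfolding S_def by (simp add: arr_def)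
      show "?thesis k"
      proof (cases "Suc k = i")
        case True
        have a: "arr ?D (cComp ?D (zy X k) e) (cDom ?D e) (zs X k)" using cat_comp[OF catD ae] ayX[OF k] True by simp
        thus ?thesis using True dS cat_idl[OF catD a] unfolding NY_def R_def S_def by simp
      next
        case False
        have k': "Suc k \<le> zlen X" using k by simp
        thus ?thesis using False dS cat_idl[OF catD ayX[OF k]] cat_idr[OF catD ayX[OF k]] cat_id[OF catD obX(1)[OF k']] ayX[OF k]
          unfolding NY_def R_def S_def by (simp add: arr_def)
      qed
    qed
    have pR0: "\<forall>k. k \<le> zlen X \<longrightarrow> R k \<in> cArr ?D \<and> cCod ?D (R k) = zr X k" using pR by blast
    have pS0: "\<forall>k. k < zlen X \<longrightarrow> S k \<in> cArr ?D \<and> cCod ?D (S k) = zs X k" using pS by blast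
    have pNX0: "\<forall>k. k < zlen X \<longrightarrow> arr ?D (NX k) (cDom ?D (R k)) (cDom ?D (S k)) \<and> cComp ?D (S k) (NX k) = cComp ?D (zx X k) (R k)" using pNX by blast
    have pNY0: "\<forall>k. k < zlen X \<longrightarrow> arr ?D (NY k) (cDom ?D (R (Suc k))) (cDom ?D (S k)) \<and> cComp ?D (S k) (NY k) = cComp ?D (zy X k) (R (Suc k))" using pNY by blast
    note vm = vert_map[OF catD oX pR0 pS0 pNX0 pNY0]
    let ?P = "ZM (ZZ (map (\<lambda>i. cDom ?D (R i)) [0..<Suc (zlen X)]) (map (\<lambda>k. cDom ?D (S k)) [0..<zlen X]) (map NX [0..<zlen X]) (map NY [0..<zlen X])) X [0..<zlen X] (map R [0..<Suc (zlen X)]) (map S [0..<zlen X])"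
    have degR: "\<And>k. k \<le> zlen X \<Longrightarrow> deg C m (R k)" using eD isodeg iso_id[OF catD obX(1)] unfolding R_def by auto
    have degS: "\<And>k. k < zlen X \<Longrightarrow> deg C m (S k)" using isodeg iso_id[OF catD obX(2)] unfolding S_def by auto
    have Pdeg: "deg C (Suc m) ?P"
    proof -
      have "parallel_deg ?D (deg C m) ?P" unfolding parallel_deg_def using vm degR degS by auto
      hence "comp_closure (Z ?D) (\<lambda>g. simple_deg ?D g \<or> parallel_deg ?D (deg C m) g) ?P"
        using vm by (intro comp_closure.gen) auto
      thus ?thesis by simp
    qed
    have facP: "factors_through (Z ?D) f ?P" if fF: "f \<in> F" for f
    proof -
      note ff = fsF[OF fF]
      show ?thesis
      proof (rule fact_vertical[OF catD vm(1,2,4)])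
        show "\<And>k. k \<le> zlen X \<Longrightarrow> monic ?D (mreg ?P k)" using vm degR degA by auto
        show "\<And>k. k < zlen X \<Longrightarrow> monic ?D (msing ?P k)" using vm degS degA by auto
        show "zig_map ?D f" "mcod f = X" using ff by auto
      next
        fix k assume k: "k \<le> zlen X"
        have afk: "arr ?D (mreg f k) (zr (mdom f) (hat (msing_map f) k)) (zr X k)" using zig_map_acc(4)[of ?D f k] ff k by auto
        show "\<exists>t. arr ?D t (zr (mdom f) (hat (msing_map f) k)) (cDom ?D (mreg ?P k)) \<and> cComp ?D (mreg ?P k) t = mreg f k"
        proof (cases "k = i")
          case True
          have "factors_through ?D (mreg f k) e" using ff k eD ce afk True unfolding normalising_def by (auto simp: arr_def)
          then obtain t where t: "t \<in> cArr ?D" "cDom ?D t = cDom ?D (mreg f k)" "cCod ?D t = cDom ?D e" "cComp ?D e t = mreg f k"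
            unfolding factors_through_def by blast
          show ?thesis using t afk vm(6)[OF k] True unfolding R_def by (intro exI[of _ t]) (auto simp: arr_def)
        next
          case False
          show ?thesis using afk vm(6)[OF k] False cat_idl[OF catD afk] cat_id[OF catD obX(1)[OF k]] unfolding R_def
            by (intro exI[of _ "mreg f k"]) (auto simp: arr_def)
        qed
      next
        fix p assume p: "p < zlen (mdom f)"
        have lt: "msing_map f ! p < zlen X" using zig_map_acc(3)[of ?D f] ff p unfolding delta_map_def by auto
        have afp: "arr ?D (msing f p) (zs (mdom f) p) (zs X (msing_map f ! p))" using zig_map_acc(5)[of ?D f p] ff p by auto
        show "\<exists>u. arr ?D u (zs (mdom f) p) (cDom ?D (msing ?P (msing_map f ! p))) \<and> cComp ?D (msing ?P (msing_map f ! p)) u = msing f p"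
          using afp vm(7)[OF lt] cat_idl[OF catD afp] cat_id[OF catD obX(2)[OF lt]] unfolding S_def
          by (intro exI[of _ "msing f p"]) (auto simp: arr_def)
      qed
    qed
    have "factors_through (Z ?D) d ?P" using mind[OF Pdeg] vm(4) facP by auto
    then obtain h where h: "zig_map ?D h" "mdom h = N" "mcod h = mdom ?P" "zig_comp ?D ?P h = d"
      unfolding factors_through_def N_def by auto
    have hs: "msing_map h ! j < zlen X" if "j < K" for j
      using zig_map_acc(3)[OF h(1)] h(2,3) vm(8) that K_def unfolding delta_map_def by auto
    have mh: "msing_map h = \<delta>"
    proof -
      have "msing_map d = map (\<lambda>j. [0..<zlen X] ! (msing_map h ! j)) [0..<length (msing_map h)]"
        using h(4) vm(5) by (auto simp: zig_comp_acc)
      moreover have "length (msing_map h) = K" using zig_map_acc(3)[OF h(1)] h(2) K_def unfolding delta_map_def by auto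
      ultimately show ?thesis using hs \<delta>_def by (intro nth_equalityI) auto
    qed
    have eqd: "mreg d i = cComp ?D e (mreg h i)"
      using h(4)[symmetric] i vm(6)[of i] hat_upt[of i "zlen X"] vm(5) L_def unfolding R_def by (simp add: zig_comp_acc)
    have ahi: "arr ?D (mreg h i) (zr N (hat \<delta> i)) (cDom ?D e)"
      using zig_map_acc(4)[OF h(1), of i] h(2,3) vm(4,8,9) i L_def mh pR unfolding R_def by (auto simp: arr_def)
    show "factors_through (Zn C m) (mreg d i) e" unfolding factors_through_def
      using ahi eqd adr[OF i] by (intro bexI[of _ "mreg h i"]) (auto simp: arr_def)
  qed
  have normB_glob: "globular_obj C m (cDom ?D (mreg d i)) \<and> reg_normalising C m (mreg d i)" if i: "i \<le> L" for i
    using norm_glob[OF IH normB[OF i], of "zr X i"] obX(1) gXr adr[OF i] i L_def by (auto simp: arr_def)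
  define Sk where "Sk j = {cComp ?D (zx X (\<delta>!j)) (mreg d (\<delta>!j)), cComp ?D (zy X (\<delta>!j)) (mreg d (Suc (\<delta>!j)))} \<union>
      {msing f p | f p. f \<in> F \<and> p < zlen (mdom f) \<and> msing_map f ! p = \<delta>!j}" for j
  have relC: "rel_normalisation C m (zs X (\<delta>!j)) (Sk j) (\<lambda>x. x) (msing d j)" if j: "j < K" for j
  proof -
    let ?k = "\<delta>!j"
    have k: "?k < L" "?k \<le> L" "Suc ?k \<le> L" using ld(2)[OF j] by auto
    have k': "?k < zlen X" using k L_def by simp
    have hj: "hat \<delta> ?k = j" "hat \<delta> (Suc ?k) = Suc j" using hd[OF j] by auto
    have cx: "arr ?D (cComp ?D (zx X ?k) (mreg d ?k)) (zr N j) (zs X ?k)"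
      using cat_comp[OF catD adr[OF k(2)] axX[OF k']] hj by simp
    have cy: "arr ?D (cComp ?D (zy X ?k) (mreg d (Suc ?k))) (zr N (Suc j)) (zs X ?k)"
      using cat_comp[OF catD adr[OF k(3)] ayX[OF k']] hj by simp
    have fac1: "factors_through ?D s (msing d j)" if s: "s \<in> Sk j" for s
    proof -
      from s consider (x) "s = cComp ?D (zx X ?k) (mreg d ?k)" | (y) "s = cComp ?D (zy X ?k) (mreg d (Suc ?k))"
        | (f) f p where "f \<in> F" "p < zlen (mdom f)" "msing_map f ! p = ?k" "s = msing f p"
        unfolding Sk_def by blast
      then show ?thesis
      proof cases
        case x thus ?thesis unfolding factors_through_def using axN[OF j] ads[OF j] dF1[OF j] cx
          by (intro bexI[of _ "zx N j"]) (auto simp: arr_def)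
      next
        case y thus ?thesis unfolding factors_through_def using ayN[OF j] ads[OF j] dF2[OF j] cy
          by (intro bexI[of _ "zy N j"]) (auto simp: arr_def)
      next
        case (f f p)
        obtain g where g: "zig_map ?D g" "mdom g = mdom f" "mcod g = N" "zig_comp ?D d g = f" using gf[OF f(1)] by blast
        note c = cf[OF g(1,3,4)]
        have p: "p < zlen (mdom g)" using f(2) g(2) by simp
        have gp: "msing_map g ! p = j" using dinj[of "msing_map g ! p" j] c p f(3) j by auto
        have ag: "arr ?D (msing g p) (zs (mdom f) p) (zs N j)" using zig_map_acc(5)[OF g(1) p] g gp by simp
        show ?thesis unfolding factors_through_def using ag ads[OF j] c p gp f(4) cat_comp[OF catD ag ads[OF j]]
          by (intro bexI[of _ "msing g p"]) (auto simp: arr_def)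
      qed
    qed
    have minC: "factors_through ?D (msing d j) e" if e: "deg C m e" "cCod ?D e = zs X ?k" "\<forall>s\<in>Sk j. factors_through ?D s e" for e
    proof -
      have eA: "e \<in> cArr ?D" "monic ?D e" using degA[OF e(1)] by auto
      have ae: "arr ?D e (cDom ?D e) (zs X ?k)" using eA e(2) by (simp add: arr_def)
      have "factors_through ?D (cComp ?D (zx X ?k) (mreg d ?k)) e" using e(3) unfolding Sk_def by auto
      then obtain nx where nx: "arr ?D nx (zr N j) (cDom ?D e)" "cComp ?D e nx = cComp ?D (zx X ?k) (mreg d ?k)"
        using cx unfolding factors_through_def arr_def by auto
      have "factors_through ?D (cComp ?D (zy X ?k) (mreg d (Suc ?k))) e" using e(3) unfolding Sk_def by auto
      then obtain ny where ny: "arr ?D ny (zr N (Suc j)) (cDom ?D e)" "cComp ?D e ny = cComp ?D (zy X ?k) (mreg d (Suc ?k))"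
        using cy unfolding factors_through_def arr_def by auto
      define R where "R i' = mreg d i'" for i'
      define S where "S k' = (if k' = ?k then e else cId ?D (zs X k'))" for k'
      define NX where "NX k' = (if k' = ?k then nx else cComp ?D (zx X k') (mreg d k'))" for k'
      define NY where "NY k' = (if k' = ?k then ny else cComp ?D (zy X k') (mreg d (Suc k')))" for k'
      have pR0: "\<forall>k. k \<le> zlen X \<longrightarrow> R k \<in> cArr ?D \<and> cCod ?D (R k) = zr X k"
        using adr L_def unfolding R_def by (auto simp: arr_def)
      have pS0: "\<forall>k. k < zlen X \<longrightarrow> S k \<in> cArr ?D \<and> cCod ?D (S k) = zs X k"
        using cat_id[OF catD obX(2)] eA e(2) unfolding S_def by (auto simp: arr_def)
      have dS: "\<And>k'. k' < zlen X \<Longrightarrow> k' \<noteq> ?k \<Longrightarrow> cDom ?D (S k') = zs X k'"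
        using cat_id[OF catD obX(2)] unfolding S_def by (auto simp: arr_def)
      have pNX0: "\<forall>k. k < zlen X \<longrightarrow> arr ?D (NX k) (cDom ?D (R k)) (cDom ?D (S k)) \<and> cComp ?D (S k) (NX k) = cComp ?D (zx X k) (R k)"
      proof (intro allI impI)
        fix k'' assume k'': "k'' < zlen X"
        show "arr ?D (NX k'') (cDom ?D (R k'')) (cDom ?D (S k'')) \<and> cComp ?D (S k'') (NX k'') = cComp ?D (zx X k'') (R k'')"
        proof (cases "k'' = ?k")
          case True thus ?thesis using nx adr[OF k(2)] hj unfolding NX_def R_def S_def by (simp add: arr_def)
        next
          case False
          have kk: "k'' \<le> L" using k'' L_def by simp
          have a: "arr ?D (cComp ?D (zx X k'') (mreg d k'')) (zr N (hat \<delta> k'')) (zs X k'')"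
            using cat_comp[OF catD adr[OF kk] axX[OF k'']] .
          thus ?thesis using False dS[OF k'' False] cat_idl[OF catD a] adr[OF kk] unfolding NX_def R_def S_def by (simp add: arr_def)
        qed
      qed
      have pNY0: "\<forall>k. k < zlen X \<longrightarrow> arr ?D (NY k) (cDom ?D (R (Suc k))) (cDom ?D (S k)) \<and> cComp ?D (S k) (NY k) = cComp ?D (zy X k) (R (Suc k))"
      proof (intro allI impI)
        fix k'' assume k'': "k'' < zlen X"
        show "arr ?D (NY k'') (cDom ?D (R (Suc k''))) (cDom ?D (S k'')) \<and> cComp ?D (S k'') (NY k'') = cComp ?D (zy X k'') (R (Suc k''))"
        proof (cases "k'' = ?k")
          case True thus ?thesis using ny adr[OF k(3)] hj unfolding NY_def R_def S_def by (simp add: arr_def)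
        next
          case False
          have kk: "Suc k'' \<le> L" using k'' L_def by simp
          have a: "arr ?D (cComp ?D (zy X k'') (mreg d (Suc k''))) (zr N (hat \<delta> (Suc k''))) (zs X k'')"
            using cat_comp[OF catD adr[OF kk] ayX[OF k'']] .
          thus ?thesis using False dS[OF k'' False] cat_idl[OF catD a] adr[OF kk] unfolding NY_def R_def S_def by (simp add: arr_def)
        qed
      qed
      note vm = vert_map[OF catD oX pR0 pS0 pNX0 pNY0]
      let ?P = "ZM (ZZ (map (\<lambda>i. cDom ?D (R i)) [0..<Suc (zlen X)]) (map (\<lambda>k. cDom ?D (S k)) [0..<zlen X]) (map NX [0..<zlen X]) (map NY [0..<zlen X])) X [0..<zlen X] (map R [0..<Suc (zlen X)]) (map S [0..<zlen X])"
      have degR: "\<And>k. k \<le> zlen X \<Longrightarrow> deg C m (R k)" using ddr unfolding R_def by auto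
      have degS: "\<And>k. k < zlen X \<Longrightarrow> deg C m (S k)" using e(1) isodeg iso_id[OF catD obX(2)] unfolding S_def by auto
      have Pdeg: "deg C (Suc m) ?P"
      proof -
        have "parallel_deg ?D (deg C m) ?P" unfolding parallel_deg_def using vm degR degS by auto
        hence "comp_closure (Z ?D) (\<lambda>g. simple_deg ?D g \<or> parallel_deg ?D (deg C m) g) ?P"
          using vm by (intro comp_closure.gen) auto
        thus ?thesis by simp
      qed
      have facP: "factors_through (Z ?D) f ?P" if fF: "f \<in> F" for f
      proof -
        note ff = fsF[OF fF]
        obtain g where g: "zig_map ?D g" "mdom g = mdom f" "mcod g = N" "zig_comp ?D d g = f" using gf[OF fF] by blast
        note c = cf[OF g(1,3,4)]
        show ?thesis
        proof (rule fact_vertical[OF catD vm(1,2,4)])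
          show "\<And>k. k \<le> zlen X \<Longrightarrow> monic ?D (mreg ?P k)" using vm degR degA by auto
          show "\<And>k. k < zlen X \<Longrightarrow> monic ?D (msing ?P k)" using vm degS degA by auto
          show "zig_map ?D f" "mcod f = X" using ff by auto
        next
          fix k'' assume k'': "k'' \<le> zlen X"
          have kk: "k'' \<le> L" using k'' L_def by simp
          have hq: "hat \<delta> k'' \<le> K" using hat_le[of \<delta> k''] ld(1) by simp
          have agq: "arr ?D (mreg g (hat \<delta> k'')) (zr (mdom f) (hat (msing_map f) k'')) (zr N (hat \<delta> k''))"
          proof -
            have hh: "hat (msing_map f) k'' = hat (msing_map g) (hat \<delta> k'')" using c by blast
            show ?thesis using zig_map_acc(4)[OF g(1), of "hat \<delta> k''"] g(2,3) hq K_def hh by simp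
          qed
          show "\<exists>t. arr ?D t (zr (mdom f) (hat (msing_map f) k'')) (cDom ?D (mreg ?P k'')) \<and> cComp ?D (mreg ?P k'') t = mreg f k''"
            using agq vm(6)[OF k''] c kk adr[OF kk] unfolding R_def by (intro exI[of _ "mreg g (hat \<delta> k'')"]) (auto simp: arr_def)
        next
          fix p assume p: "p < zlen (mdom f)"
          have lt: "msing_map f ! p < zlen X" using zig_map_acc(3)[of ?D f] ff p unfolding delta_map_def by auto
          have afp: "arr ?D (msing f p) (zs (mdom f) p) (zs X (msing_map f ! p))" using zig_map_acc(5)[of ?D f p] ff p by auto
          show "\<exists>u. arr ?D u (zs (mdom f) p) (cDom ?D (msing ?P (msing_map f ! p))) \<and> cComp ?D (msing ?P (msing_map f ! p)) u = msing f p"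
          proof (cases "msing_map f ! p = ?k")
            case True
            have "msing f p \<in> Sk j" unfolding Sk_def using fF p True by blast
            hence "factors_through ?D (msing f p) e" using e(3) by blast
            then obtain u where u: "u \<in> cArr ?D" "cDom ?D u = cDom ?D (msing f p)" "cCod ?D u = cDom ?D e" "cComp ?D e u = msing f p"
              unfolding factors_through_def by blast
            show ?thesis using u afp vm(7)[OF lt] True unfolding S_def by (intro exI[of _ u]) (auto simp: arr_def)
          next
            case False
            show ?thesis using afp vm(7)[OF lt] False cat_idl[OF catD afp] cat_id[OF catD obX(2)[OF lt]] unfolding S_def
              by (intro exI[of _ "msing f p"]) (auto simp: arr_def)
          qed
        qed
      qed
      have "factors_through (Z ?D) d ?P" using mind[OF Pdeg] vm(4) facP by auto
      then obtain h where h: "zig_map ?D h" "mdom h = N" "mcod h = mdom ?P" "zig_comp ?D ?P h = d"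
        unfolding factors_through_def N_def by auto
      have hs: "msing_map h ! j' < zlen X" if "j' < K" for j'
        using zig_map_acc(3)[OF h(1)] h(2,3) vm(8) that K_def unfolding delta_map_def by auto
      have mh: "msing_map h = \<delta>"
      proof -
        have "msing_map d = map (\<lambda>j. [0..<zlen X] ! (msing_map h ! j)) [0..<length (msing_map h)]"
          using h(4) vm(5) by (auto simp: zig_comp_acc)
        moreover have "length (msing_map h) = K" using zig_map_acc(3)[OF h(1)] h(2) K_def unfolding delta_map_def by auto
        ultimately show ?thesis using hs \<delta>_def by (intro nth_equalityI) auto
      qed
      have lh: "length (msing_map h) = K" using mh ld(1) by simp
      have eqd: "msing d j = cComp ?D e (msing h j)"
        using h(4)[symmetric] j vm(7)[OF k'] mh lh unfolding S_def by (simp add: zig_comp_acc)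
      have ahj: "arr ?D (msing h j) (zs N j) (cDom ?D e)"
        using zig_map_acc(5)[OF h(1), of j] h(2,3) vm(3,10) j K_def mh k' unfolding S_def by (auto simp: arr_def)
      show ?thesis unfolding factors_through_def
        using ahj eqd ads[OF j] by (intro bexI[of _ "msing h j"]) (auto simp: arr_def)
    qed
    show ?thesis unfolding rel_normalisation_def
      using dds[of j] ads[OF j] fac1 minC j K_def N_def by (auto simp: arr_def)
  qed
  have SkP: "\<forall>s\<in>Sk j. s \<in> cArr ?D \<and> cCod ?D s = zs X (\<delta>!j) \<and> reg_normalising C m s" if j: "j < K" for j
  proof
    fix s assume s: "s \<in> Sk j"
    let ?k = "\<delta>!j"
    have k: "?k < L" "?k \<le> L" "Suc ?k \<le> L" using ld(2)[OF j] by auto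
    have k': "?k < zlen X" using k L_def by simp
    from s consider (x) "s = cComp ?D (zx X ?k) (mreg d ?k)" | (y) "s = cComp ?D (zy X ?k) (mreg d (Suc ?k))"
      | (f) f p where "f \<in> F" "p < zlen (mdom f)" "msing_map f ! p = ?k" "s = msing f p"
      unfolding Sk_def by blast
    then show "s \<in> cArr ?D \<and> cCod ?D s = zs X ?k \<and> reg_normalising C m s"
    proof cases
      case x
      have a: "arr ?D (cComp ?D (zx X ?k) (mreg d ?k)) (zr N (hat \<delta> ?k)) (zs X ?k)" using cat_comp[OF catD adr[OF k(2)] axX[OF k']] .
      have "reg_normalising C m (cComp ?D (zx X ?k) (mreg d ?k))"
        using glob_regnorm[OF cat, of m "zx X ?k" "mreg d ?k"] gXs[OF k'] normB_glob[OF k(2)] axX[OF k'] adr[OF k(2)] by (simp add: arr_def)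
      thus ?thesis using a x by (simp add: arr_def)
    next
      case y
      have a: "arr ?D (cComp ?D (zy X ?k) (mreg d (Suc ?k))) (zr N (hat \<delta> (Suc ?k))) (zs X ?k)" using cat_comp[OF catD adr[OF k(3)] ayX[OF k']] .
      have "reg_normalising C m (cComp ?D (zy X ?k) (mreg d (Suc ?k)))"
        using glob_regnorm[OF cat, of m "zy X ?k" "mreg d (Suc ?k)"] gXs[OF k'] normB_glob[OF k(3)] ayX[OF k'] adr[OF k(3)] by (simp add: arr_def)
      thus ?thesis using a y by (simp add: arr_def)
    next
      case (f f p)
      note ff = fsF[OF f(1)]
      have afp: "arr ?D (msing f p) (zs (mdom f) p) (zs X (msing_map f ! p))" using zig_map_acc(5)[of ?D f p] ff f(2) by auto
      thus ?thesis using ff f by (simp add: arr_def)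
    qed
  qed
  have IHj: "globular_obj C m (zs N j) \<and> reg_normalising C m (msing d j) \<and>
     (\<forall>s\<in>Sk j. \<forall>g. g \<in> cArr ?D \<and> cDom ?D g = cDom ?D s \<and> cCod ?D g = zs N j \<and> cComp ?D (msing d j) g = s \<longrightarrow> globular_map C m g)"
    if j: "j < K" for j
  proof -
    have k': "\<delta>!j < zlen X" using ld(2)[OF j] L_def by simp
    have dom: "cDom ?D (msing d j) = zs N j" using ads[OF j] by (simp add: arr_def)
    have "globular_obj C m (cDom ?D (msing d j)) \<and> reg_normalising C m (msing d j) \<and>
     (\<forall>s\<in>Sk j. \<forall>g. g \<in> cArr ?D \<and> cDom ?D g = cDom ?D s \<and> cCod ?D g = cDom ?D (msing d j) \<and> cComp ?D (msing d j) g = s \<longrightarrow> globular_map C m g)"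
      using mp[OF mp[OF mp[OF mp[OF IH[unfolded MAINP_def, THEN spec[of _ "zs X (\<delta>!j)"], THEN spec[of _ "Sk j"], THEN spec[of _ "msing d j"]]
        obX(2)[OF k']] conjunct1[OF gXs[OF k']]] SkP[OF j]] relC[OF j]] by blast
    thus ?thesis using dom by simp
  qed
  have G1: "globular_obj C (Suc m) N"
    unfolding globular_obj.simps
  proof (intro conjI allI impI)
    fix q assume "q \<le> zlen N"
    hence q: "q \<le> length \<delta>" using ld(1) K_def by simp
    obtain i where i: "i \<le> L" "hat \<delta> i = q" using hat_surj[OF sd' _ q, of L] ld(1,2) by auto
    have "cDom ?D (mreg d i) = zr N q" using adr[OF i(1)] i(2) by (simp add: arr_def)
    thus "globular_obj C m (zr N q)" using normB_glob[OF i(1)] by simp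
  next
    fix j assume "j < zlen N"
    hence j: "j < K" using K_def by simp
    let ?k = "\<delta>!j"
    have k: "?k < L" "?k \<le> L" "Suc ?k \<le> L" using ld(2)[OF j] by auto
    have k': "?k < zlen X" using k L_def by simp
    have hj: "hat \<delta> ?k = j" "hat \<delta> (Suc ?k) = Suc j" using hd[OF j] by auto
    note I = IHj[OF j]
    show "globular_obj C m (zs N j)" using I by simp
    have sx: "cComp ?D (zx X ?k) (mreg d ?k) \<in> Sk j" unfolding Sk_def by simp
    have sy: "cComp ?D (zy X ?k) (mreg d (Suc ?k)) \<in> Sk j" unfolding Sk_def by simp
    have cx: "arr ?D (cComp ?D (zx X ?k) (mreg d ?k)) (zr N j) (zs X ?k)"
      using cat_comp[OF catD adr[OF k(2)] axX[OF k']] hj by simp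
    have cy: "arr ?D (cComp ?D (zy X ?k) (mreg d (Suc ?k))) (zr N (Suc j)) (zs X ?k)"
      using cat_comp[OF catD adr[OF k(3)] ayX[OF k']] hj by simp
    note I3 = I[THEN conjunct2, THEN conjunct2, rule_format]
    show "globular_map C m (zx N j)"
      by (rule I3[OF sx]) (use axN[OF j] cx dF1[OF j] in \<open>auto simp: arr_def\<close>)
    show "globular_map C m (zy N j)"
      by (rule I3[OF sy]) (use ayN[OF j] cy dF2[OF j] in \<open>auto simp: arr_def\<close>)
  qed
  have G2: "reg_normalising C (Suc m) d"
    unfolding reg_normalising.simps using normB IHj cd L_def K_def N_def by auto
  have G3: "globular_map C (Suc m) g" if fF: "f \<in> F" and g: "zig_map ?D g" "mdom g = mdom f" "mcod g = N" "zig_comp ?D d g = f" for f g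
    unfolding globular_map.simps
  proof (intro conjI allI impI)
    note ff = fsF[OF fF]
    note c = cf[OF g(1,3,4)]
    fix q assume "q \<le> zlen (mcod g)"
    hence q: "q \<le> length \<delta>" using ld(1) K_def g(3) by simp
    obtain i where i: "i \<le> L" "hat \<delta> i = q" using hat_surj[OF sd' _ q, of L] ld(1,2) by auto
    have i': "i \<le> zlen X" using i L_def by simp
    have qK: "q \<le> zlen (mcod g)" using q ld(1) K_def g(3) by simp
    have hh: "hat (msing_map f) i = hat (msing_map g) q" using c i by blast
    have agq: "arr ?D (mreg g q) (zr (mdom f) (hat (msing_map f) i)) (zr N q)"
      using zig_map_acc(4)[OF g(1) qK] g(2,3) hh by simp
    have afi: "arr ?D (mreg f i) (zr (mdom f) (hat (msing_map f) i)) (zr X i)" using zig_map_acc(4)[of ?D f i] ff i' by auto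
    have eq: "cComp ?D (mreg d i) (mreg g q) = mreg f i" using c i by auto
    show "iso ?D (mreg g q)"
    proof (rule norm_pair_iso[OF cat _ normB[OF i(1)]])
      show "normalising C m (mreg f i)" using ff i' by blast
      show "cCod ?D (mreg f i) = cCod ?D (mreg d i)" using afi adr[OF i(1)] by (simp add: arr_def)
      show "arr ?D (mreg g q) (cDom ?D (mreg f i)) (cDom ?D (mreg d i))" using agq afi adr[OF i(1)] i(2) by (simp add: arr_def)
      show "cComp ?D (mreg d i) (mreg g q) = mreg f i" by (fact eq)
    qed
  next
    note ff = fsF[OF fF]
    note c = cf[OF g(1,3,4)]
    fix p assume p: "p < zlen (mdom g)"
    define j where "j = msing_map g ! p"
    have j: "j < K" using c p j_def by blast
    have fp: "msing_map f ! p = \<delta>!j" using c p j_def by simp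
    have sp: "msing f p \<in> Sk j" unfolding Sk_def using fF p g(2) fp by auto
    have agp: "arr ?D (msing g p) (zs (mdom f) p) (zs N j)" using zig_map_acc(5)[OF g(1) p] g(2,3) j_def by simp
    have afp: "arr ?D (msing f p) (zs (mdom f) p) (zs X (msing_map f ! p))" using zig_map_acc(5)[of ?D f p] ff p g(2) by auto
    have eq: "cComp ?D (msing d j) (msing g p) = msing f p" using c p j_def by auto
    note I3 = IHj[OF j, THEN conjunct2, THEN conjunct2, rule_format]
    show "globular_map C m (msing g p)"
      by (rule I3[OF sp]) (use agp afp eq in \<open>auto simp: arr_def\<close>)
  qed
  show "globular_obj C (Suc m) (cDom (Zn C (Suc m)) d) \<and> reg_normalising C (Suc m) d \<and>
     (\<forall>f\<in>F. \<forall>g. g \<in> cArr (Zn C (Suc m)) \<and> cDom (Zn C (Suc m)) g = cDom (Zn C (Suc m)) f \<and> cCod (Zn C (Suc m)) g = cDom (Zn C (Suc m)) d \<and>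
        cComp (Zn C (Suc m)) d g = f \<longrightarrow> globular_map C (Suc m) g)"
    using G1 G2 G3 unfolding N_def by auto
qed

lemma MAINP_all:
  fixes C :: "('o, 'm) cat"
  assumes cat: "is_category C"
  shows "MAINP C n"
proof (induction n)
  case 0 show ?case by (rule MAINP_0)
next
  case (Suc n) show ?case by (rule main_step[OF cat Suc.IH])
qed

theorem lemma6p3:
  fixes C :: "('o, 'm) cat" and n :: nat and X :: "('o, 'm) zo"
    and I :: "'i set" and f g :: "'i \<Rightarrow> ('o, 'm) zm" and d :: "('o, 'm) zm"
  assumes "is_category C"
    and "X \<in> cObj (Zn C n)"
    and "globular_obj C n X"
    and "\<forall>i \<in> I. f i \<in> cArr (Zn C n) \<and> cCod (Zn C n) (f i) = X \<and> reg_normalising C n (f i)"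
    and "rel_normalisation C n X I f d"
    and "\<forall>i \<in> I. g i \<in> cArr (Zn C n) \<and> cDom (Zn C n) (g i) = cDom (Zn C n) (f i) \<and>
                 cCod (Zn C n) (g i) = cDom (Zn C n) d \<and> cComp (Zn C n) d (g i) = f i"
  shows "globular_obj C n (cDom (Zn C n) d) \<and> (\<forall>i \<in> I. globular_map C n (g i)) \<and>
         reg_normalising C n d"
proof -
  have M: "\<forall>X (F :: ('o, 'm) zm set) d. X \<in> cObj (Zn C n) \<longrightarrow> globular_obj C n X \<longrightarrow>
     (\<forall>f\<in>F. f \<in> cArr (Zn C n) \<and> cCod (Zn C n) f = X \<and> reg_normalising C n f) \<longrightarrow>
     rel_normalisation C n X F (\<lambda>x. x) d \<longrightarrow>
     globular_obj C n (cDom (Zn C n) d) \<and> reg_normalising C n d \<and>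
     (\<forall>f\<in>F. \<forall>g. g \<in> cArr (Zn C n) \<and> cDom (Zn C n) g = cDom (Zn C n) f \<and> cCod (Zn C n) g = cDom (Zn C n) d \<and>
        cComp (Zn C n) d g = f \<longrightarrow> globular_map C n g)"
    using MAINP_all[OF assms(1), of n] unfolding MAINP_def .
  have F: "\<forall>f'\<in>f ` I. f' \<in> cArr (Zn C n) \<and> cCod (Zn C n) f' = X \<and> reg_normalising C n f'"
    using assms(4) by blast
  have R: "rel_normalisation C n X (f ` I) (\<lambda>x. x) d"
    using assms(5) unfolding rel_normalisation_def by blast
  have res: "globular_obj C n (cDom (Zn C n) d) \<and> reg_normalising C n d \<and>
     (\<forall>f'\<in>f ` I. \<forall>g. g \<in> cArr (Zn C n) \<and> cDom (Zn C n) g = cDom (Zn C n) f' \<and> cCod (Zn C n) g = cDom (Zn C n) d \<and>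
        cComp (Zn C n) d g = f' \<longrightarrow> globular_map C n g)"
    using mp[OF mp[OF mp[OF mp[OF M[THEN spec[of _ X], THEN spec[of _ "f ` I"], THEN spec[of _ d]] assms(2)] assms(3)] F] R] .
  have "\<forall>i \<in> I. globular_map C n (g i)"
  proof
    fix i assume i: "i \<in> I"
    have fi: "f i \<in> f ` I" using i by blast
    show "globular_map C n (g i)"
      using res[THEN conjunct2, THEN conjunct2, rule_format, OF fi, of "g i"] assms(6) i by blast
  qed
  thus ?thesis using res by blast
qed

end
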